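(* Let $|\Psi\rangle,|\Psi'\rangle\in\mathcal{B}^n$ be $M$-party stabilizer states (with respect to the same distribution $n=\sum_{\alpha\in M}n_\alpha$ of qubits among the parties) which both have full local ranks, and let $S,S'\subset G^n$ be their stabilizer groups. Then $|\Psi\rangle$ is LCU-equivalent to $|\Psi'\rangle$ if and only if there exists a linear invertible map $T:S\to S'$ such that $\omega(T(f)_\alpha,T(g)_\alpha)=\omega(f_\alpha,g_\alpha)$ for all $f,g\in S$ and all $\alpha\in M$.
   Context: Let $G=\{00,01,10,11\}\cong\mathbb{F}_2^2$ and $G^n\cong\mathbb{F}_2^{2n}$, with elements written $f=(a_1,b_1,\dots,a_n,b_n)$. Put $\sigma_{00}=I$, $\sigma_{10}=\sigma^x$, $\sigma_{01}=\sigma^z$, $\sigma_{11}=\sigma^y$ and $\sigma(f)=\sigma_{a_1b_1}\otimes\cdots\otimes\sigma_{a_nb_n}$, an operator on $\mathcal{B}^n=(\mathbb{C}^2)^{\otimes n}$. The symplectic form is $\omega(f,f')=\sum_{j=1}^n(a_jb_j'+b_ja_j')\bmod 2$. For a subspace $S\subseteq G^n$, $S^\perp=\{f\in G^n:\omega(f,g)=0\ \forall g\in S\}$; $S$ is self-dual if $S^\perp=S$ (then $\dim S=n$). A stabilizer state with stabilizer group $S$ is, for a self-dual $S\subset G^n$ and a sign function $\epsilon:S\to\{\pm1\}$ for which the equations are consistent, the unique (up to global phase) unit vector $|\Psi\rangle$ with $\sigma(f)|\Psi\rangle=\epsilon(f)|\Psi\rangle$ for all $f\in S$. The Clifford group $\mathcal{C}(n)$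 is the set of unitaries $U$ on $\mathcal{B}^n$ such that $U\sigma(f)U^\dagger=\pm\sigma(u(f))$ for all $f\in G^n$ for some map $u:G^n\to G^n$. Multipartite setting: $M$ is a finite set of parties, $n=\sum_{\alpha\in M}n_\alpha$ with $n_\alpha\ge 0$, and party $\alpha$ holds $n_\alpha$ of the qubits. Accordingly $G^n=\bigoplus_{\alpha}G^{n_\alpha}$; for $f\in G^n$, $f_\alpha\in G^{n_\alpha}$ denotes the restriction of $f$ to the qubits of party $\alpha$, and $\omega(f_\alpha,g_\alpha)$ is the symplectic form of $G^{n_\alpha}$. For a subspace $S\subseteq G^n$, the local subspace is $S_\alpha=\{g\in S: g_\beta=0\text{ for all }\beta\neq\alpha\}$ and the co-local subspace is $S_{\hat\alpha}=\{g\in S:g_\alpha=0\}$ (if $n_\alpha=0$: $S_\alpha=0$, $S_{\hat\alpha}=S$). Two $M$-party stabilizer states $|\Psi\rangle,|\Psi'\rangle$ are LCU-equivalent if $|\Psi'\rangle=\bigotimes_{\alpha\in M}U_\alpha|\Psi\rangle$ (up to global phase) for some $U_\alpha\in\mathcal{C}(n_\alpha)$ acting on the qubits of party $\alpha$. A stabilizer state with stabilizer group $S$ has full local ranks if $S_\alpha=0$ for all $\alpha\in M$. *)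

theory Defs
  imports Complex_Main
begin

text \<open>A subset Q of qubits carries the
  Hilbert space with computational basis the bit strings supported in Q.\<close>

type_synonym pauli_vec = "nat \<Rightarrow> bool \<times> bool"
type_synonym bits = "nat \<Rightarrow> bool"
type_synonym op = "bits \<Rightarrow> bits \<Rightarrow> complex"
type_synonym state = "bits \<Rightarrow> complex"

definition basis :: "nat set \<Rightarrow> bits set" where
  "basis Q = {x. \<forall>j. j \<notin> Q \<longrightarrow> \<not> x j}"

definition Gset :: "nat set \<Rightarrow> pauli_vec set" where
  "Gset Q = {f. \<forall>j. j \<notin> Q \<longrightarrow> f j = (False, False)}"

definition gzero :: pauli_vec where
  "gzero = (\<lambda>j. (False, False))"

definition gadd :: "pauli_vec \<Rightarrow> pauli_vec \<Rightarrow> pauli_vec" where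
  "gadd f g = (\<lambda>j. (fst (f j) \<noteq> fst (g j), snd (f j) \<noteq> snd (g j)))"

text \<open>Symplectic form restricted to the qubits in Q (as an element of F_2, True = 1).\<close>
definition symp :: "nat set \<Rightarrow> pauli_vec \<Rightarrow> pauli_vec \<Rightarrow> bool" where
  "symp Q f g = odd (card {j \<in> Q. (fst (f j) \<and> snd (g j)) \<noteq> (snd (f j) \<and> fst (g j))})"

definition is_subspace :: "nat \<Rightarrow> pauli_vec set \<Rightarrow> bool" where
  "is_subspace n S \<longleftrightarrow> S \<subseteq> Gset {..<n} \<and> gzero \<in> S \<and> (\<forall>f\<in>S. \<forall>g\<in>S. gadd f g \<in> S)"

definition perp :: "nat \<Rightarrow> pauli_vec set \<Rightarrow> pauli_vec set" where
  "perp n S = {f \<in> Gset {..<n}. \<forall>g\<in>S. \<not> symp {..<n} f g}"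

definition self_dual :: "nat \<Rightarrow> pauli_vec set \<Rightarrow> bool" where
  "self_dual n S \<longleftrightarrow> is_subspace n S \<and> perp n S = S"

text \<open>Single-qubit Paulis: (0,0)=I, (1,0)=X, (0,1)=Z, (1,1)=Y; basis bit False = |0>.\<close>
definition pauli1 :: "bool \<times> bool \<Rightarrow> bool \<Rightarrow> bool \<Rightarrow> complex" where
  "pauli1 ab x y =
    (case ab of
       (False, False) \<Rightarrow> (if x = y then 1 else 0)
     | (True, False) \<Rightarrow> (if x \<noteq> y then 1 else 0)
     | (False, True) \<Rightarrow> (if x = y then (if x then -1 else 1) else 0)
     | (True, True) \<Rightarrow> (if x \<noteq> y then (if x then \<i> else -\<i>) else 0))"

definition pauli :: "nat set \<Rightarrow> pauli_vec \<Rightarrow> op" where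
  "pauli Q f x y = (\<Prod>j\<in>Q. pauli1 (f j) (x j) (y j))"

definition mmul :: "nat set \<Rightarrow> op \<Rightarrow> op \<Rightarrow> op" where
  "mmul Q A B x y = (\<Sum>z\<in>basis Q. A x z * B z y)"

definition adj :: "op \<Rightarrow> op" where
  "adj A x y = cnj (A y x)"

definition apply_op :: "nat set \<Rightarrow> op \<Rightarrow> state \<Rightarrow> state" where
  "apply_op Q A \<psi> x = (\<Sum>y\<in>basis Q. A x y * \<psi> y)"

definition op_eq :: "nat set \<Rightarrow> op \<Rightarrow> op \<Rightarrow> bool" where
  "op_eq Q A B \<longleftrightarrow> (\<forall>x\<in>basis Q. \<forall>y\<in>basis Q. A x y = B x y)"

definition unitary :: "nat set \<Rightarrow> op \<Rightarrow> bool" where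
  "unitary Q U \<longleftrightarrow> op_eq Q (mmul Q U (adj U)) (\<lambda>x y. if x = y then 1 else 0)
                 \<and> op_eq Q (mmul Q (adj U) U) (\<lambda>x y. if x = y then 1 else 0)"

definition clifford :: "nat set \<Rightarrow> op \<Rightarrow> bool" where
  "clifford Q U \<longleftrightarrow> unitary Q U \<and>
     (\<exists>u. \<forall>f\<in>Gset Q. u f \<in> Gset Q \<and>
        (\<exists>s::complex. (s = 1 \<or> s = -1) \<and>
           op_eq Q (mmul Q (mmul Q U (pauli Q f)) (adj U)) (\<lambda>x y. s * pauli Q (u f) x y)))"

definition unit_state :: "nat set \<Rightarrow> state \<Rightarrow> bool" where
  "unit_state Q \<psi> \<longleftrightarrow> (\<Sum>x\<in>basis Q. (cmod (\<psi> x))\<^sup>2) = 1"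

text \<open>psi is a stabilizer state with stabilizer group S: S self-dual and psi a unit
  vector that is a common eigenvector, with sign +-1, of all sigma(f), f in S
  (such a vector is then unique up to phase).\<close>
definition stab_state :: "nat \<Rightarrow> state \<Rightarrow> pauli_vec set \<Rightarrow> bool" where
  "stab_state n \<psi> S \<longleftrightarrow> self_dual n S \<and> unit_state {..<n} \<psi> \<and>
     (\<forall>f\<in>S. \<exists>e::complex. (e = 1 \<or> e = -1) \<and>
        (\<forall>x\<in>basis {..<n}. apply_op {..<n} (pauli {..<n} f) \<psi> x = e * \<psi> x))"

text \<open>Multipartite setting: qubit j < n belongs to party part j \<in> M.\<close>
definition qubits :: "nat \<Rightarrow> (nat \<Rightarrow> 'p) \<Rightarrow> 'p \<Rightarrow> nat set" where
  "qubits n part \<alpha> = {j. j < n \<and> part j = \<alpha>}"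

definition restr :: "nat set \<Rightarrow> bits \<Rightarrow> bits" where
  "restr Q x = (\<lambda>j. j \<in> Q \<and> x j)"

definition tensor_op :: "nat \<Rightarrow> (nat \<Rightarrow> 'p) \<Rightarrow> 'p set \<Rightarrow> ('p \<Rightarrow> op) \<Rightarrow> op" where
  "tensor_op n part M Us x y =
     (\<Prod>\<alpha>\<in>M. Us \<alpha> (restr (qubits n part \<alpha>) x) (restr (qubits n part \<alpha>) y))"

definition LCU_equiv :: "nat \<Rightarrow> (nat \<Rightarrow> 'p) \<Rightarrow> 'p set \<Rightarrow> state \<Rightarrow> state \<Rightarrow> bool" where
  "LCU_equiv n part M \<psi> \<psi>' \<longleftrightarrow>
     (\<exists>Us. (\<forall>\<alpha>\<in>M. clifford (qubits n part \<alpha>) (Us \<alpha>)) \<and>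
        (\<exists>c. cmod c = 1 \<and>
           (\<forall>x\<in>basis {..<n}. \<psi>' x = c * apply_op {..<n} (tensor_op n part M Us) \<psi> x)))"

definition local_sub :: "nat \<Rightarrow> (nat \<Rightarrow> 'p) \<Rightarrow> 'p set \<Rightarrow> pauli_vec set \<Rightarrow> 'p \<Rightarrow> pauli_vec set" where
  "local_sub n part M S \<alpha> =
     {g \<in> S. \<forall>\<beta>\<in>M. \<beta> \<noteq> \<alpha> \<longrightarrow> (\<forall>j\<in>qubits n part \<beta>. g j = (False, False))}"

definition full_local_ranks :: "nat \<Rightarrow> (nat \<Rightarrow> 'p) \<Rightarrow> 'p set \<Rightarrow> pauli_vec set \<Rightarrow> bool" where
  "full_local_ranks n part M S \<longleftrightarrow> (\<forall>\<alpha>\<in>M. local_sub n part M S \<alpha> = {gzero})"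

definition F2_linear_iso :: "pauli_vec set \<Rightarrow> pauli_vec set \<Rightarrow> (pauli_vec \<Rightarrow> pauli_vec) \<Rightarrow> bool" where
  "F2_linear_iso S S' T \<longleftrightarrow> bij_betw T S S' \<and> (\<forall>f\<in>S. \<forall>g\<in>S. T (gadd f g) = gadd (T f) (T g))"

end

theory Submission
  imports Defs
begin


definition padd :: "bool \<times> bool \<Rightarrow> bool \<times> bool \<Rightarrow> bool \<times> bool" where
  "padd p q = (fst p \<noteq> fst q, snd p \<noteq> snd q)"

lemma gadd_apply: "gadd f g j = padd (f j) (g j)"
  by (simp add: gadd_def padd_def)

lemma gadd_comm: "gadd f g = gadd g f"
  by (auto simp: gadd_def fun_eq_iff)

lemma gadd_assoc: "gadd (gadd f g) h = gadd f (gadd g h)"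
  by (auto simp: gadd_def fun_eq_iff)

lemma gadd_left_comm: "gadd f (gadd g h) = gadd g (gadd f h)"
  by (auto simp: gadd_def fun_eq_iff)

lemmas gadd_ac = gadd_assoc gadd_comm gadd_left_comm

lemma gadd_self[simp]: "gadd f f = gzero"
  by (auto simp: gadd_def gzero_def fun_eq_iff)

lemma gadd_zero_left[simp]: "gadd gzero f = f"
  by (auto simp: gadd_def gzero_def fun_eq_iff)

lemma gadd_zero_right[simp]: "gadd f gzero = f"
  by (auto simp: gadd_def gzero_def fun_eq_iff)

lemma gadd_cancel_left[simp]: "gadd f (gadd f g) = g"
  by (simp add: gadd_assoc[symmetric])

lemma gadd_cancel_right[simp]: "gadd (gadd g f) f = g"
  by (simp add: gadd_assoc)

lemma gzero_apply[simp]: "gzero j = (False, False)"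
  by (simp add: gzero_def)

lemma Gset_gadd: "f \<in> Gset Q \<Longrightarrow> g \<in> Gset Q \<Longrightarrow> gadd f g \<in> Gset Q"
  by (auto simp: Gset_def gadd_def)

lemma Gset_gzero[simp]: "gzero \<in> Gset Q"
  by (auto simp: Gset_def)

lemma finite_basis: "finite Q \<Longrightarrow> finite (basis Q)"
proof -
  assume "finite Q"
  have "basis Q = (\<lambda>A j. j \<in> A) ` Pow Q"
  proof
    show "basis Q \<subseteq> (\<lambda>A j. j \<in> A) ` Pow Q"
    proof
      fix x assume "x \<in> basis Q"
      then have "x = (\<lambda>j. j \<in> {j\<in>Q. x j})" by (auto simp: basis_def fun_eq_iff)
      moreover have "{j\<in>Q. x j} \<in> Pow Q" by auto
      ultimately show "x \<in> (\<lambda>A j. j \<in> A) ` Pow Q" by blast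
    qed
  qed (auto simp: basis_def)
  then show ?thesis using \<open>finite Q\<close> by simp
qed

lemma basis_insert:
  assumes "a \<notin> Q"
  shows "basis (insert a Q) = basis Q \<union> (\<lambda>z. z(a := True)) ` basis Q"
proof
  show "basis (insert a Q) \<subseteq> basis Q \<union> (\<lambda>z. z(a := True)) ` basis Q"
  proof
    fix x assume x: "x \<in> basis (insert a Q)"
    show "x \<in> basis Q \<union> (\<lambda>z. z(a := True)) ` basis Q"
    proof (cases "x a")
      case True
      then have "x = (x(a := False))(a := True)" by (auto simp: fun_eq_iff)
      moreover have "x(a := False) \<in> basis Q" using x by (auto simp: basis_def)
      ultimately show ?thesis by blast
    next
      case False
      then have "x \<in> basis Q" using x by (auto simp: basis_def)
      then show ?thesis by blast
    qed
  qed
next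
  show "basis Q \<union> (\<lambda>z. z(a := True)) ` basis Q \<subseteq> basis (insert a Q)"
    by (auto simp: basis_def)
qed

lemma sum_basis_prod:
  fixes F :: "nat \<Rightarrow> bool \<Rightarrow> 'a::comm_semiring_1"
  assumes "finite Q"
  shows "(\<Sum>z\<in>basis Q. \<Prod>j\<in>Q. F j (z j)) = (\<Prod>j\<in>Q. F j False + F j True)"
  using assms
proof (induction Q rule: finite_induct)
  case empty
  have "basis {} = {\<lambda>j. False}" by (auto simp: basis_def)
  then show ?case by simp
next
  case (insert a Q)
  have fb: "finite (basis Q)" using insert finite_basis by blast
  have disj: "basis Q \<inter> (\<lambda>z. z(a := True)) ` basis Q = {}"
  proof -
    { fix z assume z1: "z \<in> basis Q" and z2: "z \<in> (\<lambda>z. z(a := True)) ` basis Q"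
      from z2 have "z a" by auto
      moreover from z1 insert.hyps(2) have "\<not> z a" by (auto simp: basis_def)
      ultimately have False by simp }
    then show ?thesis by blast
  qed
  have inj: "inj_on (\<lambda>z. z(a := True)) (basis Q)"
  proof (rule inj_onI)
    fix z w assume z: "z \<in> basis Q" and w: "w \<in> basis Q" and e: "z(a := True) = w(a := True)"
    show "z = w"
    proof
      fix j show "z j = w j"
      proof (cases "j = a")
        case True then show ?thesis using z w insert.hyps(2) by (auto simp: basis_def)
      next
        case False then show ?thesis using fun_cong[OF e, of j] by simp
      qed
    qed
  qed
  have s1: "(\<Sum>z\<in>basis Q. \<Prod>j\<in>insert a Q. F j (z j)) = F a False * (\<Sum>z\<in>basis Q. \<Prod>j\<in>Q. F j (z j))"
  proof -
    have "\<And>z. z \<in> basis Q \<Longrightarrow> (\<Prod>j\<in>insert a Q. F j (z j)) = F a False * (\<Prod>j\<in>Q. F j (z j))"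
      using insert.hyps by (auto simp: basis_def)
    then show ?thesis by (simp add: sum_distrib_left)
  qed
  have s2: "(\<Sum>z\<in>(\<lambda>z. z(a := True)) ` basis Q. \<Prod>j\<in>insert a Q. F j (z j)) = F a True * (\<Sum>z\<in>basis Q. \<Prod>j\<in>Q. F j (z j))"
  proof -
    have "(\<Sum>z\<in>(\<lambda>z. z(a := True)) ` basis Q. \<Prod>j\<in>insert a Q. F j (z j))
        = (\<Sum>z\<in>basis Q. \<Prod>j\<in>insert a Q. F j ((z(a := True)) j))"
      using inj by (simp add: sum.reindex)
    also have "\<dots> = (\<Sum>z\<in>basis Q. F a True * (\<Prod>j\<in>Q. F j (z j)))"
    proof (rule sum.cong)
      fix z assume "z \<in> basis Q"
      have "(\<Prod>j\<in>Q. F j ((z(a := True)) j)) = (\<Prod>j\<in>Q. F j (z j))"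
        using insert.hyps(2) by (intro prod.cong) auto
      then show "(\<Prod>j\<in>insert a Q. F j ((z(a := True)) j)) = F a True * (\<Prod>j\<in>Q. F j (z j))"
        using insert.hyps by simp
    qed simp
    finally show ?thesis by (simp add: sum_distrib_left)
  qed
  have "(\<Sum>z\<in>basis (insert a Q). \<Prod>j\<in>insert a Q. F j (z j))
      = (\<Sum>z\<in>basis Q. \<Prod>j\<in>insert a Q. F j (z j)) + (\<Sum>z\<in>(\<lambda>z. z(a := True)) ` basis Q. \<Prod>j\<in>insert a Q. F j (z j))"
    unfolding basis_insert[OF insert.hyps(2)]
    using fb disj by (intro sum.union_disjoint) auto
  also have "\<dots> = (F a False + F a True) * (\<Prod>j\<in>Q. F j False + F j True)"
    using s1 s2 insert.IH by (simp add: algebra_simps)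
  finally show ?case using insert.hyps by simp
qed

lemma Gset_insert:
  assumes "a \<notin> Q"
  shows "Gset (insert a Q) = (\<lambda>(p, f). f(a := p)) ` (UNIV \<times> Gset Q)"
proof
  show "Gset (insert a Q) \<subseteq> (\<lambda>(p, f). f(a := p)) ` (UNIV \<times> Gset Q)"
  proof
    fix x assume x: "x \<in> Gset (insert a Q)"
    have "x = (\<lambda>(p, f). f(a := p)) (x a, x(a := (False, False)))" by auto
    moreover have "x(a := (False, False)) \<in> Gset Q" using x by (auto simp: Gset_def)
    ultimately show "x \<in> (\<lambda>(p, f). f(a := p)) ` (UNIV \<times> Gset Q)" by blast
  qed
qed (auto simp: Gset_def)

lemma finite_Gset: "finite Q \<Longrightarrow> finite (Gset Q)"
proof (induction Q rule: finite_induct)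
  case empty
  have "Gset {} = {gzero}" by (auto simp: Gset_def gzero_def)
  then show ?case by simp
next
  case (insert a Q)
  then show ?case unfolding Gset_insert[OF insert.hyps(2)] by simp
qed

lemma sum_Gset_prod:
  fixes F :: "nat \<Rightarrow> bool \<times> bool \<Rightarrow> 'a::comm_semiring_1"
  assumes "finite Q"
  shows "(\<Sum>f\<in>Gset Q. \<Prod>j\<in>Q. F j (f j)) = (\<Prod>j\<in>Q. \<Sum>p\<in>UNIV. F j p)"
  using assms
proof (induction Q rule: finite_induct)
  case empty
  have "Gset {} = {gzero}" by (auto simp: Gset_def gzero_def)
  then show ?case by simp
next
  case (insert a Q)
  have fG: "finite (Gset Q)" using insert finite_Gset by blast
  have inj: "inj_on (\<lambda>(p, f). f(a := p)) (UNIV \<times> Gset Q)"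
  proof (rule inj_onI, clarify)
    fix p f q g assume "f \<in> Gset Q" "g \<in> Gset Q" "f(a := p) = g(a := q)"
    then show "p = q \<and> f = g" using insert.hyps(2)
      by (auto simp: Gset_def fun_eq_iff) metis+
  qed
  have "(\<Sum>f\<in>Gset (insert a Q). \<Prod>j\<in>insert a Q. F j (f j))
      = (\<Sum>(p, f)\<in>UNIV \<times> Gset Q. \<Prod>j\<in>insert a Q. F j ((f(a := p)) j))"
    unfolding Gset_insert[OF insert.hyps(2)] using inj
    by (simp add: sum.reindex case_prod_beta')
  also have "\<dots> = (\<Sum>(p, f)\<in>UNIV \<times> Gset Q. F a p * (\<Prod>j\<in>Q. F j (f j)))"
  proof (rule sum.cong, simp, clarify)
    fix p f assume "f \<in> Gset Q"
    have "(\<Prod>j\<in>Q. F j ((f(a := p)) j)) = (\<Prod>j\<in>Q. F j (f j))"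
      using insert.hyps(2) by (intro prod.cong) auto
    then show "(\<Prod>j\<in>insert a Q. F j ((f(a := p)) j)) = F a p * (\<Prod>j\<in>Q. F j (f j))"
      using insert.hyps by simp
  qed
  also have "\<dots> = (\<Sum>p\<in>UNIV. \<Sum>f\<in>Gset Q. F a p * (\<Prod>j\<in>Q. F j (f j)))"
    by (simp add: sum.cartesian_product)
  also have "\<dots> = (\<Sum>p\<in>UNIV. F a p * (\<Sum>f\<in>Gset Q. \<Prod>j\<in>Q. F j (f j)))"
    by (simp add: sum_distrib_left)
  also have "\<dots> = (\<Sum>p\<in>UNIV. F a p) * (\<Prod>j\<in>Q. \<Sum>p\<in>UNIV. F j p)"
    using insert.IH by (simp add: sum_distrib_right)
  finally show ?case using insert.hyps by simp
qed

lemma UNIV_bool_pair: "(UNIV :: (bool \<times> bool) set) = {(False,False), (True,False), (False,True), (True,True)}"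
  by auto

lemma sum_UNIV_pair: "(\<Sum>p\<in>(UNIV :: (bool \<times> bool) set). F p) = F (False,False) + F (True,False) + F (False,True) + F (True,True)"
  unfolding UNIV_bool_pair by (simp add: add.assoc)


definition ph1 :: "bool \<times> bool \<Rightarrow> bool \<times> bool \<Rightarrow> complex" where
  "ph1 p q = (if p = (True,False) \<and> q = (False,True) then -\<i>
     else if p = (False,True) \<and> q = (True,False) then \<i>
     else if p = (True,False) \<and> q = (True,True) then \<i>
     else if p = (True,True) \<and> q = (True,False) then -\<i>
     else if p = (False,True) \<and> q = (True,True) then -\<i>
     else if p = (True,True) \<and> q = (False,True) then \<i>
     else 1)"

definition sg :: "bool \<Rightarrow> complex" where
  "sg b = (if b then -1 else 1)"

definition ac1 :: "bool \<times> bool \<Rightarrow> bool \<times> bool \<Rightarrow> bool" where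
  "ac1 p q = ((fst p \<and> snd q) \<noteq> (snd p \<and> fst q))"

lemma sg_xor: "sg (a \<noteq> b) = sg a * sg b"
  by (simp add: sg_def)

lemma sg_xor': "sg (a = (\<not> b)) = sg a * sg b"
  by (simp add: sg_def)

lemma sg_sq[simp]: "sg a * sg a = 1"
  by (simp add: sg_def)

lemma sg_nz[simp]: "sg a \<noteq> 0"
  by (simp add: sg_def)

lemma sg_inj: "sg a = sg b \<longleftrightarrow> a = b"
  by (simp add: sg_def)

lemma sg_cnj[simp]: "cnj (sg a) = sg a"
  by (simp add: sg_def)

lemma bp_cases: "(p::bool\<times>bool) = (False,False) \<or> p = (True,False) \<or> p = (False,True) \<or> p = (True,True)"
  by (cases p) auto

lemma p00: "pauli1 (False,False) x y = (if x = y then 1 else 0)" by (simp add: pauli1_def)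
lemma p10: "pauli1 (True,False) x y = (if x \<noteq> y then 1 else 0)" by (simp add: pauli1_def)
lemma p01: "pauli1 (False,True) x y = (if x = y then (if x then -1 else 1) else 0)" by (simp add: pauli1_def)
lemma p11: "pauli1 (True,True) x y = (if x \<noteq> y then (if x then \<i> else -\<i>) else 0)" by (simp add: pauli1_def)
lemmas pvals = p00 p10 p01 p11

lemma pauli1_mult:
  "pauli1 p x False * pauli1 q False y + pauli1 p x True * pauli1 q True y
   = ph1 p q * pauli1 (padd p q) x y"
  using bp_cases[of p] bp_cases[of q]
  by (elim disjE; cases x; cases y; simp add: pvals ph1_def padd_def)

lemma ph1_comm: "ph1 p q = sg (ac1 p q) * ph1 q p"
  using bp_cases[of p] bp_cases[of q] by (elim disjE; simp add: ph1_def sg_def ac1_def)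

lemma ph1_swap: "ph1 p q * ph1 q p = 1"
  using bp_cases[of p] bp_cases[of q] by (elim disjE; simp add: ph1_def)

lemma ph1_sq: "ph1 p q * ph1 p q = sg (ac1 p q)"
  using bp_cases[of p] bp_cases[of q] by (elim disjE; simp add: ph1_def sg_def ac1_def)

lemma ph1_cocycle: "ph1 p q * ph1 (padd p q) r = ph1 q r * ph1 p (padd q r)"
  using bp_cases[of p] bp_cases[of q] bp_cases[of r] by (elim disjE; simp add: ph1_def padd_def)

lemma ph1_self: "ph1 p p = 1"
  using bp_cases[of p] by (elim disjE; simp add: ph1_def)

lemma ph1_zero_left: "ph1 (False,False) q = 1"
  by (auto simp: ph1_def)

lemma ph1_zero_right: "ph1 q (False,False) = 1"
  by (auto simp: ph1_def)

lemma ph1_padd_swap: "ph1 (padd p q) q = ph1 q p"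
  using bp_cases[of p] bp_cases[of q] by (elim disjE; simp add: ph1_def padd_def)

lemma ph1_nz: "ph1 p q \<noteq> 0"
  by (auto simp: ph1_def)

lemma ac1_sym: "ac1 p q = ac1 q p"
  by (auto simp: ac1_def)

lemma ac1_padd: "ac1 (padd p q) r = (ac1 p r \<noteq> ac1 q r)"
  using bp_cases[of p] bp_cases[of q] bp_cases[of r] by (elim disjE; simp add: ac1_def padd_def)

lemma ac1_self: "ac1 p p = False"
  by (auto simp: ac1_def)

lemma pauli1_herm: "cnj (pauli1 p y x) = pauli1 p x y"
  using bp_cases[of p] by (elim disjE; cases x; cases y; simp add: pvals)

lemma pauli1_complete_raw:
  "pauli1 (False,False) a b * cnj (pauli1 (False,False) a' b')
   + pauli1 (True,False) a b * cnj (pauli1 (True,False) a' b')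
   + pauli1 (False,True) a b * cnj (pauli1 (False,True) a' b')
   + pauli1 (True,True) a b * cnj (pauli1 (True,True) a' b')
   = (if a = a' \<and> b = b' then 2 else 0)"
  by (cases a; cases b; cases a'; cases b'; simp add: pvals)

lemma pauli1_complete:
  "(\<Sum>p\<in>UNIV. pauli1 p a b * cnj (pauli1 p a' b')) = (if a = a' \<and> b = b' then 2 else 0)"
  unfolding sum_UNIV_pair using pauli1_complete_raw by simp

lemma pauli1_trace: "pauli1 p False False + pauli1 p True True = (if p = (False,False) then 2 else 0)"
  using bp_cases[of p] by (elim disjE; simp add: pvals)

lemma pauli1_zero: "pauli1 (False,False) x y = (if x = y then 1 else 0)"
  by (simp add: pauli1_def)

definition ph :: "nat set \<Rightarrow> pauli_vec \<Rightarrow> pauli_vec \<Rightarrow> complex" where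
  "ph Q f g = (\<Prod>j\<in>Q. ph1 (f j) (g j))"

lemma sg_prod: "finite Q \<Longrightarrow> (\<Prod>j\<in>Q. sg (P j)) = sg (odd (card {j\<in>Q. P j}))"
proof (induction Q rule: finite_induct)
  case empty then show ?case by (simp add: sg_def)
next
  case (insert a Q)
  show ?case
  proof (cases "P a")
    case True
    then have "{j \<in> insert a Q. P j} = insert a {j\<in>Q. P j}" by auto
    then have "card {j \<in> insert a Q. P j} = Suc (card {j\<in>Q. P j})" using insert by simp
    then show ?thesis using insert True by (simp add: sg_def)
  next
    case False
    then have "{j \<in> insert a Q. P j} = {j\<in>Q. P j}" by auto
    then show ?thesis using insert False by (simp add: sg_def)
  qed
qed

lemma symp_ac1: "symp Q f g = odd (card {j\<in>Q. ac1 (f j) (g j)})"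
  by (simp add: symp_def ac1_def)

lemma sg_symp: "finite Q \<Longrightarrow> sg (symp Q f g) = (\<Prod>j\<in>Q. sg (ac1 (f j) (g j)))"
  by (simp add: sg_prod symp_ac1)

lemma symp_comm: "symp Q f g = symp Q g f"
  unfolding symp_ac1 by (simp add: ac1_sym[of "f _"])

lemma symp_gadd_left: "finite Q \<Longrightarrow> symp Q (gadd f g) h = (symp Q f h \<noteq> symp Q g h)"
proof -
  assume fQ: "finite Q"
  have "sg (symp Q (gadd f g) h) = (\<Prod>j\<in>Q. sg (ac1 (f j) (h j)) * sg (ac1 (g j) (h j)))"
    using fQ by (simp add: sg_symp gadd_apply ac1_padd sg_xor sg_xor')
  also have "\<dots> = sg (symp Q f h) * sg (symp Q g h)"
    using fQ by (simp add: sg_symp prod.distrib)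
  also have "\<dots> = sg (symp Q f h \<noteq> symp Q g h)" by (simp add: sg_xor sg_xor')
  finally show ?thesis by (simp add: sg_inj)
qed

lemma symp_gadd_right: "finite Q \<Longrightarrow> symp Q h (gadd f g) = (symp Q h f \<noteq> symp Q h g)"
  using symp_gadd_left symp_comm by metis

lemma symp_zero_left[simp]: "symp Q gzero g = False"
  by (simp add: symp_def)

lemma symp_zero_right[simp]: "symp Q g gzero = False"
  by (simp add: symp_def)

lemma symp_self[simp]: "symp Q f f = False"
  unfolding symp_ac1 by (simp add: ac1_self)

lemma ph_comm: "finite Q \<Longrightarrow> ph Q f g = sg (symp Q f g) * ph Q g f"
proof -
  assume fQ: "finite Q"
  have "ph Q f g = (\<Prod>j\<in>Q. sg (ac1 (f j) (g j)) * ph1 (g j) (f j))"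
    unfolding ph_def by (rule prod.cong[OF refl], rule ph1_comm)
  also have "\<dots> = sg (symp Q f g) * ph Q g f"
    using fQ by (simp add: prod.distrib sg_symp ph_def)
  finally show ?thesis .
qed

lemma ph_swap: "ph Q f g * ph Q g f = 1"
  by (simp add: ph_def prod.distrib[symmetric] ph1_swap)

lemma ph_sq: "finite Q \<Longrightarrow> ph Q f g * ph Q f g = sg (symp Q f g)"
  by (simp add: ph_def sg_symp prod.distrib[symmetric] ph1_sq)

lemma ph_cocycle: "ph Q f g * ph Q (gadd f g) h = ph Q g h * ph Q f (gadd g h)"
  by (simp add: ph_def prod.distrib[symmetric] gadd_apply ph1_cocycle)

lemma ph_self[simp]: "ph Q f f = 1"
  by (simp add: ph_def ph1_self)

lemma ph_zero_left[simp]: "ph Q gzero g = 1"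
  by (simp add: ph_def ph1_zero_left)

lemma ph_zero_right[simp]: "ph Q g gzero = 1"
  by (simp add: ph_def ph1_zero_right)

lemma ph_gadd_swap: "ph Q (gadd f g) g = ph Q g f"
  by (simp add: ph_def gadd_apply ph1_padd_swap)

lemma ph_nz[simp]: "ph Q f g \<noteq> 0"
  by (cases "finite Q") (simp_all add: ph_def ph1_nz)

lemma pauli_mult:
  assumes "finite Q"
  shows "mmul Q (pauli Q f) (pauli Q g) x y = ph Q f g * pauli Q (gadd f g) x y"
proof -
  have "mmul Q (pauli Q f) (pauli Q g) x y
      = (\<Sum>z\<in>basis Q. \<Prod>j\<in>Q. pauli1 (f j) (x j) (z j) * pauli1 (g j) (z j) (y j))"
    by (simp add: mmul_def pauli_def prod.distrib)
  also have "\<dots> = (\<Prod>j\<in>Q. pauli1 (f j) (x j) False * pauli1 (g j) False (y j)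
                         + pauli1 (f j) (x j) True * pauli1 (g j) True (y j))"
    using sum_basis_prod[OF assms, of "\<lambda>j c. pauli1 (f j) (x j) c * pauli1 (g j) c (y j)"] by simp
  also have "\<dots> = (\<Prod>j\<in>Q. ph1 (f j) (g j) * pauli1 (padd (f j) (g j)) (x j) (y j))"
    by (simp add: pauli1_mult)
  also have "\<dots> = ph Q f g * pauli Q (gadd f g) x y"
    by (simp add: prod.distrib ph_def pauli_def gadd_apply)
  finally show ?thesis .
qed

lemma pauli_herm: "cnj (pauli Q f y x) = pauli Q f x y"
  by (simp add: pauli_def pauli1_herm)

lemma pauli_zero: "finite Q \<Longrightarrow> pauli Q gzero x y = (if \<forall>j\<in>Q. x j = y j then 1 else 0)"
  by (simp add: pauli_def pauli1_zero prod_zero_iff)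

lemma basis_eq_iff: "x \<in> basis Q \<Longrightarrow> y \<in> basis Q \<Longrightarrow> (\<forall>j\<in>Q. x j = y j) \<longleftrightarrow> x = y"
  by (auto simp: basis_def fun_eq_iff)

lemma pauli_zero_basis: "finite Q \<Longrightarrow> x \<in> basis Q \<Longrightarrow> y \<in> basis Q \<Longrightarrow> pauli Q gzero x y = (if x = y then 1 else 0)"
  by (simp add: pauli_zero basis_eq_iff)

lemma pauli_complete:
  assumes "finite Q"
  shows "(\<Sum>g\<in>Gset Q. pauli Q g a b * cnj (pauli Q g a' b'))
       = (if \<forall>j\<in>Q. a j = a' j \<and> b j = b' j then 2 ^ card Q else 0)"
proof -
  have "(\<Sum>g\<in>Gset Q. pauli Q g a b * cnj (pauli Q g a' b'))
      = (\<Sum>g\<in>Gset Q. \<Prod>j\<in>Q. pauli1 (g j) (a j) (b j) * cnj (pauli1 (g j) (a' j) (b' j)))"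
    by (simp add: pauli_def prod.distrib)
  also have "\<dots> = (\<Prod>j\<in>Q. \<Sum>p\<in>UNIV. pauli1 p (a j) (b j) * cnj (pauli1 p (a' j) (b' j)))"
    using sum_Gset_prod[OF assms, of "\<lambda>j p. pauli1 p (a j) (b j) * cnj (pauli1 p (a' j) (b' j))"] by simp
  also have "\<dots> = (\<Prod>j\<in>Q. if a j = a' j \<and> b j = b' j then 2 else 0)"
    by (simp add: pauli1_complete)
  also have "\<dots> = (if \<forall>j\<in>Q. a j = a' j \<and> b j = b' j then 2 ^ card Q else 0)"
  proof (cases "\<forall>j\<in>Q. a j = a' j \<and> b j = b' j")
    case True then show ?thesis by simp
  next
    case False
    then obtain j where "j \<in> Q" "\<not> (a j = a' j \<and> b j = b' j)" by blast
    then show ?thesis using assms False by (simp add: prod_zero_iff)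
  qed
  finally show ?thesis .
qed

lemma pauli_trace:
  assumes "finite Q"
  shows "(\<Sum>x\<in>basis Q. pauli Q f x x) = (if \<forall>j\<in>Q. f j = (False,False) then 2 ^ card Q else 0)"
proof -
  have "(\<Sum>x\<in>basis Q. pauli Q f x x) = (\<Prod>j\<in>Q. pauli1 (f j) False False + pauli1 (f j) True True)"
    unfolding pauli_def using sum_basis_prod[OF assms, of "\<lambda>j c. pauli1 (f j) c c"] by simp
  also have "\<dots> = (\<Prod>j\<in>Q. if f j = (False,False) then 2 else 0)"
    by (simp add: pauli1_trace)
  also have "\<dots> = (if \<forall>j\<in>Q. f j = (False,False) then 2 ^ card Q else 0)"
    using assms by (simp add: prod_zero_iff)
  finally show ?thesis .
qed


definition idop :: op where "idop x y = (if x = y then 1 else 0)"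

lemma idop_eta: "idop = (\<lambda>x y. if x = y then 1 else 0)"
  by (simp add: fun_eq_iff idop_def)

lemma unitary_iff: "unitary Q U \<longleftrightarrow> op_eq Q (mmul Q U (adj U)) idop \<and> op_eq Q (mmul Q (adj U) U) idop"
  by (simp add: unitary_def idop_eta)

definition smul :: "complex \<Rightarrow> op \<Rightarrow> op" where "smul c A x y = c * A x y"

lemma op_eq_refl[simp]: "op_eq Q A A" by (simp add: op_eq_def)
lemma op_eq_sym: "op_eq Q A B \<Longrightarrow> op_eq Q B A" by (simp add: op_eq_def)
lemma op_eq_trans[trans]: "op_eq Q A B \<Longrightarrow> op_eq Q B C \<Longrightarrow> op_eq Q A C" by (simp add: op_eq_def)
lemma op_eq_D: "op_eq Q A B \<Longrightarrow> x \<in> basis Q \<Longrightarrow> y \<in> basis Q \<Longrightarrow> A x y = B x y" by (simp add: op_eq_def)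
lemma op_eq_I: "(\<And>x y. x \<in> basis Q \<Longrightarrow> y \<in> basis Q \<Longrightarrow> A x y = B x y) \<Longrightarrow> op_eq Q A B" by (simp add: op_eq_def)
lemma op_eq_pw: "(\<And>x y. A x y = B x y) \<Longrightarrow> op_eq Q A B" by (simp add: op_eq_def)

lemma mmul_cong: "op_eq Q A A' \<Longrightarrow> op_eq Q B B' \<Longrightarrow> op_eq Q (mmul Q A B) (mmul Q A' B')"
  by (simp add: op_eq_def mmul_def)

lemma mmul_assoc: "finite Q \<Longrightarrow> mmul Q (mmul Q A B) C x y = mmul Q A (mmul Q B C) x y"
proof -
  assume fQ: "finite Q"
  have fb: "finite (basis Q)" using fQ finite_basis by blast
  have "mmul Q (mmul Q A B) C x y = (\<Sum>z\<in>basis Q. \<Sum>w\<in>basis Q. A x w * B w z * C z y)"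
    by (simp add: mmul_def sum_distrib_right)
  also have "\<dots> = (\<Sum>w\<in>basis Q. \<Sum>z\<in>basis Q. A x w * B w z * C z y)"
    by (rule sum.swap)
  also have "\<dots> = mmul Q A (mmul Q B C) x y"
    by (simp add: mmul_def sum_distrib_left mult.assoc)
  finally show ?thesis .
qed

lemma mmul_assoc_eq: "finite Q \<Longrightarrow> op_eq Q (mmul Q (mmul Q A B) C) (mmul Q A (mmul Q B C))"
  by (simp add: op_eq_def mmul_assoc)

lemma sum_basis_delta:
  fixes F :: "bits \<Rightarrow> complex"
  assumes "finite Q" "x \<in> basis Q"
  shows "(\<Sum>z\<in>basis Q. (if x = z then 1 else 0) * F z) = F x"
        "(\<Sum>z\<in>basis Q. F z * (if z = x then 1 else 0)) = F x"
proof -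
  have fb: "finite (basis Q)" using assms finite_basis by blast
  have "(\<Sum>z\<in>basis Q. (if x = z then 1 else 0) * F z) = (\<Sum>z\<in>basis Q. if x = z then F x else 0)"
    by (rule sum.cong) auto
  then show "(\<Sum>z\<in>basis Q. (if x = z then 1 else 0) * F z) = F x" using fb assms(2) by simp
  have "(\<Sum>z\<in>basis Q. F z * (if z = x then 1 else 0)) = (\<Sum>z\<in>basis Q. if x = z then F x else 0)"
    by (rule sum.cong) auto
  then show "(\<Sum>z\<in>basis Q. F z * (if z = x then 1 else 0)) = F x" using fb assms(2) by simp
qed

lemma mmul_id_left: "finite Q \<Longrightarrow> x \<in> basis Q \<Longrightarrow> mmul Q idop A x y = A x y"
  by (simp add: mmul_def idop_def sum_basis_delta)

lemma mmul_id_right: "finite Q \<Longrightarrow> y \<in> basis Q \<Longrightarrow> mmul Q A idop x y = A x y"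
  by (simp add: mmul_def idop_def sum_basis_delta)

lemma mmul_id_left_eq: "finite Q \<Longrightarrow> op_eq Q (mmul Q idop A) A"
  by (simp add: op_eq_def mmul_id_left)

lemma mmul_id_right_eq: "finite Q \<Longrightarrow> op_eq Q (mmul Q A idop) A"
  by (simp add: op_eq_def mmul_id_right)

lemma adj_adj[simp]: "adj (adj A) = A"
  by (simp add: adj_def fun_eq_iff)

lemma adj_mmul: "adj (mmul Q A B) x y = mmul Q (adj B) (adj A) x y"
  by (simp add: adj_def mmul_def mult.commute)

lemma adj_mmul_eq: "op_eq Q (adj (mmul Q A B)) (mmul Q (adj B) (adj A))"
  by (simp add: op_eq_def adj_mmul)

lemma adj_cong: "op_eq Q A B \<Longrightarrow> op_eq Q (adj A) (adj B)"
  by (simp add: op_eq_def adj_def)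

lemma adj_smul: "adj (smul c A) = smul (cnj c) (adj A)"
  by (simp add: adj_def smul_def fun_eq_iff)

lemma adj_idop[simp]: "adj idop = idop"
  by (simp add: adj_def idop_def fun_eq_iff)

lemma smul_mmul_left: "mmul Q (smul c A) B = smul c (mmul Q A B)"
  by (simp add: mmul_def smul_def fun_eq_iff sum_distrib_left mult.assoc)

lemma smul_mmul_right: "mmul Q A (smul c B) = smul c (mmul Q A B)"
  by (simp add: mmul_def smul_def fun_eq_iff sum_distrib_left mult.left_commute)

lemma smul_smul: "smul a (smul b A) = smul (a * b) A"
  by (simp add: smul_def fun_eq_iff)

lemma smul_one[simp]: "smul 1 A = A"
  by (simp add: smul_def fun_eq_iff)

lemma smul_cong: "op_eq Q A B \<Longrightarrow> op_eq Q (smul c A) (smul c B)"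
  by (simp add: op_eq_def smul_def)

lemma adj_pauli: "adj (pauli Q f) = pauli Q f"
  by (simp add: adj_def fun_eq_iff pauli_herm)

lemma pauli_mult_eq: "finite Q \<Longrightarrow> mmul Q (pauli Q f) (pauli Q g) = smul (ph Q f g) (pauli Q (gadd f g))"
  by (simp add: fun_eq_iff smul_def pauli_mult)

lemma pauli_zero_eq: "finite Q \<Longrightarrow> op_eq Q (pauli Q gzero) idop"
  by (simp add: op_eq_def pauli_zero_basis idop_def)

lemma pauli_sq_eq: "finite Q \<Longrightarrow> op_eq Q (mmul Q (pauli Q f) (pauli Q f)) idop"
  by (simp add: pauli_mult_eq pauli_zero_eq)

lemma apply_op_mmul: "finite Q \<Longrightarrow> apply_op Q (mmul Q A B) \<psi> x = apply_op Q A (apply_op Q B \<psi>) x"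
proof -
  assume fQ: "finite Q"
  have "apply_op Q (mmul Q A B) \<psi> x = (\<Sum>y\<in>basis Q. \<Sum>z\<in>basis Q. A x z * B z y * \<psi> y)"
    by (simp add: apply_op_def mmul_def sum_distrib_right)
  also have "\<dots> = (\<Sum>z\<in>basis Q. \<Sum>y\<in>basis Q. A x z * B z y * \<psi> y)"
    by (rule sum.swap)
  also have "\<dots> = apply_op Q A (apply_op Q B \<psi>) x"
    by (simp add: apply_op_def sum_distrib_left mult.assoc)
  finally show ?thesis .
qed

lemma apply_op_cong_op: "op_eq Q A B \<Longrightarrow> x \<in> basis Q \<Longrightarrow> apply_op Q A \<psi> x = apply_op Q B \<psi> x"
  by (simp add: apply_op_def op_eq_def)

lemma apply_op_cong_state: "(\<And>y. y \<in> basis Q \<Longrightarrow> \<psi> y = \<phi> y) \<Longrightarrow> apply_op Q A \<psi> x = apply_op Q A \<phi> x"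
  by (simp add: apply_op_def)

lemma apply_op_id: "finite Q \<Longrightarrow> x \<in> basis Q \<Longrightarrow> apply_op Q idop \<psi> x = \<psi> x"
  by (simp add: apply_op_def idop_def sum_basis_delta)

lemma apply_op_smul: "apply_op Q (smul c A) \<psi> x = c * apply_op Q A \<psi> x"
  by (simp add: apply_op_def smul_def sum_distrib_left mult.assoc)

lemma apply_op_scale: "apply_op Q A (\<lambda>y. c * \<psi> y) x = c * apply_op Q A \<psi> x"
  by (simp add: apply_op_def sum_distrib_left mult.left_commute)

definition braket :: "nat set \<Rightarrow> state \<Rightarrow> state \<Rightarrow> complex" where
  "braket Q \<phi> \<psi> = (\<Sum>x\<in>basis Q. cnj (\<phi> x) * \<psi> x)"

lemma braket_adj:
  "braket Q \<phi> (apply_op Q A \<psi>) = braket Q (apply_op Q (adj A) \<phi>) \<psi>"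
proof -
  have "braket Q \<phi> (apply_op Q A \<psi>) = (\<Sum>x\<in>basis Q. \<Sum>y\<in>basis Q. cnj (\<phi> x) * A x y * \<psi> y)"
    by (simp add: braket_def apply_op_def sum_distrib_left mult.assoc)
  also have "\<dots> = (\<Sum>y\<in>basis Q. \<Sum>x\<in>basis Q. cnj (\<phi> x) * A x y * \<psi> y)"
    by (rule sum.swap)
  also have "\<dots> = (\<Sum>y\<in>basis Q. (\<Sum>x\<in>basis Q. cnj (\<phi> x) * A x y) * \<psi> y)"
    by (simp add: sum_distrib_right)
  also have "\<dots> = braket Q (apply_op Q (adj A) \<phi>) \<psi>"
    unfolding braket_def apply_op_def adj_def by (simp add: mult.commute)
  finally show ?thesis .
qed

lemma braket_cong: "(\<And>x. x \<in> basis Q \<Longrightarrow> \<phi> x = \<phi>' x) \<Longrightarrow> (\<And>x. x \<in> basis Q \<Longrightarrow> \<psi> x = \<psi>' x)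
  \<Longrightarrow> braket Q \<phi> \<psi> = braket Q \<phi>' \<psi>'"
  by (simp add: braket_def)

lemma braket_scale_right: "braket Q \<phi> (\<lambda>x. c * \<psi> x) = c * braket Q \<phi> \<psi>"
  by (simp add: braket_def sum_distrib_left mult.left_commute)

lemma braket_scale_left: "braket Q (\<lambda>x. c * \<phi> x) \<psi> = cnj c * braket Q \<phi> \<psi>"
  by (simp add: braket_def sum_distrib_left mult.assoc)

lemma cnj_mult_self: "cnj z * z = complex_of_real ((cmod z)\<^sup>2)"
  by (subst complex_norm_square) (simp add: mult.commute)

lemma braket_self_real: "braket Q \<psi> \<psi> = complex_of_real (\<Sum>x\<in>basis Q. (cmod (\<psi> x))\<^sup>2)"
  unfolding braket_def cnj_mult_self of_real_sum by simp

lemma unit_state_iff: "unit_state Q \<psi> \<longleftrightarrow> braket Q \<psi> \<psi> = 1"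
  unfolding braket_self_real unit_state_def of_real_eq_1_iff by simp

lemma braket_self_unit: "unit_state Q \<psi> \<Longrightarrow> braket Q \<psi> \<psi> = 1"
  by (simp add: unit_state_iff)

lemma unit_nonzero: "finite Q \<Longrightarrow> unit_state Q \<psi> \<Longrightarrow> \<exists>x\<in>basis Q. \<psi> x \<noteq> 0"
proof (rule ccontr)
  assume "unit_state Q \<psi>" "\<not> (\<exists>x\<in>basis Q. \<psi> x \<noteq> 0)"
  then show False by (simp add: unit_state_def)
qed


section \<open>Splitting a symmetric sign cocycle\<close>

definition good_sign :: "(pauli_vec \<Rightarrow> pauli_vec \<Rightarrow> complex) \<Rightarrow> pauli_vec set \<Rightarrow> (pauli_vec \<Rightarrow> complex) \<Rightarrow> bool" where
  "good_sign \<rho> V c \<longleftrightarrow> (\<forall>v\<in>V. c v = 1 \<or> c v = -1) \<and> (\<forall>v\<in>V. \<forall>w\<in>V. c v * c w * \<rho> v w = c (gadd v w))"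

definition closed_sub :: "pauli_vec set \<Rightarrow> bool" where
  "closed_sub V \<longleftrightarrow> gzero \<in> V \<and> (\<forall>v\<in>V. \<forall>w\<in>V. gadd v w \<in> V)"

lemma sign_sq: "c = 1 \<or> c = -1 \<Longrightarrow> c * c = (1::complex)"
  by auto

lemma sign_extend:
  assumes G: "closed_sub G"
    and r_sq: "\<forall>f\<in>G. \<forall>g\<in>G. \<rho> f g * \<rho> f g = 1"
    and r_sym: "\<forall>f\<in>G. \<forall>g\<in>G. \<rho> f g = \<rho> g f"
    and r_coc: "\<forall>f\<in>G. \<forall>g\<in>G. \<forall>h\<in>G. \<rho> f g * \<rho> (gadd f g) h = \<rho> g h * \<rho> f (gadd g h)"
    and r_self: "\<forall>f\<in>G. \<rho> f f = 1"
    and V: "closed_sub V" "V \<subseteq> G" and c: "good_sign \<rho> V c"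
    and e: "e \<in> G"
  shows "\<exists>V' c'. closed_sub V' \<and> V' \<subseteq> G \<and> insert e V \<subseteq> V' \<and> good_sign \<rho> V' c'"
proof (cases "e \<in> V")
  case True
  then show ?thesis using V c by blast
next
  case False
  define V' where "V' = V \<union> (\<lambda>v. gadd v e) ` V"
  define c' where "c' x = (if x \<in> V then c x else c (gadd x e) * \<rho> (gadd x e) e)" for x
  have Vc: "gzero \<in> V" "\<And>v w. v \<in> V \<Longrightarrow> w \<in> V \<Longrightarrow> gadd v w \<in> V" using V(1) by (auto simp: closed_sub_def)
  have Gc: "\<And>v w. v \<in> G \<Longrightarrow> w \<in> G \<Longrightarrow> gadd v w \<in> G" using G by (auto simp: closed_sub_def)
  have notV: "\<And>v. v \<in> V \<Longrightarrow> gadd v e \<notin> V"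
  proof
    fix v assume "v \<in> V" "gadd v e \<in> V"
    then have "gadd v (gadd v e) \<in> V" using Vc by blast
    then show False using False by simp
  qed
  have cV: "\<And>v. v \<in> V \<Longrightarrow> c v = 1 \<or> c v = -1" and cmul: "\<And>v w. v \<in> V \<Longrightarrow> w \<in> V \<Longrightarrow> c v * c w * \<rho> v w = c (gadd v w)"
    using c by (auto simp: good_sign_def)
  have inG: "\<And>v. v \<in> V \<Longrightarrow> v \<in> G" using V(2) by blast
  have c'1: "\<And>v. v \<in> V \<Longrightarrow> c' v = c v" by (simp add: c'_def)
  have c'2: "\<And>v. v \<in> V \<Longrightarrow> c' (gadd v e) = c v * \<rho> v e" using notV by (simp add: c'_def)
  have rsq: "\<And>f g. f \<in> G \<Longrightarrow> g \<in> G \<Longrightarrow> \<rho> f g = 1 \<or> \<rho> f g = -1"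
  proof -
    fix f g assume "f \<in> G" "g \<in> G"
    then have "\<rho> f g * \<rho> f g = 1" using r_sq by blast
    then have "(\<rho> f g - 1) * (\<rho> f g + 1) = 0" by (simp add: algebra_simps)
    then have "\<rho> f g - 1 = 0 \<or> \<rho> f g + 1 = 0" by (simp only: mult_eq_0_iff)
    then show "\<rho> f g = 1 \<or> \<rho> f g = -1" by (metis eq_neg_iff_add_eq_0 eq_iff_diff_eq_0)
  qed
  have closed': "closed_sub V'"
    unfolding closed_sub_def V'_def
  proof (intro conjI ballI)
    show "gzero \<in> V \<union> (\<lambda>v. gadd v e) ` V" using Vc by blast
  next
    fix x y assume x: "x \<in> V \<union> (\<lambda>v. gadd v e) ` V" and y: "y \<in> V \<union> (\<lambda>v. gadd v e) ` V"
    show "gadd x y \<in> V \<union> (\<lambda>v. gadd v e) ` V"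
    proof -
      obtain v where v: "v \<in> V" "x = v \<or> x = gadd v e" using x by blast
      obtain w where w: "w \<in> V" "y = w \<or> y = gadd w e" using y by blast
      have "gadd v w \<in> V" using v w Vc by blast
      moreover have "gadd (gadd v e) w = gadd (gadd v w) e" "gadd v (gadd w e) = gadd (gadd v w) e"
        "gadd (gadd v e) (gadd w e) = gadd v w"
        by (simp_all add: gadd_ac)
      ultimately show ?thesis using v(2) w(2) by auto
    qed
  qed
  have sub': "V' \<subseteq> G" unfolding V'_def using V(2) Gc e by auto
  have ins': "insert e V \<subseteq> V'" unfolding V'_def using Vc
    by (auto intro!: image_eqI[where x = gzero])
  have good': "good_sign \<rho> V' c'"
    unfolding good_sign_def
  proof (intro conjI ballI)
    fix x assume "x \<in> V'"
    then obtain v where v: "v \<in> V" "x = v \<or> x = gadd v e" unfolding V'_def by blast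
    have A: "c v = 1 \<or> c v = -1" using cV v(1) by blast
    have B: "\<rho> v e = 1 \<or> \<rho> v e = -1" using rsq[of v e] inG[OF v(1)] e by blast
    show "c' x = 1 \<or> c' x = -1"
      using v(2) A B c'1[OF v(1)] c'2[OF v(1)] by (elim disjE) simp_all
  next
    fix x y assume x: "x \<in> V'" and y: "y \<in> V'"
    obtain v where v: "v \<in> V" "x = v \<or> x = gadd v e" using x unfolding V'_def by blast
    obtain w where w: "w \<in> V" "y = w \<or> y = gadd w e" using y unfolding V'_def by blast
    have vG: "v \<in> G" and wG: "w \<in> G" using v w inG by auto
    have vw: "gadd v w \<in> V" using v w Vc by blast
    have vwG: "gadd v w \<in> G" using vw inG by auto
    have veG: "gadd v e \<in> G" and weG: "gadd w e \<in> G" using vG wG e Gc by auto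
    have e1: "gadd (gadd v e) w = gadd (gadd v w) e" "gadd v (gadd w e) = gadd (gadd v w) e"
        "gadd (gadd v e) (gadd w e) = gadd v w" "gadd e w = gadd w e" "gadd e (gadd w e) = w"
      by (simp_all add: gadd_ac)
    show "c' x * c' y * \<rho> x y = c' (gadd x y)"
    proof -
      { assume "x = v" "y = w"
        then have ?thesis using c'1 v w vw cmul by simp }
      moreover
      { assume xy: "x = v" "y = gadd w e"
        have co: "\<rho> v w * \<rho> (gadd v w) e = \<rho> w e * \<rho> v (gadd w e)"
          using r_coc vG wG e by blast
        have "c' x * c' y * \<rho> x y = c v * c w * (\<rho> w e * \<rho> v (gadd w e))"
          using xy c'1 c'2 v w by (simp add: mult_ac)
        also have "\<dots> = c v * c w * \<rho> v w * \<rho> (gadd v w) e" using co by (simp add: mult_ac)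
        also have "\<dots> = c (gadd v w) * \<rho> (gadd v w) e" using cmul v w by simp
        also have "\<dots> = c' (gadd x y)" using xy c'2 vw e1 by simp
        finally have ?thesis . }
      moreover
      { assume xy: "x = gadd v e" "y = w"
        have co1: "\<rho> v e * \<rho> (gadd v e) w = \<rho> e w * \<rho> v (gadd e w)"
          using r_coc vG wG e by blast
        have co2: "\<rho> v w * \<rho> (gadd v w) e = \<rho> w e * \<rho> v (gadd w e)"
          using r_coc vG wG e by blast
        have sy: "\<rho> e w = \<rho> w e" using r_sym e wG by blast
        have "c' x * c' y * \<rho> x y = c v * c w * (\<rho> v e * \<rho> (gadd v e) w)"
          using xy c'1 c'2 v w by (simp add: mult_ac)
        also have "\<dots> = c v * c w * \<rho> v w * \<rho> (gadd v w) e" using co1 co2 sy e1 by (simp add: mult_ac)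
        also have "\<dots> = c (gadd v w) * \<rho> (gadd v w) e" using cmul v w by simp
        also have "\<dots> = c' (gadd x y)" using xy c'2 vw e1 by simp
        finally have ?thesis . }
      moreover
      { assume xy: "x = gadd v e" "y = gadd w e"
        have co1: "\<rho> v e * \<rho> (gadd v e) (gadd w e) = \<rho> e (gadd w e) * \<rho> v (gadd e (gadd w e))"
          using r_coc vG weG e by blast
        have co2: "\<rho> w e * \<rho> (gadd w e) e = \<rho> e e * \<rho> w (gadd e e)"
          using r_coc wG e by blast
        have sy: "\<rho> e (gadd w e) = \<rho> (gadd w e) e" using r_sym e weG by blast
        have ee: "\<rho> e e = 1" using r_self e by blast
        have w0: "\<rho> w gzero = 1"
        proof -
          have g0: "gzero \<in> G" using G by (simp add: closed_sub_def)
          have "\<rho> w gzero * \<rho> (gadd w gzero) gzero = \<rho> gzero gzero * \<rho> w (gadd gzero gzero)"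
            using r_coc wG g0 by blast
          moreover have "\<rho> gzero gzero = 1" using r_self G by (auto simp: closed_sub_def)
          ultimately have "\<rho> w gzero * \<rho> w gzero = \<rho> w gzero" by simp
          moreover have "\<rho> w gzero \<noteq> 0" using rsq[of w gzero] wG G by (auto simp: closed_sub_def)
          ultimately show ?thesis by simp
        qed
        have rwe: "\<rho> w e * \<rho> w e = 1" using r_sq wG e by blast
        have X: "\<rho> w e * \<rho> e (gadd w e) = 1" using co2 sy ee w0 by simp
        have "c' x * c' y * \<rho> x y = c v * c w * \<rho> w e * (\<rho> v e * \<rho> (gadd v e) (gadd w e))"
          using xy c'2 v w by (simp add: mult_ac)
        also have "\<dots> = c v * c w * (\<rho> w e * \<rho> e (gadd w e)) * \<rho> v w" using co1 e1 by (simp add: mult_ac)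
        also have "\<dots> = c v * c w * \<rho> v w" using X by simp
        also have "\<dots> = c' (gadd x y)" using xy c'1 cmul v w vw e1 by simp
        finally have ?thesis . }
      ultimately show ?thesis using v(2) w(2) by blast
    qed
  qed
  show ?thesis using closed' sub' ins' good' by blast
qed

lemma sign_exists:
  assumes G: "closed_sub G" "finite G"
    and r_sq: "\<forall>f\<in>G. \<forall>g\<in>G. \<rho> f g * \<rho> f g = 1"
    and r_sym: "\<forall>f\<in>G. \<forall>g\<in>G. \<rho> f g = \<rho> g f"
    and r_coc: "\<forall>f\<in>G. \<forall>g\<in>G. \<forall>h\<in>G. \<rho> f g * \<rho> (gadd f g) h = \<rho> g h * \<rho> f (gadd g h)"
    and r_self: "\<forall>f\<in>G. \<rho> f f = 1"
  shows "\<exists>c. good_sign \<rho> G c"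
proof -
  have "\<And>E. finite E \<Longrightarrow> E \<subseteq> G \<Longrightarrow> \<exists>V c. closed_sub V \<and> V \<subseteq> G \<and> E \<subseteq> V \<and> good_sign \<rho> V c"
  proof -
    fix E :: "pauli_vec set"
    assume "finite E" "E \<subseteq> G"
    then show "\<exists>V c. closed_sub V \<and> V \<subseteq> G \<and> E \<subseteq> V \<and> good_sign \<rho> V c"
    proof (induction E rule: finite_induct)
      case empty
      have "closed_sub {gzero}" by (simp add: closed_sub_def)
      moreover have "{gzero} \<subseteq> G" using G by (simp add: closed_sub_def)
      moreover have "good_sign \<rho> {gzero} (\<lambda>_. 1)"
        using r_self G by (simp add: good_sign_def closed_sub_def)
      ultimately show ?case by blast
    next
      case (insert e E)
      then obtain V c where "closed_sub V" "V \<subseteq> G" "E \<subseteq> V" "good_sign \<rho> V c" by auto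
      moreover have "e \<in> G" using insert by auto
      ultimately obtain V' c' where "closed_sub V'" "V' \<subseteq> G" "insert e V \<subseteq> V'" "good_sign \<rho> V' c'"
        using sign_extend[OF G(1) r_sq r_sym r_coc r_self] by metis
      then show ?case using \<open>E \<subseteq> V\<close> by blast
    qed
  qed
  from this[OF G(2) order_refl] obtain V c where "V \<subseteq> G" "G \<subseteq> V" "good_sign \<rho> V c" by blast
  then have "V = G" by blast
  then show ?thesis using \<open>good_sign \<rho> V c\<close> by blast
qed


section \<open>Operators commuting with all Paulis are scalar\<close>

lemma prod_indicator:
  "finite Q \<Longrightarrow> (\<Prod>i\<in>Q. if P i then 1 else (0::complex)) = (if \<forall>i\<in>Q. P i then 1 else 0)"
  by (simp add: prod_zero_iff)

definition zop :: "nat \<Rightarrow> pauli_vec" where "zop j = gzero(j := (False, True))"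
definition xop :: "bits \<Rightarrow> pauli_vec" where "xop a = (\<lambda>i. (a i, False))"
definition xr :: "nat set \<Rightarrow> bits \<Rightarrow> bits \<Rightarrow> bits" where "xr Q z a = (\<lambda>i. i \<in> Q \<and> (z i \<noteq> a i))"

lemma zop_Gset: "j \<in> Q \<Longrightarrow> zop j \<in> Gset Q"
  by (simp add: zop_def Gset_def)

lemma xop_Gset: "a \<in> basis Q \<Longrightarrow> xop a \<in> Gset Q"
  by (simp add: xop_def Gset_def basis_def)

lemma xr_basis: "xr Q z a \<in> basis Q"
  by (simp add: xr_def basis_def)

lemma xr_xr: "z \<in> basis Q \<Longrightarrow> xr Q (xr Q z a) a = z"
  by (auto simp: xr_def basis_def fun_eq_iff)

lemma pauli_zop:
  assumes fQ: "finite Q" and j: "j \<in> Q" and z: "z \<in> basis Q" and w: "w \<in> basis Q"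
  shows "pauli Q (zop j) z w = (if z = w then (if z j then -1 else 1) else 0)"
proof -
  have "pauli Q (zop j) z w = (\<Prod>i\<in>Q. (if z i = w i then 1 else 0) * (if i = j then (if z i then -1 else 1) else 1))"
    unfolding pauli_def zop_def by (rule prod.cong) (auto simp: pvals)
  also have "\<dots> = (if \<forall>i\<in>Q. z i = w i then 1 else 0) * (if z j then -1 else 1)"
    using fQ j by (simp add: prod.distrib prod_indicator prod.delta)
  also have "\<dots> = (if z = w then (if z j then -1 else 1) else 0)"
    using basis_eq_iff[OF z w] by simp
  finally show ?thesis .
qed

lemma pauli1_x: "pauli1 (a, False) z w = (if w = (z \<noteq> a) then 1 else 0)"
  by (cases a; cases z; cases w; simp add: pvals)

lemma pauli_xop:
  assumes fQ: "finite Q" and z: "z \<in> basis Q" and w: "w \<in> basis Q"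
  shows "pauli Q (xop a) z w = (if w = xr Q z a then 1 else 0)"
proof -
  have "pauli Q (xop a) z w = (\<Prod>i\<in>Q. if w i = (z i \<noteq> a i) then 1 else 0)"
    unfolding pauli_def xop_def by (simp add: pauli1_x)
  also have "\<dots> = (if \<forall>i\<in>Q. w i = (z i \<noteq> a i) then 1 else 0)"
    using fQ by (simp add: prod_indicator)
  also have "(\<forall>i\<in>Q. w i = (z i \<noteq> a i)) \<longleftrightarrow> w = xr Q z a"
    using w by (auto simp: xr_def basis_def fun_eq_iff)
  finally show ?thesis .
qed

lemma commuting_scalar:
  assumes fQ: "finite Q"
    and comm: "\<And>g. g \<in> Gset Q \<Longrightarrow> op_eq Q (mmul Q (pauli Q g) H) (mmul Q H (pauli Q g))"
    and x: "x \<in> basis Q" and y: "y \<in> basis Q" and y0: "y0 \<in> basis Q"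
  shows "H x y = (if x = y then H y0 y0 else 0)"
proof -
  have fb: "finite (basis Q)" using fQ finite_basis by blast
  have offdiag: "H x y = 0" if xy: "x \<noteq> y" "x \<in> basis Q" "y \<in> basis Q" for x y
  proof -
    obtain j where j: "j \<in> Q" "x j \<noteq> y j" using xy basis_eq_iff[of x Q y] by blast
    have "mmul Q (pauli Q (zop j)) H x y = mmul Q H (pauli Q (zop j)) x y"
      using comm[OF zop_Gset[OF j(1)]] xy by (simp add: op_eq_def)
    moreover have "mmul Q (pauli Q (zop j)) H x y = (if x j then -1 else 1) * H x y"
    proof -
      have "mmul Q (pauli Q (zop j)) H x y = (\<Sum>z\<in>basis Q. (if x = z then (if x j then -1 else 1) * H x y else 0))"
        unfolding mmul_def by (rule sum.cong) (auto simp: pauli_zop[OF fQ j(1) xy(2)])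
      then show ?thesis using fb xy(2) by simp
    qed
    moreover have "mmul Q H (pauli Q (zop j)) x y = H x y * (if y j then -1 else 1)"
    proof -
      have "mmul Q H (pauli Q (zop j)) x y = (\<Sum>z\<in>basis Q. (if y = z then H x y * (if y j then -1 else 1) else 0))"
        unfolding mmul_def by (rule sum.cong) (auto simp: pauli_zop[OF fQ j(1) _ xy(3)])
      then show ?thesis using fb xy(3) by simp
    qed
    ultimately have "(if x j then -1 else 1) * H x y = H x y * (if y j then -1 else 1)" by simp
    then show "H x y = 0" using j(2) by (cases "x j") auto
  qed
  have shift: "H x (xr Q y a) = H (xr Q x a) y" if "x \<in> basis Q" "y \<in> basis Q" "a \<in> basis Q" for x y a
  proof -
    have "mmul Q (pauli Q (xop a)) H x y = mmul Q H (pauli Q (xop a)) x y"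
      using comm[OF xop_Gset[OF that(3)]] that by (simp add: op_eq_def)
    moreover have "mmul Q (pauli Q (xop a)) H x y = H (xr Q x a) y"
    proof -
      have "mmul Q (pauli Q (xop a)) H x y = (\<Sum>z\<in>basis Q. (if xr Q x a = z then H (xr Q x a) y else 0))"
        unfolding mmul_def by (rule sum.cong) (auto simp: pauli_xop[OF fQ that(1)])
      then show ?thesis using fb xr_basis[of Q x a] by simp
    qed
    moreover have "mmul Q H (pauli Q (xop a)) x y = H x (xr Q y a)"
    proof -
      have "mmul Q H (pauli Q (xop a)) x y = (\<Sum>z\<in>basis Q. (if xr Q y a = z then H x (xr Q y a) else 0))"
        unfolding mmul_def
      proof (rule sum.cong[OF refl])
        fix z assume z: "z \<in> basis Q"
        have "y = xr Q z a \<longleftrightarrow> xr Q y a = z"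
          using xr_xr[OF z, of a] xr_xr[OF that(2), of a] by metis
        then show "H x z * pauli Q (xop a) z y = (if xr Q y a = z then H x (xr Q y a) else 0)"
          using pauli_xop[OF fQ z that(2)] by auto
      qed
      then show ?thesis using fb xr_basis[of Q y a] by simp
    qed
    ultimately show ?thesis by simp
  qed
  have diag: "H x x = H y0 y0" if "x \<in> basis Q" for x
  proof -
    define a where "a = xr Q x y0"
    have a: "a \<in> basis Q" by (simp add: a_def xr_basis)
    have "xr Q y0 a = x" using that y0 by (auto simp: a_def xr_def basis_def fun_eq_iff)
    moreover have "xr Q x a = y0" using that y0 by (auto simp: a_def xr_def basis_def fun_eq_iff)
    ultimately show ?thesis using shift[OF that y0 a] by simp
  qed
  show ?thesis using offdiag[OF _ x y] diag[OF x] by auto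
qed


section \<open>Realising a symplectic map by a Clifford unitary\<close>

lemma closed_sub_Gset: "closed_sub (Gset Q)"
  by (simp add: closed_sub_def Gset_gadd)

lemma sum_Gset_shift:
  assumes "g \<in> Gset Q"
  shows "(\<Sum>f\<in>Gset Q. F (gadd f g)) = (\<Sum>f\<in>Gset Q. F f)"
proof (rule sum.reindex_bij_witness[where i = "\<lambda>f. gadd f g" and j = "\<lambda>f. gadd f g"])
qed (auto simp: Gset_gadd assms)

lemma smul_cancel: "c \<noteq> 0 \<Longrightarrow> op_eq Q (smul c A) (smul c B) \<Longrightarrow> op_eq Q A B"
  by (simp add: op_eq_def smul_def)

lemma clifford_construct:
  assumes fQ: "finite Q"
    and uG: "\<And>f. f \<in> Gset Q \<Longrightarrow> u f \<in> Gset Q"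
    and uadd: "\<And>f g. f \<in> Gset Q \<Longrightarrow> g \<in> Gset Q \<Longrightarrow> u (gadd f g) = gadd (u f) (u g)"
    and usymp: "\<And>f g. f \<in> Gset Q \<Longrightarrow> g \<in> Gset Q \<Longrightarrow> symp Q (u f) (u g) = symp Q f g"
    and ubij: "bij_betw u (Gset Q) (Gset Q)"
  shows "\<exists>U. unitary Q U \<and> (\<forall>f\<in>Gset Q. \<exists>s. (s = 1 \<or> s = -1) \<and>
            op_eq Q (mmul Q (mmul Q U (pauli Q f)) (adj U)) (\<lambda>x y. s * pauli Q (u f) x y))"
proof -
  have fG: "finite (Gset Q)" using fQ finite_Gset by blast
  have fb: "finite (basis Q)" using fQ finite_basis by blast
  define \<rho> where "\<rho> f g = ph Q (u f) (u g) / ph Q f g" for f g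
  have u0: "u gzero = gzero"
  proof -
    have "u gzero = gadd (u gzero) (u gzero)" using uadd[of gzero gzero] by simp
    then show ?thesis by (metis gadd_cancel_left gadd_self)
  qed
  have r_sq: "\<forall>f\<in>Gset Q. \<forall>g\<in>Gset Q. \<rho> f g * \<rho> f g = 1"
  proof (intro ballI)
    fix f g assume f: "f \<in> Gset Q" and g: "g \<in> Gset Q"
    have "\<rho> f g * \<rho> f g = (ph Q (u f) (u g) * ph Q (u f) (u g)) / (ph Q f g * ph Q f g)"
      by (simp add: \<rho>_def)
    also have "\<dots> = 1" using ph_sq[OF fQ] usymp[OF f g] by simp
    finally show "\<rho> f g * \<rho> f g = 1" .
  qed
  have r_sym: "\<forall>f\<in>Gset Q. \<forall>g\<in>Gset Q. \<rho> f g = \<rho> g f"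
  proof (intro ballI)
    fix f g assume f: "f \<in> Gset Q" and g: "g \<in> Gset Q"
    have "\<rho> f g = (sg (symp Q (u f) (u g)) * ph Q (u g) (u f)) / (sg (symp Q f g) * ph Q g f)"
      unfolding \<rho>_def using ph_comm[OF fQ, of "u f" "u g"] ph_comm[OF fQ, of f g] by simp
    also have "\<dots> = \<rho> g f" using usymp[OF f g] by (simp add: \<rho>_def)
    finally show "\<rho> f g = \<rho> g f" .
  qed
  have r_coc: "\<forall>f\<in>Gset Q. \<forall>g\<in>Gset Q. \<forall>h\<in>Gset Q. \<rho> f g * \<rho> (gadd f g) h = \<rho> g h * \<rho> f (gadd g h)"
  proof (intro ballI)
    fix f g h assume f: "f \<in> Gset Q" and g: "g \<in> Gset Q" and h: "h \<in> Gset Q"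
    have A: "ph Q (u f) (u g) * ph Q (u (gadd f g)) (u h) = ph Q (u g) (u h) * ph Q (u f) (u (gadd g h))"
      using uadd[OF f g] uadd[OF g h] ph_cocycle by simp
    have B: "ph Q f g * ph Q (gadd f g) h = ph Q g h * ph Q f (gadd g h)" by (rule ph_cocycle)
    show "\<rho> f g * \<rho> (gadd f g) h = \<rho> g h * \<rho> f (gadd g h)"
      unfolding \<rho>_def using A B by (simp add: field_simps)
  qed
  have r_self: "\<forall>f\<in>Gset Q. \<rho> f f = 1" by (simp add: \<rho>_def)
  obtain c where c: "good_sign \<rho> (Gset Q) c"
    using sign_exists[OF closed_sub_Gset fG r_sq r_sym r_coc r_self] by blast
  have c_pm: "\<And>f. f \<in> Gset Q \<Longrightarrow> c f = 1 \<or> c f = -1" using c by (simp add: good_sign_def)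
  have c_nz: "\<And>f. f \<in> Gset Q \<Longrightarrow> c f \<noteq> 0" using c_pm by fastforce
  have c_mul: "\<And>f g. f \<in> Gset Q \<Longrightarrow> g \<in> Gset Q \<Longrightarrow> c f * c g * ph Q (u f) (u g) = ph Q f g * c (gadd f g)"
  proof -
    fix f g assume f: "f \<in> Gset Q" and g: "g \<in> Gset Q"
    have "c f * c g * \<rho> f g = c (gadd f g)" using c f g by (simp add: good_sign_def)
    then show "c f * c g * ph Q (u f) (u g) = ph Q f g * c (gadd f g)"
      unfolding \<rho>_def by (simp add: field_simps)
  qed
  have c0: "c gzero = 1"
  proof -
    have "c gzero * c gzero * ph Q (u gzero) (u gzero) = ph Q gzero gzero * c (gadd gzero gzero)"
      using c_mul[of gzero gzero] by simp
    then have "c gzero * c gzero = c gzero" by simp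
    then show ?thesis using c_nz[of gzero] by simp
  qed
  have c_real: "\<And>f. f \<in> Gset Q \<Longrightarrow> cnj (c f) = c f" using c_pm by fastforce
  define \<tau> where "\<tau> g = smul (c g) (pauli Q (u g))" for g
  have tau_mult: "\<And>g f. g \<in> Gset Q \<Longrightarrow> f \<in> Gset Q \<Longrightarrow> mmul Q (\<tau> g) (\<tau> f) x y = ph Q g f * \<tau> (gadd g f) x y" for x y
  proof -
    fix g f assume g: "g \<in> Gset Q" and f: "f \<in> Gset Q"
    have "mmul Q (\<tau> g) (\<tau> f) x y = c g * c f * ph Q (u g) (u f) * pauli Q (gadd (u g) (u f)) x y"
      unfolding \<tau>_def smul_mmul_left smul_mmul_right by (simp add: smul_def pauli_mult[OF fQ])
    also have "\<dots> = ph Q g f * \<tau> (gadd g f) x y"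
      using c_mul[OF g f] uadd[OF g f] by (simp add: \<tau>_def smul_def)
    finally show "mmul Q (\<tau> g) (\<tau> f) x y = ph Q g f * \<tau> (gadd g f) x y" .
  qed
  have adj_tau: "\<And>g. g \<in> Gset Q \<Longrightarrow> adj (\<tau> g) = \<tau> g"
    by (simp add: \<tau>_def adj_smul adj_pauli c_real)
  define Wt where "Wt x0 y0 x y = (\<Sum>f\<in>Gset Q. \<tau> f x x0 * pauli Q f y0 y)" for x0 y0 x y
  have intertwine: "\<And>g. g \<in> Gset Q \<Longrightarrow> mmul Q (\<tau> g) (Wt x0 y0) x y = mmul Q (Wt x0 y0) (pauli Q g) x y" for x0 y0 x y
  proof -
    fix g assume g: "g \<in> Gset Q"
    have "mmul Q (\<tau> g) (Wt x0 y0) x y = (\<Sum>z\<in>basis Q. \<Sum>f\<in>Gset Q. \<tau> g x z * \<tau> f z x0 * pauli Q f y0 y)"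
      by (simp add: mmul_def Wt_def sum_distrib_left mult.assoc)
    also have "\<dots> = (\<Sum>f\<in>Gset Q. \<Sum>z\<in>basis Q. \<tau> g x z * \<tau> f z x0 * pauli Q f y0 y)"
      by (rule sum.swap)
    also have "\<dots> = (\<Sum>f\<in>Gset Q. mmul Q (\<tau> g) (\<tau> f) x x0 * pauli Q f y0 y)"
      by (simp add: mmul_def sum_distrib_right)
    also have "\<dots> = (\<Sum>f\<in>Gset Q. ph Q g f * \<tau> (gadd g f) x x0 * pauli Q f y0 y)"
      by (rule sum.cong) (simp_all add: tau_mult[OF g])
    finally have L: "mmul Q (\<tau> g) (Wt x0 y0) x y = (\<Sum>f\<in>Gset Q. ph Q g f * \<tau> (gadd g f) x x0 * pauli Q f y0 y)" .
    have "mmul Q (Wt x0 y0) (pauli Q g) x y = (\<Sum>z\<in>basis Q. \<Sum>f\<in>Gset Q. \<tau> f x x0 * pauli Q f y0 z * pauli Q g z y)"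
      by (simp add: mmul_def Wt_def sum_distrib_right)
    also have "\<dots> = (\<Sum>f\<in>Gset Q. \<Sum>z\<in>basis Q. \<tau> f x x0 * pauli Q f y0 z * pauli Q g z y)"
      by (rule sum.swap)
    also have "\<dots> = (\<Sum>f\<in>Gset Q. \<tau> f x x0 * mmul Q (pauli Q f) (pauli Q g) y0 y)"
      by (simp add: mmul_def sum_distrib_left mult.assoc)
    also have "\<dots> = (\<Sum>f\<in>Gset Q. \<tau> f x x0 * (ph Q f g * pauli Q (gadd f g) y0 y))"
      by (simp add: pauli_mult[OF fQ])
    also have "\<dots> = (\<Sum>f\<in>Gset Q. \<tau> (gadd f g) x x0 * (ph Q (gadd f g) g * pauli Q (gadd (gadd f g) g) y0 y))"
      using sum_Gset_shift[OF g, of "\<lambda>f. \<tau> f x x0 * (ph Q f g * pauli Q (gadd f g) y0 y)"] by simp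
    also have "\<dots> = (\<Sum>f\<in>Gset Q. ph Q g f * \<tau> (gadd g f) x x0 * pauli Q f y0 y)"
    proof (rule sum.cong[OF refl])
      fix f assume "f \<in> Gset Q"
      show "\<tau> (gadd f g) x x0 * (ph Q (gadd f g) g * pauli Q (gadd (gadd f g) g) y0 y) = ph Q g f * \<tau> (gadd g f) x x0 * pauli Q f y0 y"
      proof -
        have e1: "gadd (gadd f g) g = f" by simp
        have e2: "ph Q (gadd f g) g = ph Q g f" by (rule ph_gadd_swap)
        have e3: "gadd f g = gadd g f" by (rule gadd_comm)
        show ?thesis unfolding e1 e2 unfolding e3 by (simp add: mult_ac)
      qed
    qed
    finally show "mmul Q (\<tau> g) (Wt x0 y0) x y = mmul Q (Wt x0 y0) (pauli Q g) x y" using L by simp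
  qed
  define y0 :: bits where "y0 = (\<lambda>j. False)"
  have y0b: "y0 \<in> basis Q" by (simp add: y0_def basis_def)
  have "\<exists>x0\<in>basis Q. Wt x0 y0 x0 y0 \<noteq> 0"
  proof (rule ccontr)
    assume "\<not> (\<exists>x0\<in>basis Q. Wt x0 y0 x0 y0 \<noteq> 0)"
    then have z: "(\<Sum>x\<in>basis Q. Wt x y0 x y0) = 0" by simp
    have "(\<Sum>x\<in>basis Q. Wt x y0 x y0) = (\<Sum>f\<in>Gset Q. \<Sum>x\<in>basis Q. \<tau> f x x * pauli Q f y0 y0)"
      unfolding Wt_def by (rule sum.swap)
    also have "\<dots> = (\<Sum>f\<in>Gset Q. c f * (\<Sum>x\<in>basis Q. pauli Q (u f) x x) * pauli Q f y0 y0)"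
      by (simp add: \<tau>_def smul_def sum_distrib_left sum_distrib_right mult_ac)
    also have "\<dots> = (\<Sum>f\<in>Gset Q. if f = gzero then 2 ^ card Q else 0)"
    proof (rule sum.cong[OF refl])
      fix f assume f: "f \<in> Gset Q"
      have "(\<forall>j\<in>Q. u f j = (False, False)) \<longleftrightarrow> u f = gzero"
        using uG[OF f] by (auto simp: Gset_def fun_eq_iff)
      also have "\<dots> \<longleftrightarrow> f = gzero"
        using ubij f u0 by (metis Gset_gzero bij_betw_iff_bijections)
      finally have e: "(\<forall>j\<in>Q. u f j = (False, False)) \<longleftrightarrow> f = gzero" .
      show "c f * (\<Sum>x\<in>basis Q. pauli Q (u f) x x) * pauli Q f y0 y0 = (if f = gzero then 2 ^ card Q else 0)"
        using e c0 pauli_zero_basis[OF fQ y0b y0b] by (simp add: pauli_trace[OF fQ])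
    qed
    also have "\<dots> = 2 ^ card Q" using fG by simp
    finally show False using z by simp
  qed
  then obtain x0 where x0: "x0 \<in> basis Q" "Wt x0 y0 x0 y0 \<noteq> 0" by blast
  define W where "W = Wt x0 y0"
  have W_nz: "W x0 y0 \<noteq> 0" using x0 by (simp add: W_def)
  have int: "\<And>g. g \<in> Gset Q \<Longrightarrow> mmul Q (\<tau> g) W = mmul Q W (pauli Q g)"
    using intertwine by (simp add: W_def fun_eq_iff)
  have int_adj: "\<And>g. g \<in> Gset Q \<Longrightarrow> op_eq Q (mmul Q (adj W) (\<tau> g)) (mmul Q (pauli Q g) (adj W))"
  proof -
    fix g assume g: "g \<in> Gset Q"
    have "op_eq Q (mmul Q (adj W) (adj (\<tau> g))) (adj (mmul Q (\<tau> g) W))"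
      using adj_mmul_eq op_eq_sym by blast
    also have "op_eq Q \<dots> (adj (mmul Q W (pauli Q g)))" by (simp add: int[OF g])
    also have "op_eq Q \<dots> (mmul Q (adj (pauli Q g)) (adj W))" by (rule adj_mmul_eq)
    finally show "op_eq Q (mmul Q (adj W) (\<tau> g)) (mmul Q (pauli Q g) (adj W))"
      by (simp add: adj_tau[OF g] adj_pauli)
  qed
  define H where "H = mmul Q (adj W) W"
  define K where "K = mmul Q W (adj W)"
  have H_comm: "\<And>g. g \<in> Gset Q \<Longrightarrow> op_eq Q (mmul Q (pauli Q g) H) (mmul Q H (pauli Q g))"
  proof -
    fix g assume g: "g \<in> Gset Q"
    have "op_eq Q (mmul Q (pauli Q g) H) (mmul Q (mmul Q (pauli Q g) (adj W)) W)"
      unfolding H_def using mmul_assoc_eq[OF fQ] op_eq_sym by blast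
    also have "op_eq Q \<dots> (mmul Q (mmul Q (adj W) (\<tau> g)) W)"
      using mmul_cong[OF op_eq_sym[OF int_adj[OF g]] op_eq_refl] .
    also have "op_eq Q \<dots> (mmul Q (adj W) (mmul Q (\<tau> g) W))" by (rule mmul_assoc_eq[OF fQ])
    also have "op_eq Q \<dots> (mmul Q (adj W) (mmul Q W (pauli Q g)))" by (simp add: int[OF g])
    also have "op_eq Q \<dots> (mmul Q H (pauli Q g))"
      unfolding H_def using mmul_assoc_eq[OF fQ] op_eq_sym by blast
    finally show "op_eq Q (mmul Q (pauli Q g) H) (mmul Q H (pauli Q g))" .
  qed
  have K_comm_tau: "\<And>g. g \<in> Gset Q \<Longrightarrow> op_eq Q (mmul Q (\<tau> g) K) (mmul Q K (\<tau> g))"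
  proof -
    fix g assume g: "g \<in> Gset Q"
    have "op_eq Q (mmul Q (\<tau> g) K) (mmul Q (mmul Q (\<tau> g) W) (adj W))"
      unfolding K_def using mmul_assoc_eq[OF fQ] op_eq_sym by blast
    also have "op_eq Q \<dots> (mmul Q (mmul Q W (pauli Q g)) (adj W))" by (simp add: int[OF g])
    also have "op_eq Q \<dots> (mmul Q W (mmul Q (pauli Q g) (adj W)))" by (rule mmul_assoc_eq[OF fQ])
    also have "op_eq Q \<dots> (mmul Q W (mmul Q (adj W) (\<tau> g)))"
      using mmul_cong[OF op_eq_refl op_eq_sym[OF int_adj[OF g]]] .
    also have "op_eq Q \<dots> (mmul Q K (\<tau> g))"
      unfolding K_def using mmul_assoc_eq[OF fQ] op_eq_sym by blast
    finally show "op_eq Q (mmul Q (\<tau> g) K) (mmul Q K (\<tau> g))" .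
  qed
  have K_comm: "\<And>h. h \<in> Gset Q \<Longrightarrow> op_eq Q (mmul Q (pauli Q h) K) (mmul Q K (pauli Q h))"
  proof -
    fix h assume h: "h \<in> Gset Q"
    obtain g where g: "g \<in> Gset Q" "h = u g" using ubij h by (metis bij_betw_iff_bijections)
    have "op_eq Q (smul (c g) (mmul Q (pauli Q (u g)) K)) (smul (c g) (mmul Q K (pauli Q (u g))))"
      using K_comm_tau[OF g(1)] by (simp add: \<tau>_def smul_mmul_left smul_mmul_right)
    then show "op_eq Q (mmul Q (pauli Q h) K) (mmul Q K (pauli Q h))"
      using smul_cancel c_nz[OF g(1)] g(2) by blast
  qed
  have H_scal: "\<And>x y. x \<in> basis Q \<Longrightarrow> y \<in> basis Q \<Longrightarrow> H x y = (if x = y then H y0 y0 else 0)"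
    using commuting_scalar[OF fQ H_comm _ _ y0b] by blast
  have K_scal: "\<And>x y. x \<in> basis Q \<Longrightarrow> y \<in> basis Q \<Longrightarrow> K x y = (if x = y then K y0 y0 else 0)"
    using commuting_scalar[OF fQ K_comm _ _ y0b] by blast
  define r where "r = (\<Sum>x\<in>basis Q. (cmod (W x y0))\<^sup>2)"
  have Hr: "H y0 y0 = complex_of_real r"
    unfolding H_def r_def mmul_def adj_def of_real_sum using cnj_mult_self by simp
  have r_pos: "r > 0"
  proof -
    have "(cmod (W x0 y0))\<^sup>2 \<le> r"
      unfolding r_def using fb x0(1) by (intro member_le_sum) auto
    moreover have "(cmod (W x0 y0))\<^sup>2 > 0" using W_nz by simp
    ultimately show ?thesis by linarith
  qed
  have Kr: "K y0 y0 = complex_of_real r"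
  proof -
    have "mmul Q K W x0 y0 = mmul Q W H x0 y0"
      unfolding K_def H_def using mmul_assoc[OF fQ] by simp
    moreover have "mmul Q K W x0 y0 = K y0 y0 * W x0 y0"
    proof -
      have "mmul Q K W x0 y0 = (\<Sum>z\<in>basis Q. if x0 = z then K y0 y0 * W x0 y0 else 0)"
        unfolding mmul_def by (rule sum.cong[OF refl]) (auto simp: K_scal[OF x0(1)])
      then show ?thesis using fb x0(1) by simp
    qed
    moreover have "mmul Q W H x0 y0 = W x0 y0 * H y0 y0"
    proof -
      have "mmul Q W H x0 y0 = (\<Sum>z\<in>basis Q. if y0 = z then W x0 y0 * H y0 y0 else 0)"
        unfolding mmul_def by (rule sum.cong[OF refl]) (auto simp: H_scal[OF _ y0b])
      then show ?thesis using fb y0b by simp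
    qed
    ultimately have "K y0 y0 * W x0 y0 = H y0 y0 * W x0 y0" by (simp add: mult.commute)
    then show ?thesis using W_nz Hr by simp
  qed
  define U where "U = smul (1 / complex_of_real (sqrt r)) W"
  have sr: "complex_of_real (sqrt r) \<noteq> 0" using r_pos by simp
  have sr2: "(1 / complex_of_real (sqrt r)) * (1 / complex_of_real (sqrt r)) = 1 / complex_of_real r"
    using r_pos by (simp add: field_simps of_real_mult[symmetric] del: of_real_mult)
  have sr3: "complex_of_real (sqrt r) * complex_of_real (sqrt r) = complex_of_real r"
    using r_pos by (simp add: of_real_mult[symmetric] del: of_real_mult)
  have adjU: "adj U = smul (1 / complex_of_real (sqrt r)) (adj W)"
    by (simp add: U_def adj_smul)
  have UU1: "op_eq Q (mmul Q (adj U) U) idop"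
  proof (rule op_eq_I)
    fix x y assume x: "x \<in> basis Q" and y: "y \<in> basis Q"
    have "mmul Q (adj U) U = smul (1 / complex_of_real r) H"
      unfolding adjU unfolding U_def H_def by (simp add: smul_mmul_left smul_mmul_right smul_smul sr2 sr3)
    then have "mmul Q (adj U) U x y = (1 / complex_of_real r) * H x y" by (simp add: smul_def)
    then show "mmul Q (adj U) U x y = idop x y"
      using H_scal[OF x y] Hr r_pos by (simp add: idop_def)
  qed
  have UU2: "op_eq Q (mmul Q U (adj U)) idop"
  proof (rule op_eq_I)
    fix x y assume x: "x \<in> basis Q" and y: "y \<in> basis Q"
    have "mmul Q U (adj U) = smul (1 / complex_of_real r) K"
      unfolding adjU unfolding U_def K_def by (simp add: smul_mmul_left smul_mmul_right smul_smul sr2 sr3)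
    then have "mmul Q U (adj U) x y = (1 / complex_of_real r) * K x y" by (simp add: smul_def)
    then show "mmul Q U (adj U) x y = idop x y"
      using K_scal[OF x y] Kr r_pos by (simp add: idop_def)
  qed
  have K_id: "op_eq Q K (smul (complex_of_real r) idop)"
    using K_scal Kr by (auto simp: op_eq_def smul_def idop_def)
  have conj: "op_eq Q (mmul Q (mmul Q U (pauli Q f)) (adj U)) (\<lambda>x y. c f * pauli Q (u f) x y)"
    if f: "f \<in> Gset Q" for f
  proof -
    have "mmul Q (mmul Q U (pauli Q f)) (adj U) = smul (1 / complex_of_real r) (mmul Q (mmul Q W (pauli Q f)) (adj W))"
      unfolding adjU unfolding U_def by (simp add: smul_mmul_left smul_mmul_right smul_smul sr2 sr3)
    also have "\<dots> = smul (1 / complex_of_real r) (mmul Q (mmul Q (\<tau> f) W) (adj W))"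
      by (simp add: int[OF f])
    finally have e1: "mmul Q (mmul Q U (pauli Q f)) (adj U) = smul (1 / complex_of_real r) (mmul Q (mmul Q (\<tau> f) W) (adj W))" .
    have "op_eq Q (mmul Q (mmul Q (\<tau> f) W) (adj W)) (mmul Q (\<tau> f) K)"
      unfolding K_def by (rule mmul_assoc_eq[OF fQ])
    also have "op_eq Q \<dots> (mmul Q (\<tau> f) (smul (complex_of_real r) idop))"
      by (rule mmul_cong[OF op_eq_refl K_id])
    also have "op_eq Q \<dots> (smul (complex_of_real r) (\<tau> f))"
      by (simp add: smul_mmul_right smul_cong mmul_id_right_eq[OF fQ])
    finally have e2: "op_eq Q (mmul Q (mmul Q (\<tau> f) W) (adj W)) (smul (complex_of_real r) (\<tau> f))" .
    have "op_eq Q (mmul Q (mmul Q U (pauli Q f)) (adj U)) (smul (1 / complex_of_real r) (smul (complex_of_real r) (\<tau> f)))"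
      unfolding e1 by (rule smul_cong[OF e2])
    moreover have "smul (1 / complex_of_real r) (smul (complex_of_real r) (\<tau> f)) = (\<lambda>x y. c f * pauli Q (u f) x y)"
      using r_pos by (simp add: smul_smul \<tau>_def smul_def fun_eq_iff)
    ultimately show ?thesis by simp
  qed
  have "unitary Q U" using UU1 UU2 by (simp add: unitary_iff)
  moreover have "\<forall>f\<in>Gset Q. \<exists>s. (s = 1 \<or> s = -1) \<and>
            op_eq Q (mmul Q (mmul Q U (pauli Q f)) (adj U)) (\<lambda>x y. s * pauli Q (u f) x y)"
    using conj c_pm by blast
  ultimately show ?thesis by blast
qed


definition eigv :: "nat set \<Rightarrow> op \<Rightarrow> state \<Rightarrow> complex \<Rightarrow> bool" where
  "eigv Q A \<psi> e \<longleftrightarrow> (\<forall>x\<in>basis Q. apply_op Q A \<psi> x = e * \<psi> x)"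

lemma pauli_comm_pw:
  "finite Q \<Longrightarrow> mmul Q (pauli Q a) (pauli Q b) x y = sg (symp Q a b) * mmul Q (pauli Q b) (pauli Q a) x y"
  by (simp add: pauli_mult ph_comm[of Q a b] gadd_comm[of a b])

lemma apply_eig:
  assumes "finite Q" "eigv Q B \<psi> e" "x \<in> basis Q"
  shows "apply_op Q A (apply_op Q B \<psi>) x = e * apply_op Q A \<psi> x"
proof -
  have "apply_op Q A (apply_op Q B \<psi>) x = apply_op Q A (\<lambda>y. e * \<psi> y) x"
    using assms(2) by (intro apply_op_cong_state) (simp add: eigv_def)
  then show ?thesis by (simp add: apply_op_scale)
qed

lemma eig_commute:
  assumes fQ: "finite Q" and a: "eigv Q (pauli Q a) \<phi> ea" and b: "eigv Q (pauli Q b) \<phi> eb"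
    and nz: "ea \<noteq> 0" "eb \<noteq> 0" and x: "x \<in> basis Q" "\<phi> x \<noteq> 0"
  shows "\<not> symp Q a b"
proof
  assume s: "symp Q a b"
  have "apply_op Q (pauli Q a) (apply_op Q (pauli Q b) \<phi>) x = eb * ea * \<phi> x"
    using apply_eig[OF fQ b x(1)] a x(1) by (simp add: eigv_def)
  moreover have "apply_op Q (pauli Q a) (apply_op Q (pauli Q b) \<phi>) x
      = apply_op Q (mmul Q (pauli Q a) (pauli Q b)) \<phi> x"
    by (simp add: apply_op_mmul[OF fQ])
  moreover have "apply_op Q (mmul Q (pauli Q a) (pauli Q b)) \<phi> x
      = - apply_op Q (mmul Q (pauli Q b) (pauli Q a)) \<phi> x"
    using s by (simp add: apply_op_def pauli_comm_pw[OF fQ, of a b] sg_def sum_negf)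
  moreover have "apply_op Q (mmul Q (pauli Q b) (pauli Q a)) \<phi> x = ea * eb * \<phi> x"
    using apply_eig[OF fQ a x(1)] b x(1) by (simp add: eigv_def apply_op_mmul[OF fQ])
  ultimately have "eb * ea * \<phi> x = - (ea * eb * \<phi> x)" by simp
  then have "2 * (ea * eb * \<phi> x) = 0" by (simp add: mult_ac)
  then show False using nz x by simp
qed

lemma braket_adj2: "braket Q (apply_op Q A \<phi>) \<chi> = braket Q \<phi> (apply_op Q (adj A) \<chi>)"
  using braket_adj[of Q \<phi> "adj A" \<chi>] by simp

lemma braket_eig_right: "eigv Q A \<psi> e \<Longrightarrow> braket Q \<phi> (apply_op Q A \<psi>) = e * braket Q \<phi> \<psi>"
proof -
  assume "eigv Q A \<psi> e"
  then have "braket Q \<phi> (apply_op Q A \<psi>) = braket Q \<phi> (\<lambda>x. e * \<psi> x)"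
    by (intro braket_cong) (auto simp: eigv_def)
  then show ?thesis by (simp add: braket_scale_right)
qed

lemma braket_eig_left: "eigv Q A \<phi> e \<Longrightarrow> braket Q (apply_op Q A \<phi>) \<psi> = cnj e * braket Q \<phi> \<psi>"
proof -
  assume "eigv Q A \<phi> e"
  then have "braket Q (apply_op Q A \<phi>) \<psi> = braket Q (\<lambda>x. e * \<phi> x) \<psi>"
    by (intro braket_cong) (auto simp: eigv_def)
  then show ?thesis by (simp add: braket_scale_left)
qed

lemma braket_pauli_move: "braket Q \<phi> (apply_op Q (pauli Q s) \<chi>) = braket Q (apply_op Q (pauli Q s) \<phi>) \<chi>"
  using braket_adj[of Q \<phi> "pauli Q s" \<chi>] by (simp add: adj_pauli)

lemma braket_apply_mmul: "finite Q \<Longrightarrow> braket Q \<phi> (apply_op Q (mmul Q A B) \<psi>) = braket Q \<phi> (apply_op Q A (apply_op Q B \<psi>))"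
  by (simp add: braket_def apply_op_mmul)

lemma anticomm_zero:
  assumes fQ: "finite Q" and sgs: "symp Q g s"
    and es: "e = 1 \<or> e = -1"
    and \<psi>: "eigv Q (pauli Q s) \<psi> e" and \<phi>: "eigv Q (pauli Q s) \<phi> e"
  shows "braket Q \<phi> (apply_op Q (pauli Q g) \<psi>) = 0"
proof -
  define X where "X = braket Q \<phi> (apply_op Q (pauli Q g) \<psi>)"
  have "braket Q \<phi> (apply_op Q (pauli Q g) (apply_op Q (pauli Q s) \<psi>)) = e * X"
  proof -
    have "braket Q \<phi> (apply_op Q (pauli Q g) (apply_op Q (pauli Q s) \<psi>)) = braket Q \<phi> (\<lambda>x. e * apply_op Q (pauli Q g) \<psi> x)"
      by (intro braket_cong refl apply_eig[OF fQ \<psi>])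
    then show ?thesis by (simp add: braket_scale_right X_def)
  qed
  moreover have "braket Q \<phi> (apply_op Q (pauli Q g) (apply_op Q (pauli Q s) \<psi>))
      = - braket Q \<phi> (apply_op Q (pauli Q s) (apply_op Q (pauli Q g) \<psi>))"
  proof -
    have "braket Q \<phi> (apply_op Q (pauli Q g) (apply_op Q (pauli Q s) \<psi>)) = braket Q \<phi> (apply_op Q (mmul Q (pauli Q g) (pauli Q s)) \<psi>)"
      by (simp add: braket_apply_mmul[OF fQ])
    also have "\<dots> = braket Q \<phi> (\<lambda>x. - apply_op Q (mmul Q (pauli Q s) (pauli Q g)) \<psi> x)"
    proof (rule braket_cong)
      fix x show "apply_op Q (mmul Q (pauli Q g) (pauli Q s)) \<psi> x = - apply_op Q (mmul Q (pauli Q s) (pauli Q g)) \<psi> x"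
        using sgs by (simp add: apply_op_def pauli_comm_pw[OF fQ, of g s] sg_def sum_negf)
    qed simp
    also have "\<dots> = - braket Q \<phi> (apply_op Q (pauli Q s) (apply_op Q (pauli Q g) \<psi>))"
      using braket_scale_right[of Q \<phi> "-1"] by (simp add: braket_apply_mmul[OF fQ])
    finally show ?thesis .
  qed
  moreover have "braket Q \<phi> (apply_op Q (pauli Q s) (apply_op Q (pauli Q g) \<psi>)) = e * X"
  proof -
    have "braket Q \<phi> (apply_op Q (pauli Q s) (apply_op Q (pauli Q g) \<psi>)) = braket Q (apply_op Q (pauli Q s) \<phi>) (apply_op Q (pauli Q g) \<psi>)"
      by (rule braket_pauli_move)
    also have "\<dots> = cnj e * X" unfolding X_def by (rule braket_eig_left[OF \<phi>])
    finally show ?thesis using es by auto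
  qed
  ultimately have "e * X = - (e * X)" by simp
  then have "e * X = 0" by auto
  then show ?thesis using es by (auto simp: X_def)
qed

lemma expansion:
  assumes fQ: "finite Q" and x: "x \<in> basis Q" and y: "y \<in> basis Q"
  shows "2 ^ card Q * (\<phi> x * cnj (\<psi> y))
       = (\<Sum>g\<in>Gset Q. pauli Q g x y * cnj (braket Q \<phi> (apply_op Q (pauli Q g) \<psi>)))"
proof -
  have fb: "finite (basis Q)" using fQ finite_basis by blast
  have c: "cnj (braket Q \<phi> (apply_op Q (pauli Q g) \<psi>))
      = (\<Sum>x'\<in>basis Q. \<Sum>y'\<in>basis Q. \<phi> x' * cnj (\<psi> y') * cnj (pauli Q g x' y'))" for g
    by (simp add: braket_def apply_op_def sum_distrib_left mult_ac)
  have "(\<Sum>g\<in>Gset Q. pauli Q g x y * cnj (braket Q \<phi> (apply_op Q (pauli Q g) \<psi>)))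
      = (\<Sum>g\<in>Gset Q. \<Sum>x'\<in>basis Q. \<Sum>y'\<in>basis Q. \<phi> x' * cnj (\<psi> y') * (pauli Q g x y * cnj (pauli Q g x' y')))"
    unfolding c by (simp add: sum_distrib_left mult_ac)
  also have "\<dots> = (\<Sum>x'\<in>basis Q. \<Sum>g\<in>Gset Q. \<Sum>y'\<in>basis Q. \<phi> x' * cnj (\<psi> y') * (pauli Q g x y * cnj (pauli Q g x' y')))"
    by (rule sum.swap)
  also have "\<dots> = (\<Sum>x'\<in>basis Q. \<Sum>y'\<in>basis Q. \<Sum>g\<in>Gset Q. \<phi> x' * cnj (\<psi> y') * (pauli Q g x y * cnj (pauli Q g x' y')))"
    by (rule sum.cong[OF refl], rule sum.swap)
  also have "\<dots> = (\<Sum>x'\<in>basis Q. \<Sum>y'\<in>basis Q. \<phi> x' * cnj (\<psi> y') * (if x = x' \<and> y = y' then 2 ^ card Q else 0))"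
  proof (intro sum.cong refl)
    fix x' y' assume x': "x' \<in> basis Q" and y': "y' \<in> basis Q"
    have "(\<forall>j\<in>Q. x j = x' j \<and> y j = y' j) \<longleftrightarrow> x = x' \<and> y = y'"
      using basis_eq_iff[OF x x'] basis_eq_iff[OF y y'] by blast
    then show "(\<Sum>g\<in>Gset Q. \<phi> x' * cnj (\<psi> y') * (pauli Q g x y * cnj (pauli Q g x' y')))
        = \<phi> x' * cnj (\<psi> y') * (if x = x' \<and> y = y' then 2 ^ card Q else 0)"
      by (simp add: sum_distrib_left[symmetric] pauli_complete[OF fQ])
  qed
  also have "\<dots> = 2 ^ card Q * (\<phi> x * cnj (\<psi> y))"
  proof -
    have e: "(\<Sum>y'\<in>basis Q. \<phi> x' * cnj (\<psi> y') * (if x = x' \<and> y = y' then 2 ^ card Q else 0))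
        = (if x = x' then \<phi> x' * cnj (\<psi> y) * 2 ^ card Q else 0)" for x'
    proof -
      have "(\<Sum>y'\<in>basis Q. \<phi> x' * cnj (\<psi> y') * (if x = x' \<and> y = y' then 2 ^ card Q else 0))
        = (\<Sum>y'\<in>basis Q. if y = y' then (if x = x' then \<phi> x' * cnj (\<psi> y) * 2 ^ card Q else 0) else 0)"
        by (rule sum.cong) auto
      also have "\<dots> = (if x = x' then \<phi> x' * cnj (\<psi> y) * 2 ^ card Q else 0)"
        using fb y by (subst sum.delta') simp_all
      finally show ?thesis .
    qed
    show ?thesis unfolding e using fb x by (subst sum.delta') (simp_all add: mult_ac)
  qed
  finally show ?thesis by simp
qed


lemma braket_unitary:
  assumes fQ: "finite Q" and U: "op_eq Q (mmul Q (adj A) A) idop"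
  shows "braket Q (apply_op Q A \<phi>) (apply_op Q A \<psi>) = braket Q \<phi> \<psi>"
proof -
  have "braket Q (apply_op Q A \<phi>) (apply_op Q A \<psi>) = braket Q \<phi> (apply_op Q (adj A) (apply_op Q A \<psi>))"
    by (rule braket_adj2)
  also have "\<dots> = braket Q \<phi> (apply_op Q (mmul Q (adj A) A) \<psi>)"
    by (simp add: braket_apply_mmul[OF fQ])
  also have "\<dots> = braket Q \<phi> \<psi>"
    by (rule braket_cong) (simp_all add: apply_op_cong_op[OF U] apply_op_id[OF fQ])
  finally show ?thesis .
qed

lemma pauli_unitary: "finite Q \<Longrightarrow> op_eq Q (mmul Q (adj (pauli Q h)) (pauli Q h)) idop"
  by (simp add: adj_pauli pauli_sq_eq)

lemma sum_nonzero_ex: "sum F A \<noteq> (0::complex) \<Longrightarrow> \<exists>a\<in>A. F a \<noteq> 0"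
  by (metis sum.neutral)

lemma cnj_braket: "cnj (braket Q \<phi> \<psi>) = braket Q \<psi> \<phi>"
  by (simp add: braket_def mult.commute)

lemma stab_unique:
  assumes fQ: "finite Q" and SG: "S \<subseteq> Gset Q"
    and perp: "\<And>g. g \<in> Gset Q \<Longrightarrow> g \<notin> S \<Longrightarrow> \<exists>s\<in>S. symp Q g s"
    and e: "\<And>s. s \<in> S \<Longrightarrow> e s = 1 \<or> e s = -1"
    and \<phi>: "\<And>s. s \<in> S \<Longrightarrow> eigv Q (pauli Q s) \<phi> (e s)"
    and \<psi>: "\<And>s. s \<in> S \<Longrightarrow> eigv Q (pauli Q s) \<psi> (e s)"
    and u: "unit_state Q \<psi>"
    and x: "x \<in> basis Q"
  shows "\<phi> x = braket Q \<psi> \<phi> * \<psi> x"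
proof -
  have fG: "finite (Gset Q)" using fQ finite_Gset by blast
  have fb: "finite (basis Q)" using fQ finite_basis by blast
  define P where "P x y = (\<Sum>g\<in>S. pauli Q g x y * e g)" for x y
  have gen: "2 ^ card Q * (\<chi> x * cnj (\<psi> y)) = cnj (braket Q \<chi> \<psi>) * P x y"
    if \<chi>: "\<And>s. s \<in> S \<Longrightarrow> eigv Q (pauli Q s) \<chi> (e s)" and x: "x \<in> basis Q" and y: "y \<in> basis Q" for \<chi> x y
  proof -
    have "2 ^ card Q * (\<chi> x * cnj (\<psi> y)) = (\<Sum>g\<in>Gset Q. pauli Q g x y * cnj (braket Q \<chi> (apply_op Q (pauli Q g) \<psi>)))"
      by (rule expansion[OF fQ x y])
    also have "\<dots> = (\<Sum>g\<in>S. pauli Q g x y * cnj (braket Q \<chi> (apply_op Q (pauli Q g) \<psi>)))"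
    proof (rule sum.mono_neutral_right[OF fG SG, symmetric, THEN sym])
      show "\<forall>g\<in>Gset Q - S. pauli Q g x y * cnj (braket Q \<chi> (apply_op Q (pauli Q g) \<psi>)) = 0"
      proof
        fix g assume g: "g \<in> Gset Q - S"
        then obtain s where s: "s \<in> S" "symp Q g s" using perp by blast
        have "braket Q \<chi> (apply_op Q (pauli Q g) \<psi>) = 0"
          using anticomm_zero[OF fQ s(2) e[OF s(1)] \<psi>[OF s(1)] \<chi>[OF s(1)]] .
        then show "pauli Q g x y * cnj (braket Q \<chi> (apply_op Q (pauli Q g) \<psi>)) = 0" by simp
      qed
    qed
    also have "\<dots> = (\<Sum>g\<in>S. pauli Q g x y * cnj (e g * braket Q \<chi> \<psi>))"
      by (rule sum.cong[OF refl]) (simp add: braket_eig_right[OF \<psi>])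
    also have "\<dots> = cnj (braket Q \<chi> \<psi>) * P x y"
    proof -
      have "\<And>g. g \<in> S \<Longrightarrow> cnj (e g) = e g" using e by fastforce
      then show ?thesis unfolding P_def sum_distrib_left
        by (intro sum.cong refl) (simp add: mult_ac)
    qed
    finally show ?thesis .
  qed
  have eq: "\<phi> x * cnj (\<psi> y) = braket Q \<psi> \<phi> * (\<psi> x * cnj (\<psi> y))" if y: "y \<in> basis Q" for y
  proof -
    have "2 ^ card Q * (\<phi> x * cnj (\<psi> y)) = cnj (braket Q \<phi> \<psi>) * P x y" using gen[OF \<phi> x y] by blast
    moreover have "2 ^ card Q * (\<psi> x * cnj (\<psi> y)) = cnj (braket Q \<psi> \<psi>) * P x y" using gen[OF \<psi> x y] by blast
    moreover have "braket Q \<psi> \<psi> = 1" using u by (simp add: unit_state_iff)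
    ultimately have "2 ^ card Q * (\<phi> x * cnj (\<psi> y)) = 2 ^ card Q * (braket Q \<psi> \<phi> * (\<psi> x * cnj (\<psi> y)))"
      by (simp add: cnj_braket)
    then show ?thesis by simp
  qed
  have "\<phi> x * braket Q \<psi> \<psi> = braket Q \<psi> \<phi> * \<psi> x * braket Q \<psi> \<psi>"
  proof -
    have "\<phi> x * braket Q \<psi> \<psi> = (\<Sum>y\<in>basis Q. \<phi> x * cnj (\<psi> y) * \<psi> y)"
      by (simp add: braket_def sum_distrib_left mult.assoc)
    also have "\<dots> = (\<Sum>y\<in>basis Q. braket Q \<psi> \<phi> * (\<psi> x * cnj (\<psi> y)) * \<psi> y)"
      by (rule sum.cong[OF refl]) (simp add: eq)
    also have "\<dots> = braket Q \<psi> \<phi> * \<psi> x * braket Q \<psi> \<psi>"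
      unfolding braket_def[of Q \<psi> \<psi>] by (simp add: sum_distrib_left mult_ac)
    finally show ?thesis .
  qed
  then show ?thesis using u by (simp add: unit_state_iff)
qed

lemma sign_match:
  assumes fQ: "finite Q" and SG: "S \<subseteq> Gset Q"
    and e1: "\<And>s. s \<in> S \<Longrightarrow> e1 s = 1 \<or> e1 s = -1"
    and \<psi>: "\<And>s. s \<in> S \<Longrightarrow> eigv Q (pauli Q s) \<psi> (e1 s)" and u\<psi>: "unit_state Q \<psi>"
    and e2: "\<And>s. s \<in> S \<Longrightarrow> e2 s = 1 \<or> e2 s = -1"
    and \<chi>: "\<And>s. s \<in> S \<Longrightarrow> eigv Q (pauli Q s) \<chi> (e2 s)" and u\<chi>: "unit_state Q \<chi>"
  shows "\<exists>h\<in>Gset Q. (\<forall>s\<in>S. eigv Q (pauli Q s) (apply_op Q (pauli Q h) \<chi>) (e1 s))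
           \<and> unit_state Q (apply_op Q (pauli Q h) \<chi>)"
proof -
  obtain x where x: "x \<in> basis Q" "\<psi> x \<noteq> 0" using unit_nonzero[OF fQ u\<psi>] by blast
  obtain y where y: "y \<in> basis Q" "\<chi> y \<noteq> 0" using unit_nonzero[OF fQ u\<chi>] by blast
  have "2 ^ card Q * (\<psi> x * cnj (\<chi> y)) \<noteq> 0" using x y by simp
  then have "(\<Sum>g\<in>Gset Q. pauli Q g x y * cnj (braket Q \<psi> (apply_op Q (pauli Q g) \<chi>))) \<noteq> 0"
    using expansion[OF fQ x(1) y(1)] by simp
  then obtain h where h: "h \<in> Gset Q" "pauli Q h x y * cnj (braket Q \<psi> (apply_op Q (pauli Q h) \<chi>)) \<noteq> 0"
    using sum_nonzero_ex by blast
  define \<chi>2 where "\<chi>2 = apply_op Q (pauli Q h) \<chi>"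
  have bnz: "braket Q \<psi> \<chi>2 \<noteq> 0" using h(2) by (auto simp: \<chi>2_def)
  have eig: "eigv Q (pauli Q s) \<chi>2 (e1 s)" if s: "s \<in> S" for s
  proof -
    have ev: "eigv Q (pauli Q s) \<chi>2 (sg (symp Q s h) * e2 s)"
      unfolding eigv_def
    proof
      fix z assume z: "z \<in> basis Q"
      have "apply_op Q (pauli Q s) \<chi>2 z = apply_op Q (mmul Q (pauli Q s) (pauli Q h)) \<chi> z"
        by (simp add: \<chi>2_def apply_op_mmul[OF fQ])
      also have "\<dots> = sg (symp Q s h) * apply_op Q (mmul Q (pauli Q h) (pauli Q s)) \<chi> z"
        by (simp add: apply_op_def pauli_comm_pw[OF fQ, of s h] sum_distrib_left mult.assoc)
      also have "\<dots> = sg (symp Q s h) * (e2 s * apply_op Q (pauli Q h) \<chi> z)"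
        by (simp add: apply_op_mmul[OF fQ] apply_eig[OF fQ \<chi>[OF s] z])
      finally show "apply_op Q (pauli Q s) \<chi>2 z = sg (symp Q s h) * e2 s * \<chi>2 z"
        by (simp add: \<chi>2_def mult.assoc)
    qed
    have "braket Q \<psi> (apply_op Q (pauli Q s) \<chi>2) = sg (symp Q s h) * e2 s * braket Q \<psi> \<chi>2"
      by (rule braket_eig_right[OF ev])
    moreover have "braket Q \<psi> (apply_op Q (pauli Q s) \<chi>2) = e1 s * braket Q \<psi> \<chi>2"
    proof -
      have "braket Q \<psi> (apply_op Q (pauli Q s) \<chi>2) = braket Q (apply_op Q (pauli Q s) \<psi>) \<chi>2"
        by (rule braket_pauli_move)
      also have "\<dots> = cnj (e1 s) * braket Q \<psi> \<chi>2" by (rule braket_eig_left[OF \<psi>[OF s]])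
      finally show ?thesis using e1[OF s] by auto
    qed
    ultimately have "sg (symp Q s h) * e2 s = e1 s" using bnz by simp
    then show ?thesis using ev by simp
  qed
  have "braket Q \<chi>2 \<chi>2 = braket Q \<chi> \<chi>"
    unfolding \<chi>2_def by (rule braket_unitary[OF fQ pauli_unitary[OF fQ]])
  then have "unit_state Q \<chi>2" using u\<chi> by (simp add: unit_state_iff)
  then show ?thesis using h(1) eig by (auto simp: \<chi>2_def)
qed


section \<open>Counting and nondegeneracy\<close>

definition perpQ :: "nat set \<Rightarrow> pauli_vec set \<Rightarrow> pauli_vec set" where
  "perpQ Q V = {h \<in> Gset Q. \<forall>v\<in>V. \<not> symp Q v h}"

lemma sg1_sum: "(\<Sum>p\<in>UNIV. sg (ac1 q p)) = (if q = (False,False) then 4 else 0)"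
  unfolding sum_UNIV_pair using bp_cases[of q] by (elim disjE; simp add: sg_def ac1_def)

lemma card_Gset: "finite Q \<Longrightarrow> card (Gset Q) = 4 ^ card Q"
proof -
  assume fQ: "finite Q"
  have "(\<Sum>f\<in>Gset Q. \<Prod>j\<in>Q. (1::nat)) = (\<Prod>j\<in>Q. \<Sum>p\<in>(UNIV :: (bool\<times>bool) set). (1::nat))"
    by (rule sum_Gset_prod[OF fQ])
  then show ?thesis by (simp add: UNIV_bool_pair eval_nat_numeral)
qed

lemma char_sum_h:
  assumes fQ: "finite Q" and v: "v \<in> Gset Q"
  shows "(\<Sum>h\<in>Gset Q. sg (symp Q v h)) = (if v = gzero then 4 ^ card Q else 0)"
proof -
  have "(\<Sum>h\<in>Gset Q. sg (symp Q v h)) = (\<Sum>h\<in>Gset Q. \<Prod>j\<in>Q. sg (ac1 (v j) (h j)))"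
    by (simp add: sg_symp[OF fQ])
  also have "\<dots> = (\<Prod>j\<in>Q. \<Sum>p\<in>UNIV. sg (ac1 (v j) p))"
    by (rule sum_Gset_prod[OF fQ])
  also have "\<dots> = (\<Prod>j\<in>Q. if v j = (False,False) then 4 else 0)"
    by (simp add: sg1_sum)
  also have "\<dots> = (if \<forall>j\<in>Q. v j = (False,False) then 4 ^ card Q else 0)"
    using fQ by (simp add: prod_zero_iff)
  also have "(\<forall>j\<in>Q. v j = (False,False)) \<longleftrightarrow> v = gzero"
    using v by (auto simp: Gset_def gzero_def fun_eq_iff)
  finally show ?thesis .
qed

lemma char_sum_v:
  assumes fQ: "finite Q" and V: "closed_sub V" "V \<subseteq> Gset Q" and h: "h \<in> Gset Q"
  shows "(\<Sum>v\<in>V. sg (symp Q v h)) = (if h \<in> perpQ Q V then of_nat (card V) else 0)"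
proof (cases "h \<in> perpQ Q V")
  case True
  then have "\<And>v. v \<in> V \<Longrightarrow> sg (symp Q v h) = 1" by (simp add: perpQ_def sg_def)
  then show ?thesis using True by simp
next
  case False
  then obtain v0 where v0: "v0 \<in> V" "symp Q v0 h" using h by (auto simp: perpQ_def)
  have fV: "finite V" using V(2) finite_Gset[OF fQ] finite_subset by blast
  have Vc: "\<And>v w. v \<in> V \<Longrightarrow> w \<in> V \<Longrightarrow> gadd v w \<in> V" using V(1) by (simp add: closed_sub_def)
  have "(\<Sum>v\<in>V. sg (symp Q v h)) = (\<Sum>v\<in>V. sg (symp Q (gadd v v0) h))"
    by (rule sum.reindex_bij_witness[where i = "\<lambda>v. gadd v v0" and j = "\<lambda>v. gadd v v0"])
       (auto simp: Vc v0)
  also have "\<dots> = - (\<Sum>v\<in>V. sg (symp Q v h))"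
  proof -
    have "\<And>v. sg (symp Q (gadd v v0) h) = - sg (symp Q v h)"
      using v0(2) by (simp add: symp_gadd_left[OF fQ] sg_def)
    then show ?thesis by (simp add: sum_negf)
  qed
  finally have "(\<Sum>v\<in>V. sg (symp Q v h)) = 0" by simp
  then show ?thesis using False by simp
qed

lemma card_perp:
  assumes fQ: "finite Q" and V: "closed_sub V" "V \<subseteq> Gset Q"
  shows "card V * card (perpQ Q V) = 4 ^ card Q"
proof -
  have fG: "finite (Gset Q)" using finite_Gset[OF fQ] .
  have fV: "finite V" using V(2) fG finite_subset by blast
  have z: "gzero \<in> V" using V(1) by (simp add: closed_sub_def)
  have "(\<Sum>v\<in>V. \<Sum>h\<in>Gset Q. sg (symp Q v h)) = (\<Sum>v\<in>V. if v = gzero then 4 ^ card Q else 0)"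
    by (rule sum.cong[OF refl]) (use V(2) char_sum_h[OF fQ] in blast)
  also have "\<dots> = 4 ^ card Q" using fV z by simp
  finally have A: "(\<Sum>v\<in>V. \<Sum>h\<in>Gset Q. sg (symp Q v h)) = 4 ^ card Q" .
  have "(\<Sum>h\<in>Gset Q. \<Sum>v\<in>V. sg (symp Q v h)) = (\<Sum>h\<in>Gset Q. if h \<in> perpQ Q V then of_nat (card V) else 0)"
    by (rule sum.cong[OF refl]) (rule char_sum_v[OF fQ V])
  also have "\<dots> = of_nat (card V) * of_nat (card (perpQ Q V))"
  proof -
    have "perpQ Q V \<subseteq> Gset Q" by (auto simp: perpQ_def)
    then have "Gset Q \<inter> perpQ Q V = perpQ Q V" by blast
    then show ?thesis using fG by (simp add: sum.If_cases)
  qed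
  finally have B: "(\<Sum>h\<in>Gset Q. \<Sum>v\<in>V. sg (symp Q v h)) = of_nat (card V) * of_nat (card (perpQ Q V))" .
  have "(of_nat (card V * card (perpQ Q V)) :: complex) = of_nat (4 ^ card Q)"
  proof -
    have "(\<Sum>v\<in>V. \<Sum>h\<in>Gset Q. sg (symp Q v h)) = (\<Sum>h\<in>Gset Q. \<Sum>v\<in>V. sg (symp Q v h))"
      by (rule sum.swap)
    then show ?thesis using A B by simp
  qed
  then show ?thesis using of_nat_eq_iff by blast
qed

lemma nondegenerate:
  assumes fQ: "finite Q" and h: "h \<in> Gset Q" and all: "\<And>g. g \<in> Gset Q \<Longrightarrow> \<not> symp Q h g"
  shows "h = gzero"
proof (rule ccontr)
  assume "h \<noteq> gzero"
  then have "(\<Sum>g\<in>Gset Q. sg (symp Q h g)) = 0" using char_sum_h[OF fQ h] by simp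
  moreover have "(\<Sum>g\<in>Gset Q. sg (symp Q h g)) = of_nat (card (Gset Q))"
    using all by (simp add: sg_def)
  moreover have "card (Gset Q) > 0" using finite_Gset[OF fQ] Gset_gzero card_gt_0_iff by blast
  ultimately show False by simp
qed

lemma full_from_perp:
  assumes fQ: "finite Q" and V: "closed_sub V" "V \<subseteq> Gset Q" and p: "perpQ Q V \<subseteq> {gzero}"
  shows "V = Gset Q"
proof -
  have "perpQ Q V = {gzero}" using p by (auto simp: perpQ_def)
  then have "card V = 4 ^ card Q" using card_perp[OF fQ V] by simp
  then have "card V = card (Gset Q)" using card_Gset[OF fQ] by simp
  then show ?thesis using V(2) finite_Gset[OF fQ] by (simp add: card_subset_eq)
qed


lemma basis_nonempty: "(\<lambda>j. False) \<in> basis Q"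
  by (simp add: basis_def)

lemma card_basis_pos: "finite Q \<Longrightarrow> card (basis Q) > 0"
  using finite_basis basis_nonempty card_gt_0_iff by blast

lemma pauli_ident:
  assumes fQ: "finite Q" and a: "a \<in> Gset Q" and b: "b \<in> Gset Q" and c: "c \<noteq> 0"
    and eq: "op_eq Q (pauli Q a) (smul c (pauli Q b))"
  shows "a = b"
proof -
  have fb: "finite (basis Q)" using fQ finite_basis by blast
  have "(\<Sum>x\<in>basis Q. mmul Q (pauli Q a) (pauli Q b) x x) = ph Q a b * (\<Sum>x\<in>basis Q. pauli Q (gadd a b) x x)"
    by (simp add: pauli_mult[OF fQ] sum_distrib_left)
  also have "\<dots> = ph Q a b * (if \<forall>j\<in>Q. gadd a b j = (False,False) then 2 ^ card Q else 0)"
    by (simp add: pauli_trace[OF fQ])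
  finally have T1: "(\<Sum>x\<in>basis Q. mmul Q (pauli Q a) (pauli Q b) x x) = ph Q a b * (if \<forall>j\<in>Q. gadd a b j = (False,False) then 2 ^ card Q else 0)" .
  have "(\<Sum>x\<in>basis Q. mmul Q (pauli Q a) (pauli Q b) x x) = (\<Sum>x\<in>basis Q. c)"
  proof (rule sum.cong[OF refl])
    fix x assume x: "x \<in> basis Q"
    have "mmul Q (pauli Q a) (pauli Q b) x x = mmul Q (smul c (pauli Q b)) (pauli Q b) x x"
      using mmul_cong[OF eq op_eq_refl] x by (simp add: op_eq_def)
    also have "\<dots> = c * (ph Q b b * pauli Q (gadd b b) x x)"
      by (simp add: smul_mmul_left smul_def pauli_mult[OF fQ])
    also have "\<dots> = c" using pauli_zero_basis[OF fQ x x] by simp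
    finally show "mmul Q (pauli Q a) (pauli Q b) x x = c" .
  qed
  also have "\<dots> = of_nat (card (basis Q)) * c" by simp
  finally have "ph Q a b * (if \<forall>j\<in>Q. gadd a b j = (False,False) then 2 ^ card Q else 0) = of_nat (card (basis Q)) * c"
    using T1 by simp
  moreover have "of_nat (card (basis Q)) * c \<noteq> 0" using c card_basis_pos[OF fQ] by simp
  ultimately have "\<forall>j\<in>Q. gadd a b j = (False,False)" by (auto split: if_splits)
  then show "a = b" using a b by (auto simp: Gset_def gadd_def fun_eq_iff prod_eq_iff)
qed

definition conjU :: "nat set \<Rightarrow> op \<Rightarrow> op \<Rightarrow> op" where
  "conjU Q U A = mmul Q (mmul Q U A) (adj U)"

lemma conjU_smul: "conjU Q U (smul c A) = smul c (conjU Q U A)"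
  by (simp add: conjU_def smul_mmul_left smul_mmul_right)

lemma conjU_cong: "op_eq Q A B \<Longrightarrow> op_eq Q (conjU Q U A) (conjU Q U B)"
  by (simp add: conjU_def mmul_cong)

lemma conjU_mult:
  assumes fQ: "finite Q" and U: "op_eq Q (mmul Q (adj U) U) idop"
  shows "op_eq Q (mmul Q (conjU Q U A) (conjU Q U B)) (conjU Q U (mmul Q A B))"
proof -
  have "op_eq Q (mmul Q (conjU Q U A) (conjU Q U B)) (mmul Q (mmul Q U A) (mmul Q (adj U) (conjU Q U B)))"
    unfolding conjU_def[of Q U A] by (rule mmul_assoc_eq[OF fQ])
  also have "op_eq Q (mmul Q (adj U) (conjU Q U B)) (mmul Q B (adj U))"
  proof -
    have "op_eq Q (mmul Q (adj U) (conjU Q U B)) (mmul Q (mmul Q (adj U) (mmul Q U B)) (adj U))"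
      unfolding conjU_def using mmul_assoc_eq[OF fQ] op_eq_sym by blast
    also have "op_eq Q \<dots> (mmul Q (mmul Q (mmul Q (adj U) U) B) (adj U))"
      using mmul_cong[OF op_eq_sym[OF mmul_assoc_eq[OF fQ]] op_eq_refl] .
    also have "op_eq Q \<dots> (mmul Q (mmul Q idop B) (adj U))"
      using mmul_cong[OF mmul_cong[OF U op_eq_refl] op_eq_refl] .
    also have "op_eq Q \<dots> (mmul Q B (adj U))"
      using mmul_cong[OF mmul_id_left_eq[OF fQ] op_eq_refl] .
    finally show ?thesis .
  qed
  then have "op_eq Q (mmul Q (mmul Q U A) (mmul Q (adj U) (conjU Q U B))) (mmul Q (mmul Q U A) (mmul Q B (adj U)))"
    using mmul_cong[OF op_eq_refl] by blast
  finally have "op_eq Q (mmul Q (conjU Q U A) (conjU Q U B)) (mmul Q (mmul Q U A) (mmul Q B (adj U)))" .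
  also have "op_eq Q \<dots> (mmul Q (mmul Q (mmul Q U A) B) (adj U))"
    using mmul_assoc_eq[OF fQ] op_eq_sym by blast
  also have "op_eq Q \<dots> (conjU Q U (mmul Q A B))"
    unfolding conjU_def using mmul_cong[OF mmul_assoc_eq[OF fQ] op_eq_refl] .
  finally show ?thesis .
qed

lemma unconjU:
  assumes fQ: "finite Q" and U: "op_eq Q (mmul Q (adj U) U) idop"
  shows "op_eq Q (mmul Q (mmul Q (adj U) (conjU Q U A)) U) A"
proof -
  have "op_eq Q (mmul Q (adj U) (conjU Q U A)) (mmul Q A (adj U))"
  proof -
    have "op_eq Q (mmul Q (adj U) (conjU Q U A)) (mmul Q (mmul Q (adj U) (mmul Q U A)) (adj U))"
      unfolding conjU_def using mmul_assoc_eq[OF fQ] op_eq_sym by blast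
    also have "op_eq Q \<dots> (mmul Q (mmul Q (mmul Q (adj U) U) A) (adj U))"
      using mmul_cong[OF op_eq_sym[OF mmul_assoc_eq[OF fQ]] op_eq_refl] .
    also have "op_eq Q \<dots> (mmul Q (mmul Q idop A) (adj U))"
      using mmul_cong[OF mmul_cong[OF U op_eq_refl] op_eq_refl] .
    also have "op_eq Q \<dots> (mmul Q A (adj U))"
      using mmul_cong[OF mmul_id_left_eq[OF fQ] op_eq_refl] .
    finally show ?thesis .
  qed
  then have "op_eq Q (mmul Q (mmul Q (adj U) (conjU Q U A)) U) (mmul Q (mmul Q A (adj U)) U)"
    using mmul_cong[OF _ op_eq_refl] by blast
  also have "op_eq Q \<dots> (mmul Q A (mmul Q (adj U) U))" by (rule mmul_assoc_eq[OF fQ])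
  also have "op_eq Q \<dots> (mmul Q A idop)" using mmul_cong[OF op_eq_refl U] .
  also have "op_eq Q \<dots> A" by (rule mmul_id_right_eq[OF fQ])
  finally show ?thesis .
qed

lemma pauli_nonzero_entry:
  assumes fQ: "finite Q"
  shows "\<exists>x\<in>basis Q. \<exists>y\<in>basis Q. pauli Q f x y \<noteq> 0"
proof (rule ccontr)
  assume "\<not> ?thesis"
  then have z: "\<And>x y. x \<in> basis Q \<Longrightarrow> y \<in> basis Q \<Longrightarrow> pauli Q f x y = 0" by blast
  have "mmul Q (pauli Q f) (pauli Q f) (\<lambda>j. False) (\<lambda>j. False) = idop (\<lambda>j. False) (\<lambda>j. False)"
    using pauli_sq_eq[OF fQ] basis_nonempty by (simp add: op_eq_def)
  moreover have "mmul Q (pauli Q f) (pauli Q f) (\<lambda>j. False) (\<lambda>j. False) = 0"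
    unfolding mmul_def using z basis_nonempty by simp
  ultimately show False by (simp add: idop_def)
qed

lemma clifford_map_props:
  assumes fQ: "finite Q" and U: "unitary Q U"
    and uG: "\<And>f. f \<in> Gset Q \<Longrightarrow> u f \<in> Gset Q"
    and s: "\<And>f. f \<in> Gset Q \<Longrightarrow> s f = 1 \<or> s f = -1"
    and cj: "\<And>f. f \<in> Gset Q \<Longrightarrow> op_eq Q (conjU Q U (pauli Q f)) (smul (s f) (pauli Q (u f)))"
  shows "\<And>f g. f \<in> Gset Q \<Longrightarrow> g \<in> Gset Q \<Longrightarrow> u (gadd f g) = gadd (u f) (u g)"
    and "\<And>f g. f \<in> Gset Q \<Longrightarrow> g \<in> Gset Q \<Longrightarrow> symp Q (u f) (u g) = symp Q f g"
    and "inj_on u (Gset Q)"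
proof -
  have UU: "op_eq Q (mmul Q (adj U) U) idop" using U by (simp add: unitary_iff)
  have snz: "\<And>f. f \<in> Gset Q \<Longrightarrow> s f \<noteq> 0" using s by fastforce
  have ssq: "\<And>f. f \<in> Gset Q \<Longrightarrow> s f * s f = 1" using s by fastforce
  have prod: "op_eq Q (conjU Q U (mmul Q (pauli Q f) (pauli Q g))) (smul (s f * s g) (mmul Q (pauli Q (u f)) (pauli Q (u g))))"
    if f: "f \<in> Gset Q" and g: "g \<in> Gset Q" for f g
  proof -
    have "op_eq Q (conjU Q U (mmul Q (pauli Q f) (pauli Q g))) (mmul Q (conjU Q U (pauli Q f)) (conjU Q U (pauli Q g)))"
      using conjU_mult[OF fQ UU] op_eq_sym by blast
    also have "op_eq Q \<dots> (mmul Q (smul (s f) (pauli Q (u f))) (smul (s g) (pauli Q (u g))))"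
      by (rule mmul_cong[OF cj[OF f] cj[OF g]])
    also have "mmul Q (smul (s f) (pauli Q (u f))) (smul (s g) (pauli Q (u g))) = smul (s f * s g) (mmul Q (pauli Q (u f)) (pauli Q (u g)))"
      by (simp add: smul_mmul_left smul_mmul_right smul_smul mult.commute)
    finally show ?thesis .
  qed
  show add: "u (gadd f g) = gadd (u f) (u g)" if f: "f \<in> Gset Q" and g: "g \<in> Gset Q" for f g
  proof -
    have fg: "gadd f g \<in> Gset Q" using f g Gset_gadd by blast
    have "op_eq Q (smul (ph Q f g) (conjU Q U (pauli Q (gadd f g)))) (smul (s f * s g) (smul (ph Q (u f) (u g)) (pauli Q (gadd (u f) (u g)))))"
      using prod[OF f g] by (simp add: pauli_mult_eq[OF fQ] conjU_smul)
    moreover have "op_eq Q (smul (ph Q f g) (conjU Q U (pauli Q (gadd f g)))) (smul (ph Q f g) (smul (s (gadd f g)) (pauli Q (u (gadd f g)))))"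
      by (rule smul_cong[OF cj[OF fg]])
    ultimately have "op_eq Q (smul (s f * s g * ph Q (u f) (u g)) (pauli Q (gadd (u f) (u g)))) (smul (ph Q f g * s (gadd f g)) (pauli Q (u (gadd f g))))"
      by (simp add: smul_smul) (meson op_eq_sym op_eq_trans)
    then have "op_eq Q (pauli Q (gadd (u f) (u g))) (smul ((ph Q f g * s (gadd f g)) / (s f * s g * ph Q (u f) (u g))) (pauli Q (u (gadd f g))))"
      using snz[OF f] snz[OF g]
      by (auto simp: op_eq_def smul_def field_simps)
    moreover have "(ph Q f g * s (gadd f g)) / (s f * s g * ph Q (u f) (u g)) \<noteq> 0"
      using snz[OF f] snz[OF g] snz[OF fg] by simp
    ultimately show ?thesis
      using pauli_ident[OF fQ Gset_gadd[OF uG[OF f] uG[OF g]] uG[OF fg]] by metis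
  qed
  show "symp Q (u f) (u g) = symp Q f g" if f: "f \<in> Gset Q" and g: "g \<in> Gset Q" for f g
  proof -
    have "op_eq Q (smul (s f * s g) (mmul Q (pauli Q (u f)) (pauli Q (u g)))) (conjU Q U (mmul Q (pauli Q f) (pauli Q g)))"
      using prod[OF f g] op_eq_sym by blast
    also have "conjU Q U (mmul Q (pauli Q f) (pauli Q g)) = smul (sg (symp Q f g)) (conjU Q U (mmul Q (pauli Q g) (pauli Q f)))"
    proof -
      have "mmul Q (pauli Q f) (pauli Q g) = smul (sg (symp Q f g)) (mmul Q (pauli Q g) (pauli Q f))"
        by (simp add: fun_eq_iff smul_def pauli_comm_pw[OF fQ, of f g])
      then show ?thesis by (simp add: conjU_smul)
    qed
    also have "op_eq Q \<dots> (smul (sg (symp Q f g)) (smul (s g * s f) (mmul Q (pauli Q (u g)) (pauli Q (u f)))))"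
      by (rule smul_cong[OF prod[OF g f]])
    finally have E: "op_eq Q (smul (s f * s g) (mmul Q (pauli Q (u f)) (pauli Q (u g))))
        (smul (sg (symp Q f g) * (s g * s f)) (mmul Q (pauli Q (u g)) (pauli Q (u f))))"
      by (simp add: smul_smul)
    have M: "mmul Q (pauli Q (u f)) (pauli Q (u g)) = smul (sg (symp Q (u f) (u g))) (mmul Q (pauli Q (u g)) (pauli Q (u f)))"
      by (simp add: fun_eq_iff smul_def pauli_comm_pw[OF fQ, of "u f" "u g"])
    obtain x y where xy: "x \<in> basis Q" "y \<in> basis Q" "pauli Q (gadd (u g) (u f)) x y \<noteq> 0"
      using pauli_nonzero_entry[OF fQ] by blast
    have "s f * s g * (sg (symp Q (u f) (u g)) * mmul Q (pauli Q (u g)) (pauli Q (u f)) x y)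
        = sg (symp Q f g) * (s g * s f) * mmul Q (pauli Q (u g)) (pauli Q (u f)) x y"
      using op_eq_D[OF E xy(1,2)] M by (simp add: smul_def)
    moreover have "mmul Q (pauli Q (u g)) (pauli Q (u f)) x y \<noteq> 0"
      using xy(3) by (simp add: pauli_mult[OF fQ])
    ultimately have "sg (symp Q (u f) (u g)) = sg (symp Q f g)"
      using snz[OF f] snz[OF g] by (simp add: mult_ac)
    then show ?thesis by (simp add: sg_inj)
  qed
  show "inj_on u (Gset Q)"
  proof (rule inj_onI)
    fix f g assume f: "f \<in> Gset Q" and g: "g \<in> Gset Q" and e: "u f = u g"
    have A: "op_eq Q (pauli Q f) (mmul Q (mmul Q (adj U) (smul (s f) (pauli Q (u f)))) U)"
      using op_eq_trans[OF op_eq_sym[OF unconjU[OF fQ UU, of "pauli Q f"]]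
            mmul_cong[OF mmul_cong[OF op_eq_refl cj[OF f]] op_eq_refl]] .
    have B: "op_eq Q (pauli Q g) (mmul Q (mmul Q (adj U) (smul (s g) (pauli Q (u f)))) U)"
      using op_eq_trans[OF op_eq_sym[OF unconjU[OF fQ UU, of "pauli Q g"]]
            mmul_cong[OF mmul_cong[OF op_eq_refl cj[OF g]] op_eq_refl]] e by simp
    define X where "X = mmul Q (mmul Q (adj U) (pauli Q (u f))) U"
    have A': "op_eq Q (pauli Q f) (smul (s f) X)"
      using A by (simp add: X_def smul_mmul_left smul_mmul_right)
    have B': "op_eq Q (pauli Q g) (smul (s g) X)"
      using B by (simp add: X_def smul_mmul_left smul_mmul_right)
    have X: "op_eq Q X (smul (s g) (pauli Q g))"
      using smul_cong[OF B', of "s g"] ssq[OF g] by (simp add: smul_smul op_eq_sym)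
    have "op_eq Q (pauli Q f) (smul (s f) (smul (s g) (pauli Q g)))"
      using op_eq_trans[OF A' smul_cong[OF X]] .
    then have "op_eq Q (pauli Q f) (smul (s f * s g) (pauli Q g))"
      by (simp add: smul_smul)
    moreover have "s f * s g \<noteq> 0" using snz[OF f] snz[OF g] by simp
    ultimately show "f = g" using pauli_ident[OF fQ f g] by blast
  qed
qed


section \<open>Tensor products over the parties\<close>

lemma restr_basis[simp]: "restr Q x \<in> basis Q"
  by (simp add: restr_def basis_def)

lemma restr_restr: "A \<subseteq> B \<Longrightarrow> restr A (restr B z) = restr A z"
  by (auto simp: restr_def fun_eq_iff)

lemma restr_basis_id: "z \<in> basis Q \<Longrightarrow> restr Q z = z"
  by (auto simp: restr_def basis_def fun_eq_iff)

lemma sum_basis_blocks: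
  fixes F :: "'p \<Rightarrow> bits \<Rightarrow> complex"
  assumes "finite M" "\<forall>\<alpha>\<in>M. finite (Qs \<alpha>)" "\<forall>\<alpha>\<in>M. \<forall>\<beta>\<in>M. \<alpha> \<noteq> \<beta> \<longrightarrow> Qs \<alpha> \<inter> Qs \<beta> = {}"
  shows "(\<Sum>z\<in>basis (\<Union>\<alpha>\<in>M. Qs \<alpha>). \<Prod>\<alpha>\<in>M. F \<alpha> (restr (Qs \<alpha>) z)) = (\<Prod>\<alpha>\<in>M. \<Sum>w\<in>basis (Qs \<alpha>). F \<alpha> w)"
  using assms
proof (induction M rule: finite_induct)
  case empty
  have "basis {} = {\<lambda>j. False}" by (auto simp: basis_def)
  then show ?case by simp
next
  case (insert \<beta> M)
  define R where "R = (\<Union>\<alpha>\<in>M. Qs \<alpha>)"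
  have disj: "Qs \<beta> \<inter> R = {}" using insert.prems(2) insert.hyps(2) by (auto simp: R_def)
  have IH: "(\<Sum>z\<in>basis R. \<Prod>\<alpha>\<in>M. F \<alpha> (restr (Qs \<alpha>) z)) = (\<Prod>\<alpha>\<in>M. \<Sum>w\<in>basis (Qs \<alpha>). F \<alpha> w)"
    unfolding R_def using insert by auto
  have fin1: "finite (basis (Qs \<beta>))" using insert.prems(1) finite_basis by blast
  have finR: "finite R" unfolding R_def using insert by auto
  have fin2: "finite (basis R)" using finR finite_basis by blast
  have U: "(\<Union>\<alpha>\<in>insert \<beta> M. Qs \<alpha>) = Qs \<beta> \<union> R" by (simp add: R_def)
  have "(\<Sum>z\<in>basis (Qs \<beta> \<union> R). \<Prod>\<alpha>\<in>insert \<beta> M. F \<alpha> (restr (Qs \<alpha>) z))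
      = (\<Sum>p\<in>basis (Qs \<beta>) \<times> basis R. F \<beta> (fst p) * (\<Prod>\<alpha>\<in>M. F \<alpha> (restr (Qs \<alpha>) (snd p))))"
  proof (rule sum.reindex_bij_witness[where i = "\<lambda>p k. fst p k \<or> snd p k" and j = "\<lambda>z. (restr (Qs \<beta>) z, restr R z)"])
    fix z assume z: "z \<in> basis (Qs \<beta> \<union> R)"
    show "(\<lambda>k. fst (restr (Qs \<beta>) z, restr R z) k \<or> snd (restr (Qs \<beta>) z, restr R z) k) = z"
      using z by (auto simp: restr_def basis_def fun_eq_iff)
    show "(restr (Qs \<beta>) z, restr R z) \<in> basis (Qs \<beta>) \<times> basis R" by simp
    have "\<And>\<alpha>. \<alpha> \<in> M \<Longrightarrow> restr (Qs \<alpha>) (restr R z) = restr (Qs \<alpha>) z"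
      by (rule restr_restr) (auto simp: R_def)
    then show "F \<beta> (fst (restr (Qs \<beta>) z, restr R z)) * (\<Prod>\<alpha>\<in>M. F \<alpha> (restr (Qs \<alpha>) (snd (restr (Qs \<beta>) z, restr R z))))
        = (\<Prod>\<alpha>\<in>insert \<beta> M. F \<alpha> (restr (Qs \<alpha>) z))"
      using insert.hyps by simp
  next
    fix p assume p: "p \<in> basis (Qs \<beta>) \<times> basis R"
    show "(restr (Qs \<beta>) (\<lambda>k. fst p k \<or> snd p k), restr R (\<lambda>k. fst p k \<or> snd p k)) = p"
      using p disj by (cases p) (auto simp: restr_def basis_def fun_eq_iff)
    show "(\<lambda>k. fst p k \<or> snd p k) \<in> basis (Qs \<beta> \<union> R)"
      using p by (auto simp: basis_def)
  qed
  also have "\<dots> = (\<Sum>w\<in>basis (Qs \<beta>). F \<beta> w) * (\<Sum>z\<in>basis R. \<Prod>\<alpha>\<in>M. F \<alpha> (restr (Qs \<alpha>) z))"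
    by (simp add: sum_product sum.cartesian_product case_prod_beta')
  finally show ?case using IH U insert.hyps by simp
qed

lemma qubits_finite: "finite (qubits n part \<alpha>)"
  by (simp add: qubits_def)

lemma qubits_sub: "qubits n part \<alpha> \<subseteq> {..<n}"
  by (auto simp: qubits_def)

lemma qubits_disj: "\<alpha> \<noteq> \<beta> \<Longrightarrow> qubits n part \<alpha> \<inter> qubits n part \<beta> = {}"
  by (auto simp: qubits_def)

lemma qubits_Union: "\<forall>j<n. part j \<in> M \<Longrightarrow> (\<Union>\<alpha>\<in>M. qubits n part \<alpha>) = {..<n}"
  by (auto simp: qubits_def)

lemma tensor_mmul:
  assumes M: "finite M" and P: "\<forall>j<n. part j \<in> M"
  shows "mmul {..<n} (tensor_op n part M A) (tensor_op n part M B)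
       = tensor_op n part M (\<lambda>\<alpha>. mmul (qubits n part \<alpha>) (A \<alpha>) (B \<alpha>))"
proof (rule ext, rule ext)
  fix x y
  have "mmul {..<n} (tensor_op n part M A) (tensor_op n part M B) x y
      = (\<Sum>z\<in>basis (\<Union>\<alpha>\<in>M. qubits n part \<alpha>). \<Prod>\<alpha>\<in>M. A \<alpha> (restr (qubits n part \<alpha>) x) (restr (qubits n part \<alpha>) z)
             * B \<alpha> (restr (qubits n part \<alpha>) z) (restr (qubits n part \<alpha>) y))"
    by (simp add: mmul_def tensor_op_def qubits_Union[OF P] prod.distrib)
  also have "\<dots> = (\<Prod>\<alpha>\<in>M. \<Sum>w\<in>basis (qubits n part \<alpha>). A \<alpha> (restr (qubits n part \<alpha>) x) w * B \<alpha> w (restr (qubits n part \<alpha>) y))"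
    by (rule sum_basis_blocks[OF M]) (auto simp: qubits_finite qubits_disj)
  also have "\<dots> = tensor_op n part M (\<lambda>\<alpha>. mmul (qubits n part \<alpha>) (A \<alpha>) (B \<alpha>)) x y"
    by (simp add: tensor_op_def mmul_def)
  finally show "mmul {..<n} (tensor_op n part M A) (tensor_op n part M B) x y
      = tensor_op n part M (\<lambda>\<alpha>. mmul (qubits n part \<alpha>) (A \<alpha>) (B \<alpha>)) x y" .
qed

lemma tensor_adj: "adj (tensor_op n part M A) = tensor_op n part M (\<lambda>\<alpha>. adj (A \<alpha>))"
  by (simp add: fun_eq_iff adj_def tensor_op_def)

lemma tensor_smul: "tensor_op n part M (\<lambda>\<alpha>. smul (c \<alpha>) (A \<alpha>)) = smul (\<Prod>\<alpha>\<in>M. c \<alpha>) (tensor_op n part M A)"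
  by (simp add: fun_eq_iff smul_def tensor_op_def prod.distrib)

lemma tensor_cong: "(\<And>\<alpha>. \<alpha> \<in> M \<Longrightarrow> op_eq (qubits n part \<alpha>) (A \<alpha>) (B \<alpha>)) \<Longrightarrow> tensor_op n part M A = tensor_op n part M B"
  by (auto simp: fun_eq_iff tensor_op_def op_eq_def intro!: prod.cong)

lemma tensor_pauli:
  assumes M: "finite M" and P: "\<forall>j<n. part j \<in> M"
  shows "pauli {..<n} f = tensor_op n part M (\<lambda>\<alpha>. pauli (qubits n part \<alpha>) f)"
proof (rule ext, rule ext)
  fix x y
  have "pauli {..<n} f x y = (\<Prod>j\<in>(\<Union>\<alpha>\<in>M. qubits n part \<alpha>). pauli1 (f j) (x j) (y j))"
    by (simp add: pauli_def qubits_Union[OF P])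
  also have "\<dots> = (\<Prod>\<alpha>\<in>M. \<Prod>j\<in>qubits n part \<alpha>. pauli1 (f j) (x j) (y j))"
    by (rule prod.UNION_disjoint[OF M]) (auto simp: qubits_finite qubits_disj)
  also have "\<dots> = tensor_op n part M (\<lambda>\<alpha>. pauli (qubits n part \<alpha>) f) x y"
    unfolding tensor_op_def pauli_def
    by (intro prod.cong refl) (simp add: restr_def)
  finally show "pauli {..<n} f x y = tensor_op n part M (\<lambda>\<alpha>. pauli (qubits n part \<alpha>) f) x y" .
qed

lemma tensor_idop:
  assumes M: "finite M" and P: "\<forall>j<n. part j \<in> M"
  shows "op_eq {..<n} (tensor_op n part M (\<lambda>\<alpha>. idop)) idop"
proof (rule op_eq_I)
  fix x y assume x: "x \<in> basis {..<n}" and y: "y \<in> basis {..<n}"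
  have "tensor_op n part M (\<lambda>\<alpha>. idop) x y = (if \<forall>\<alpha>\<in>M. restr (qubits n part \<alpha>) x = restr (qubits n part \<alpha>) y then 1 else 0)"
    using M by (simp add: tensor_op_def idop_def prod_zero_iff)
  also have "(\<forall>\<alpha>\<in>M. restr (qubits n part \<alpha>) x = restr (qubits n part \<alpha>) y) \<longleftrightarrow> x = y"
  proof
    assume A: "\<forall>\<alpha>\<in>M. restr (qubits n part \<alpha>) x = restr (qubits n part \<alpha>) y"
    show "x = y"
    proof
      fix j show "x j = y j"
      proof (cases "j < n")
        case True
        then have "part j \<in> M" "j \<in> qubits n part (part j)" using P by (auto simp: qubits_def)
        then show ?thesis using fun_cong[OF A[rule_format, OF \<open>part j \<in> M\<close>], of j] by (simp add: restr_def)
      next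
        case False then show ?thesis using x y by (simp add: basis_def)
      qed
    qed
  qed simp
  finally show "tensor_op n part M (\<lambda>\<alpha>. idop) x y = idop x y" by (simp add: idop_eta)
qed

lemma tensor_unitary:
  assumes M: "finite M" and P: "\<forall>j<n. part j \<in> M" and U: "\<And>\<alpha>. \<alpha> \<in> M \<Longrightarrow> unitary (qubits n part \<alpha>) (Us \<alpha>)"
  shows "unitary {..<n} (tensor_op n part M Us)"
proof -
  have "mmul {..<n} (tensor_op n part M Us) (adj (tensor_op n part M Us)) = tensor_op n part M (\<lambda>\<alpha>. idop)"
    unfolding tensor_adj tensor_mmul[OF M P]
    by (rule tensor_cong) (use U in \<open>simp add: unitary_iff\<close>)
  moreover have "mmul {..<n} (adj (tensor_op n part M Us)) (tensor_op n part M Us) = tensor_op n part M (\<lambda>\<alpha>. idop)"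
    unfolding tensor_adj tensor_mmul[OF M P]
    by (rule tensor_cong) (use U in \<open>simp add: unitary_iff\<close>)
  ultimately show ?thesis using tensor_idop[OF M P] by (simp add: unitary_iff)
qed

lemma tensor_conj:
  assumes M: "finite M" and P: "\<forall>j<n. part j \<in> M"
  shows "conjU {..<n} (tensor_op n part M Us) (tensor_op n part M A)
       = tensor_op n part M (\<lambda>\<alpha>. conjU (qubits n part \<alpha>) (Us \<alpha>) (A \<alpha>))"
  unfolding conjU_def tensor_adj tensor_mmul[OF M P] ..


definition proj :: "nat set \<Rightarrow> pauli_vec \<Rightarrow> pauli_vec" where
  "proj R f = (\<lambda>j. if j \<in> R then f j else (False, False))"

lemma proj_Gset[simp]: "proj R f \<in> Gset R"
  by (simp add: proj_def Gset_def)

lemma proj_gadd: "proj R (gadd f g) = gadd (proj R f) (proj R g)"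
  by (auto simp: proj_def gadd_def fun_eq_iff)

lemma pauli_proj: "pauli R (proj R f) = pauli R f"
  by (simp add: pauli_def proj_def fun_eq_iff)

lemma symp_proj: "symp R (proj R f) (proj R g) = symp R f g"
proof -
  have "{j \<in> R. (fst (proj R f j) \<and> snd (proj R g j)) \<noteq> (snd (proj R f j) \<and> fst (proj R g j))}
      = {j \<in> R. (fst (f j) \<and> snd (g j)) \<noteq> (snd (f j) \<and> fst (g j))}"
    by (auto simp: proj_def)
  then show ?thesis by (simp only: symp_def)
qed

lemma symp_proj_left: "symp R (proj R f) g = symp R f g"
proof -
  have "{j \<in> R. (fst (proj R f j) \<and> snd (g j)) \<noteq> (snd (proj R f j) \<and> fst (g j))}
      = {j \<in> R. (fst (f j) \<and> snd (g j)) \<noteq> (snd (f j) \<and> fst (g j))}"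
    by (auto simp: proj_def)
  then show ?thesis by (simp only: symp_def)
qed

lemma proj_id: "f \<in> Gset R \<Longrightarrow> proj R f = f"
  by (auto simp: proj_def Gset_def fun_eq_iff)

lemma symp_sub:
  assumes "R \<subseteq> Q'" "h \<in> Gset R"
  shows "symp Q' h f = symp R h f"
proof -
  have "{j \<in> Q'. (fst (h j) \<and> snd (f j)) \<noteq> (snd (h j) \<and> fst (f j))} = {j \<in> R. (fst (h j) \<and> snd (f j)) \<noteq> (snd (h j) \<and> fst (f j))}"
    using assms by (auto simp: Gset_def)
  then show ?thesis by (simp add: symp_def)
qed

lemma symp_zero_on: "(\<forall>j\<in>R. d j = (False, False)) \<Longrightarrow> symp R d g = False"
proof -
  assume "\<forall>j\<in>R. d j = (False, False)"
  then have "{j \<in> R. (fst (d j) \<and> snd (g j)) \<noteq> (snd (d j) \<and> fst (g j))} = {}" by auto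
  then show ?thesis by (simp only: symp_def) simp
qed

lemma Gset_mono: "R \<subseteq> Q' \<Longrightarrow> f \<in> Gset R \<Longrightarrow> f \<in> Gset Q'"
  by (auto simp: Gset_def)

lemma smul_eta: "smul c A = (\<lambda>x y. c * A x y)"
  by (simp add: fun_eq_iff smul_def)

lemma clifford_obtain:
  assumes "clifford Q U"
  shows "\<exists>u s. unitary Q U \<and> (\<forall>f\<in>Gset Q. u f \<in> Gset Q \<and> (s f = 1 \<or> s f = -1) \<and>
           op_eq Q (conjU Q U (pauli Q f)) (smul (s f) (pauli Q (u f))))"
proof -
  obtain u where u: "\<forall>f\<in>Gset Q. u f \<in> Gset Q \<and> (\<exists>s::complex. (s = 1 \<or> s = -1) \<and>
        op_eq Q (mmul Q (mmul Q U (pauli Q f)) (adj U)) (\<lambda>x y. s * pauli Q (u f) x y))"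
    and U: "unitary Q U" using assms by (auto simp: clifford_def)
  then have "\<forall>f\<in>Gset Q. \<exists>s::complex. (s = 1 \<or> s = -1) \<and>
        op_eq Q (conjU Q U (pauli Q f)) (smul s (pauli Q (u f)))"
    by (simp add: conjU_def smul_eta)
  then have "\<exists>s. \<forall>f\<in>Gset Q. (s f = 1 \<or> s f = -1) \<and> op_eq Q (conjU Q U (pauli Q f)) (smul (s f) (pauli Q (u f)))"
    by (rule bchoice)
  then obtain s where "\<forall>f\<in>Gset Q. (s f = 1 \<or> s f = -1) \<and> op_eq Q (conjU Q U (pauli Q f)) (smul (s f) (pauli Q (u f)))"
    by blast
  then show ?thesis using u U by blast
qed

lemma clifford_intro:
  assumes "unitary Q U"
    and "\<And>f. f \<in> Gset Q \<Longrightarrow> u f \<in> Gset Q"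
    and "\<And>f. f \<in> Gset Q \<Longrightarrow> s f = 1 \<or> s f = -1"
    and "\<And>f. f \<in> Gset Q \<Longrightarrow> op_eq Q (conjU Q U (pauli Q f)) (smul (s f) (pauli Q (u f)))"
  shows "clifford Q U"
  unfolding clifford_def
proof (intro conjI exI[of _ u] ballI)
  show "unitary Q U" by fact
next
  fix f assume f: "f \<in> Gset Q"
  show "u f \<in> Gset Q" using assms(2)[OF f] .
  show "\<exists>s::complex. (s = 1 \<or> s = -1) \<and> op_eq Q (mmul Q (mmul Q U (pauli Q f)) (adj U)) (\<lambda>x y. s * pauli Q (u f) x y)"
    using assms(3,4)[OF f] by (auto simp: conjU_def smul_eta)
qed

lemma unitary_mult:
  assumes fQ: "finite Q" and A: "unitary Q A" and B: "unitary Q B"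
  shows "unitary Q (mmul Q A B)"
proof -
  have A1: "op_eq Q (mmul Q A (adj A)) idop" and A2: "op_eq Q (mmul Q (adj A) A) idop"
    and B1: "op_eq Q (mmul Q B (adj B)) idop" and B2: "op_eq Q (mmul Q (adj B) B) idop"
    using A B by (auto simp: unitary_iff)
  have "op_eq Q (mmul Q (mmul Q A B) (adj (mmul Q A B))) (mmul Q (mmul Q A B) (mmul Q (adj B) (adj A)))"
    by (rule mmul_cong[OF op_eq_refl adj_mmul_eq])
  also have "op_eq Q \<dots> (mmul Q A (mmul Q B (mmul Q (adj B) (adj A))))" by (rule mmul_assoc_eq[OF fQ])
  also have "op_eq Q \<dots> (mmul Q A (mmul Q (mmul Q B (adj B)) (adj A)))"
    by (rule mmul_cong[OF op_eq_refl op_eq_sym[OF mmul_assoc_eq[OF fQ]]])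
  also have "op_eq Q \<dots> (mmul Q A (mmul Q idop (adj A)))"
    by (rule mmul_cong[OF op_eq_refl mmul_cong[OF B1 op_eq_refl]])
  also have "op_eq Q \<dots> (mmul Q A (adj A))"
    by (rule mmul_cong[OF op_eq_refl mmul_id_left_eq[OF fQ]])
  also have "op_eq Q \<dots> idop" by (rule A1)
  finally have C1: "op_eq Q (mmul Q (mmul Q A B) (adj (mmul Q A B))) idop" .
  have "op_eq Q (mmul Q (adj (mmul Q A B)) (mmul Q A B)) (mmul Q (mmul Q (adj B) (adj A)) (mmul Q A B))"
    by (rule mmul_cong[OF adj_mmul_eq op_eq_refl])
  also have "op_eq Q \<dots> (mmul Q (adj B) (mmul Q (adj A) (mmul Q A B)))" by (rule mmul_assoc_eq[OF fQ])
  also have "op_eq Q \<dots> (mmul Q (adj B) (mmul Q (mmul Q (adj A) A) B))"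
    by (rule mmul_cong[OF op_eq_refl op_eq_sym[OF mmul_assoc_eq[OF fQ]]])
  also have "op_eq Q \<dots> (mmul Q (adj B) (mmul Q idop B))"
    by (rule mmul_cong[OF op_eq_refl mmul_cong[OF A2 op_eq_refl]])
  also have "op_eq Q \<dots> (mmul Q (adj B) B)"
    by (rule mmul_cong[OF op_eq_refl mmul_id_left_eq[OF fQ]])
  also have "op_eq Q \<dots> idop" by (rule B2)
  finally have C2: "op_eq Q (mmul Q (adj (mmul Q A B)) (mmul Q A B)) idop" .
  show ?thesis using C1 C2 by (simp add: unitary_iff)
qed

lemma pauli_unitary2: "finite Q \<Longrightarrow> unitary Q (pauli Q h)"
  by (simp add: unitary_iff adj_pauli pauli_sq_eq)

lemma conjU_comp:
  assumes fQ: "finite Q"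
  shows "op_eq Q (conjU Q (mmul Q A B) X) (conjU Q A (conjU Q B X))"
proof -
  have "op_eq Q (conjU Q (mmul Q A B) X) (mmul Q (mmul Q (mmul Q A B) X) (mmul Q (adj B) (adj A)))"
    unfolding conjU_def by (rule mmul_cong[OF op_eq_refl adj_mmul_eq])
  also have "op_eq Q \<dots> (mmul Q (mmul Q (mmul Q (mmul Q A B) X) (adj B)) (adj A))"
    by (rule op_eq_sym[OF mmul_assoc_eq[OF fQ]])
  also have "op_eq Q \<dots> (mmul Q (mmul Q A (mmul Q (mmul Q B X) (adj B))) (adj A))"
  proof (rule mmul_cong[OF _ op_eq_refl])
    have "op_eq Q (mmul Q (mmul Q (mmul Q A B) X) (adj B)) (mmul Q (mmul Q A (mmul Q B X)) (adj B))"
      by (rule mmul_cong[OF mmul_assoc_eq[OF fQ] op_eq_refl])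
    also have "op_eq Q \<dots> (mmul Q A (mmul Q (mmul Q B X) (adj B)))" by (rule mmul_assoc_eq[OF fQ])
    finally show "op_eq Q (mmul Q (mmul Q (mmul Q A B) X) (adj B)) (mmul Q A (mmul Q (mmul Q B X) (adj B)))" .
  qed
  also have "\<dots> = conjU Q A (conjU Q B X)" by (simp only: conjU_def)
  finally show ?thesis .
qed

lemma pauli_comm_eq: assumes fQ: "finite Q"
  shows "mmul Q (pauli Q h) (pauli Q k) = smul (sg (symp Q h k)) (mmul Q (pauli Q k) (pauli Q h))"
  unfolding smul_def by (rule ext, rule ext, rule pauli_comm_pw[OF fQ])

lemma pauli_conj:
  assumes fQ: "finite Q"
  shows "op_eq Q (conjU Q (pauli Q h) (pauli Q k)) (smul (sg (symp Q h k)) (pauli Q k))"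
proof -
  have "op_eq Q (conjU Q (pauli Q h) (pauli Q k)) (smul (sg (symp Q h k)) (mmul Q (mmul Q (pauli Q k) (pauli Q h)) (pauli Q h)))"
    unfolding conjU_def adj_pauli pauli_comm_eq[OF fQ, of h k] smul_mmul_left by (rule op_eq_refl)
  also have "op_eq Q \<dots> (smul (sg (symp Q h k)) (mmul Q (pauli Q k) (mmul Q (pauli Q h) (pauli Q h))))"
    by (rule smul_cong[OF mmul_assoc_eq[OF fQ]])
  also have "op_eq Q \<dots> (smul (sg (symp Q h k)) (mmul Q (pauli Q k) idop))"
    by (rule smul_cong[OF mmul_cong[OF op_eq_refl pauli_sq_eq[OF fQ]]])
  also have "op_eq Q \<dots> (smul (sg (symp Q h k)) (pauli Q k))"
    by (rule smul_cong[OF mmul_id_right_eq[OF fQ]])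
  finally show ?thesis .
qed

lemma apply_conj_eig:
  assumes fQ: "finite Q" and UU: "op_eq Q (mmul Q (adj U) U) idop"
    and e: "eigv Q A \<psi> e" and x: "x \<in> basis Q"
  shows "apply_op Q (conjU Q U A) (apply_op Q U \<psi>) x = e * apply_op Q U \<psi> x"
proof -
  have "apply_op Q (conjU Q U A) (apply_op Q U \<psi>) x = apply_op Q (mmul Q U A) (apply_op Q (adj U) (apply_op Q U \<psi>)) x"
    by (simp add: conjU_def apply_op_mmul[OF fQ])
  also have "\<dots> = apply_op Q (mmul Q U A) \<psi> x"
  proof (rule apply_op_cong_state)
    fix y assume y: "y \<in> basis Q"
    have "apply_op Q (adj U) (apply_op Q U \<psi>) y = apply_op Q (mmul Q (adj U) U) \<psi> y"
      by (simp add: apply_op_mmul[OF fQ])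
    also have "\<dots> = apply_op Q idop \<psi> y" by (rule apply_op_cong_op[OF UU y])
    also have "\<dots> = \<psi> y" by (rule apply_op_id[OF fQ y])
    finally show "apply_op Q (adj U) (apply_op Q U \<psi>) y = \<psi> y" .
  qed
  also have "\<dots> = apply_op Q U (apply_op Q A \<psi>) x" by (simp add: apply_op_mmul[OF fQ])
  also have "\<dots> = apply_op Q U (\<lambda>y. e * \<psi> y) x"
    by (rule apply_op_cong_state) (use e in \<open>simp add: eigv_def\<close>)
  also have "\<dots> = e * apply_op Q U \<psi> x" by (rule apply_op_scale)
  finally show ?thesis .
qed

lemma stab_facts:
  assumes "stab_state n \<psi> S"
  shows "S \<subseteq> Gset {..<n}" "closed_sub S" "unit_state {..<n} \<psi>"
    "\<And>g. g \<in> Gset {..<n} \<Longrightarrow> g \<notin> S \<Longrightarrow> \<exists>s\<in>S. symp {..<n} g s"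
    "\<And>g. g \<in> Gset {..<n} \<Longrightarrow> (\<forall>s\<in>S. \<not> symp {..<n} g s) \<Longrightarrow> g \<in> S"
    "\<exists>e. \<forall>f\<in>S. (e f = 1 \<or> e f = -1) \<and> eigv {..<n} (pauli {..<n} f) \<psi> (e f)"
    "perpQ {..<n} S = S"
proof -
  have sd: "self_dual n S" and u: "unit_state {..<n} \<psi>"
    and ev: "\<forall>f\<in>S. \<exists>e::complex. (e = 1 \<or> e = -1) \<and> (\<forall>x\<in>basis {..<n}. apply_op {..<n} (pauli {..<n} f) \<psi> x = e * \<psi> x)"
    using assms by (auto simp: stab_state_def)
  show "S \<subseteq> Gset {..<n}" "closed_sub S" using sd by (auto simp: self_dual_def is_subspace_def closed_sub_def)
  show "unit_state {..<n} \<psi>" by fact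
  have p: "perp n S = S" using sd by (simp add: self_dual_def)
  show "\<exists>s\<in>S. symp {..<n} g s" if "g \<in> Gset {..<n}" "g \<notin> S" for g
    using that p by (auto simp: perp_def)
  show "g \<in> S" if "g \<in> Gset {..<n}" "\<forall>s\<in>S. \<not> symp {..<n} g s" for g
    using that p by (auto simp: perp_def)
  show "\<exists>e. \<forall>f\<in>S. (e f = 1 \<or> e f = -1) \<and> eigv {..<n} (pauli {..<n} f) \<psi> (e f)"
    using bchoice[OF ev] unfolding eigv_def by blast
  show "perpQ {..<n} S = S"
    using p by (auto simp: perp_def perpQ_def symp_comm)
qed


lemma sq1: "(x::complex) * x = 1 \<Longrightarrow> x = 1 \<or> x = -1"
proof -
  assume "x * x = 1"
  then have "(x - 1) * (x + 1) = 0" by (simp add: algebra_simps)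
  then have "x - 1 = 0 \<or> x + 1 = 0" by (simp only: mult_eq_0_iff)
  then show ?thesis by (metis eq_neg_iff_add_eq_0 eq_iff_diff_eq_0)
qed

lemma prod_pm1: "(\<And>a. a \<in> A \<Longrightarrow> s a = 1 \<or> s a = (-1::complex)) \<Longrightarrow> (\<Prod>a\<in>A. s a) = 1 \<or> (\<Prod>a\<in>A. s a) = -1"
proof -
  assume h: "\<And>a. a \<in> A \<Longrightarrow> s a = 1 \<or> s a = (-1::complex)"
  have "(\<Prod>a\<in>A. s a) * (\<Prod>a\<in>A. s a) = (\<Prod>a\<in>A. s a * s a)" by (simp add: prod.distrib)
  also have "\<dots> = 1" using h by (intro prod.neutral) fastforce
  finally show ?thesis by (rule sq1)
qed

lemma nat_sq_inj: "(a::nat) * a = b * b \<Longrightarrow> a = b"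
proof (rule ccontr)
  assume e: "a * a = b * b" and ne: "a \<noteq> b"
  show False
  proof (cases "a < b")
    case True
    then have "a * a < b * b" by (intro mult_strict_mono) auto
    then show False using e by simp
  next
    case False
    then have "b < a" using ne by simp
    then have "b * b < a * a" by (intro mult_strict_mono) auto
    then show False using e by simp
  qed
qed

lemma conj_tensor_pauli:
  assumes M: "finite M" and P: "\<forall>j<n. part j \<in> M"
    and cj: "\<And>\<alpha> g. \<alpha> \<in> M \<Longrightarrow> g \<in> Gset (qubits n part \<alpha>) \<Longrightarrow>
       op_eq (qubits n part \<alpha>) (conjU (qubits n part \<alpha>) (Us \<alpha>) (pauli (qubits n part \<alpha>) g)) (smul (s \<alpha> g) (pauli (qubits n part \<alpha>) (u \<alpha> g)))"
    and pT: "\<And>\<alpha>. \<alpha> \<in> M \<Longrightarrow> proj (qubits n part \<alpha>) Tf = u \<alpha> (proj (qubits n part \<alpha>) f)"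
  shows "conjU {..<n} (tensor_op n part M Us) (pauli {..<n} f)
       = smul (\<Prod>\<alpha>\<in>M. s \<alpha> (proj (qubits n part \<alpha>) f)) (pauli {..<n} Tf)"
proof -
  have "conjU {..<n} (tensor_op n part M Us) (pauli {..<n} f)
      = tensor_op n part M (\<lambda>\<alpha>. conjU (qubits n part \<alpha>) (Us \<alpha>) (pauli (qubits n part \<alpha>) f))"
    unfolding tensor_pauli[OF M P, of f] by (rule tensor_conj[OF M P])
  also have "\<dots> = tensor_op n part M (\<lambda>\<alpha>. smul (s \<alpha> (proj (qubits n part \<alpha>) f)) (pauli (qubits n part \<alpha>) Tf))"
  proof (rule tensor_cong)
    fix \<alpha> assume a: "\<alpha> \<in> M"
    have "pauli (qubits n part \<alpha>) Tf = pauli (qubits n part \<alpha>) (u \<alpha> (proj (qubits n part \<alpha>) f))"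
      using pT[OF a] pauli_proj[of "qubits n part \<alpha>" Tf] by simp
    moreover have A: "op_eq (qubits n part \<alpha>) (conjU (qubits n part \<alpha>) (Us \<alpha>) (pauli (qubits n part \<alpha>) (proj (qubits n part \<alpha>) f)))
        (smul (s \<alpha> (proj (qubits n part \<alpha>) f)) (pauli (qubits n part \<alpha>) (u \<alpha> (proj (qubits n part \<alpha>) f))))"
      by (rule cj[OF a proj_Gset])
    ultimately show "op_eq (qubits n part \<alpha>) (conjU (qubits n part \<alpha>) (Us \<alpha>) (pauli (qubits n part \<alpha>) f))
        (smul (s \<alpha> (proj (qubits n part \<alpha>) f)) (pauli (qubits n part \<alpha>) Tf))"
      by (simp only: pauli_proj)
  qed
  also have "\<dots> = smul (\<Prod>\<alpha>\<in>M. s \<alpha> (proj (qubits n part \<alpha>) f)) (pauli {..<n} Tf)"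
    unfolding tensor_smul tensor_pauli[OF M P, of Tf] ..
  finally show ?thesis .
qed

lemma only_if_dir:
  assumes M: "finite M" and P: "\<forall>j<n. part j \<in> M"
    and st: "stab_state n \<psi> S" and st': "stab_state n \<psi>' S'"
    and lcu: "LCU_equiv n part M \<psi> \<psi>'"
  shows "\<exists>T. F2_linear_iso S S' T \<and>
       (\<forall>f\<in>S. \<forall>g\<in>S. \<forall>\<alpha>\<in>M. symp (qubits n part \<alpha>) (T f) (T g) = symp (qubits n part \<alpha>) f g)"
proof -
  let ?Q = "{..<n} :: nat set"
  let ?q = "qubits n part"
  have fQ: "finite ?Q" by simp
  obtain Us c where cl: "\<forall>\<alpha>\<in>M. clifford (?q \<alpha>) (Us \<alpha>)" and c: "cmod c = 1"
    and eq: "\<forall>x\<in>basis ?Q. \<psi>' x = c * apply_op ?Q (tensor_op n part M Us) \<psi> x"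
    using lcu unfolding LCU_equiv_def by blast
  have "\<forall>\<alpha>\<in>M. \<exists>p. unitary (?q \<alpha>) (Us \<alpha>) \<and> (\<forall>f\<in>Gset (?q \<alpha>). fst p f \<in> Gset (?q \<alpha>) \<and> (snd p f = 1 \<or> snd p f = -1) \<and>
           op_eq (?q \<alpha>) (conjU (?q \<alpha>) (Us \<alpha>) (pauli (?q \<alpha>) f)) (smul (snd p f) (pauli (?q \<alpha>) (fst p f))))"
  proof
    fix \<alpha> assume "\<alpha> \<in> M"
    then obtain u s where "unitary (?q \<alpha>) (Us \<alpha>) \<and> (\<forall>f\<in>Gset (?q \<alpha>). u f \<in> Gset (?q \<alpha>) \<and> (s f = 1 \<or> s f = -1) \<and>
           op_eq (?q \<alpha>) (conjU (?q \<alpha>) (Us \<alpha>) (pauli (?q \<alpha>) f)) (smul (s f) (pauli (?q \<alpha>) (u f))))"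
      using clifford_obtain cl by blast
    then show "\<exists>p. unitary (?q \<alpha>) (Us \<alpha>) \<and> (\<forall>f\<in>Gset (?q \<alpha>). fst p f \<in> Gset (?q \<alpha>) \<and> (snd p f = 1 \<or> snd p f = -1) \<and>
           op_eq (?q \<alpha>) (conjU (?q \<alpha>) (Us \<alpha>) (pauli (?q \<alpha>) f)) (smul (snd p f) (pauli (?q \<alpha>) (fst p f))))"
      by (intro exI[of _ "(u, s)"]) simp
  qed
  then have "\<exists>F. \<forall>\<alpha>\<in>M. unitary (?q \<alpha>) (Us \<alpha>) \<and> (\<forall>f\<in>Gset (?q \<alpha>). fst (F \<alpha>) f \<in> Gset (?q \<alpha>) \<and> (snd (F \<alpha>) f = 1 \<or> snd (F \<alpha>) f = -1) \<and>
           op_eq (?q \<alpha>) (conjU (?q \<alpha>) (Us \<alpha>) (pauli (?q \<alpha>) f)) (smul (snd (F \<alpha>) f) (pauli (?q \<alpha>) (fst (F \<alpha>) f))))"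
    by (rule bchoice)
  then obtain F where F: "\<forall>\<alpha>\<in>M. unitary (?q \<alpha>) (Us \<alpha>) \<and> (\<forall>f\<in>Gset (?q \<alpha>). fst (F \<alpha>) f \<in> Gset (?q \<alpha>) \<and> (snd (F \<alpha>) f = 1 \<or> snd (F \<alpha>) f = -1) \<and>
           op_eq (?q \<alpha>) (conjU (?q \<alpha>) (Us \<alpha>) (pauli (?q \<alpha>) f)) (smul (snd (F \<alpha>) f) (pauli (?q \<alpha>) (fst (F \<alpha>) f))))"
    by (rule exE)
  define u where "u \<alpha> = fst (F \<alpha>)" for \<alpha>
  define s where "s \<alpha> = snd (F \<alpha>)" for \<alpha>
  have Uu: "\<And>\<alpha>. \<alpha> \<in> M \<Longrightarrow> unitary (?q \<alpha>) (Us \<alpha>)" using F by blast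
  have uG: "\<And>\<alpha> f. \<alpha> \<in> M \<Longrightarrow> f \<in> Gset (?q \<alpha>) \<Longrightarrow> u \<alpha> f \<in> Gset (?q \<alpha>)" using F by (simp add: u_def)
  have spm: "\<And>\<alpha> f. \<alpha> \<in> M \<Longrightarrow> f \<in> Gset (?q \<alpha>) \<Longrightarrow> s \<alpha> f = 1 \<or> s \<alpha> f = -1" using F by (simp add: s_def)
  have cj: "\<And>\<alpha> f. \<alpha> \<in> M \<Longrightarrow> f \<in> Gset (?q \<alpha>) \<Longrightarrow> op_eq (?q \<alpha>) (conjU (?q \<alpha>) (Us \<alpha>) (pauli (?q \<alpha>) f)) (smul (s \<alpha> f) (pauli (?q \<alpha>) (u \<alpha> f)))"
    using F by (simp add: s_def u_def)
  have uadd: "\<And>\<alpha> f g. \<alpha> \<in> M \<Longrightarrow> f \<in> Gset (?q \<alpha>) \<Longrightarrow> g \<in> Gset (?q \<alpha>) \<Longrightarrow> u \<alpha> (gadd f g) = gadd (u \<alpha> f) (u \<alpha> g)"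
    using clifford_map_props(1)[OF qubits_finite Uu uG spm cj] by blast
  have usymp: "\<And>\<alpha> f g. \<alpha> \<in> M \<Longrightarrow> f \<in> Gset (?q \<alpha>) \<Longrightarrow> g \<in> Gset (?q \<alpha>) \<Longrightarrow> symp (?q \<alpha>) (u \<alpha> f) (u \<alpha> g) = symp (?q \<alpha>) f g"
    using clifford_map_props(2)[OF qubits_finite Uu uG spm cj] by blast
  have uinj: "\<And>\<alpha>. \<alpha> \<in> M \<Longrightarrow> inj_on (u \<alpha>) (Gset (?q \<alpha>))"
    using clifford_map_props(3)[OF qubits_finite Uu uG spm cj] by blast
  define T where "T f = (\<lambda>j. if j < n then u (part j) (proj (?q (part j)) f) j else (False, False))" for f
  have TG: "T f \<in> Gset ?Q" for f by (simp add: T_def Gset_def)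
  have projT: "proj (?q \<alpha>) (T f) = u \<alpha> (proj (?q \<alpha>) f)" if a: "\<alpha> \<in> M" for \<alpha> f
  proof
    fix j show "proj (?q \<alpha>) (T f) j = u \<alpha> (proj (?q \<alpha>) f) j"
    proof (cases "j \<in> ?q \<alpha>")
      case True then show ?thesis by (simp add: proj_def T_def qubits_def)
    next
      case False
      have "u \<alpha> (proj (?q \<alpha>) f) \<in> Gset (?q \<alpha>)" using uG[OF a proj_Gset] .
      then show ?thesis using False by (simp add: proj_def Gset_def)
    qed
  qed
  define sig where "sig f = (\<Prod>\<alpha>\<in>M. s \<alpha> (proj (?q \<alpha>) f))" for f
  have sigpm: "sig f = 1 \<or> sig f = -1" for f
    unfolding sig_def by (rule prod_pm1) (rule spm, assumption, rule proj_Gset)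
  have sig2: "sig f * sig f = 1" for f using sigpm[of f] by auto
  have conjT: "conjU ?Q (tensor_op n part M Us) (pauli ?Q f) = smul (sig f) (pauli ?Q (T f))" for f
    unfolding sig_def by (rule conj_tensor_pauli[OF M P cj projT]) auto
  have UU: "op_eq ?Q (mmul ?Q (adj (tensor_op n part M Us)) (tensor_op n part M Us)) idop"
    using tensor_unitary[OF M P Uu] by (simp add: unitary_iff)
  obtain eS where eS: "\<forall>f\<in>S. (eS f = 1 \<or> eS f = -1) \<and> eigv ?Q (pauli ?Q f) \<psi> (eS f)"
    using stab_facts(6)[OF st] by blast
  obtain eS' where eS': "\<forall>f\<in>S'. (eS' f = 1 \<or> eS' f = -1) \<and> eigv ?Q (pauli ?Q f) \<psi>' (eS' f)"
    using stab_facts(6)[OF st'] by blast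
  have SG: "S \<subseteq> Gset ?Q" and S'G: "S' \<subseteq> Gset ?Q" using stab_facts(1) st st' by auto
  have eigT: "eigv ?Q (pauli ?Q (T f)) \<psi>' (sig f * eS f)" if f: "f \<in> S" for f
    unfolding eigv_def
  proof
    fix x assume x: "x \<in> basis ?Q"
    have pT: "pauli ?Q (T f) = smul (sig f) (conjU ?Q (tensor_op n part M Us) (pauli ?Q f))"
      using conjT[of f] sig2[of f] by (simp add: smul_smul)
    have "apply_op ?Q (pauli ?Q (T f)) \<psi>' x = apply_op ?Q (pauli ?Q (T f)) (\<lambda>y. c * apply_op ?Q (tensor_op n part M Us) \<psi> y) x"
      using eq by (intro apply_op_cong_state) simp
    also have "\<dots> = c * (sig f * apply_op ?Q (conjU ?Q (tensor_op n part M Us) (pauli ?Q f)) (apply_op ?Q (tensor_op n part M Us) \<psi>) x)"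
      by (simp add: apply_op_scale pT apply_op_smul)
    also have "\<dots> = c * (sig f * (eS f * apply_op ?Q (tensor_op n part M Us) \<psi> x))"
      using apply_conj_eig[OF fQ UU _ x] eS f by simp
    also have "\<dots> = sig f * eS f * \<psi>' x" using eq x by simp
    finally show "apply_op ?Q (pauli ?Q (T f)) \<psi>' x = sig f * eS f * \<psi>' x" .
  qed
  obtain x0 where x0: "x0 \<in> basis ?Q" "\<psi>' x0 \<noteq> 0" using unit_nonzero[OF fQ stab_facts(3)[OF st']] by blast
  have TS: "T f \<in> S'" if f: "f \<in> S" for f
  proof (rule stab_facts(5)[OF st' TG], rule ballI)
    fix s' assume s': "s' \<in> S'"
    have "sig f * eS f \<noteq> 0" using sigpm[of f] eS f by auto
    moreover have "eS' s' \<noteq> 0" using eS' s' by auto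
    ultimately show "\<not> symp ?Q (T f) s'"
      using eig_commute[OF fQ eigT[OF f] _ _ _ x0] eS' s' by blast
  qed
  have Tadd: "T (gadd f g) = gadd (T f) (T g)" for f g
  proof
    fix j show "T (gadd f g) j = gadd (T f) (T g) j"
    proof (cases "j < n")
      case True
      then have a: "part j \<in> M" using P by blast
      show ?thesis using True uadd[OF a proj_Gset proj_Gset]
        by (simp add: T_def proj_gadd gadd_apply)
    next
      case False then show ?thesis by (simp add: T_def gadd_def)
    qed
  qed
  have Tinj: "inj_on T (Gset ?Q)"
  proof (rule inj_onI)
    fix f g assume f: "f \<in> Gset ?Q" and g: "g \<in> Gset ?Q" and e: "T f = T g"
    show "f = g"
    proof
      fix j show "f j = g j"
      proof (cases "j < n")
        case True
        then have a: "part j \<in> M" and jq: "j \<in> ?q (part j)" using P by (auto simp: qubits_def)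
        have "u (part j) (proj (?q (part j)) f) = u (part j) (proj (?q (part j)) g)"
          using projT[OF a, of f] projT[OF a, of g] e by simp
        then have "proj (?q (part j)) f = proj (?q (part j)) g"
          using uinj[OF a] by (simp add: inj_on_def)
        then have "proj (?q (part j)) f j = proj (?q (part j)) g j" by simp
        then show ?thesis using jq by (simp add: proj_def)
      next
        case False then show ?thesis using f g by (simp add: Gset_def)
      qed
    qed
  qed
  have cardS: "card S = card S'"
  proof -
    have "card S * card S = 4 ^ n"
      using card_perp[OF fQ stab_facts(2)[OF st] SG] stab_facts(7)[OF st] by simp
    moreover have "card S' * card S' = 4 ^ n"
      using card_perp[OF fQ stab_facts(2)[OF st'] S'G] stab_facts(7)[OF st'] by simp
    ultimately have "card S * card S = card S' * card S'" by simp
    then show ?thesis by (rule nat_sq_inj)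
  qed
  have bij: "bij_betw T S S'"
  proof -
    have inj: "inj_on T S" using Tinj SG inj_on_subset by blast
    have sub: "T ` S \<subseteq> S'" using TS by blast
    have fS': "finite S'" using S'G finite_Gset[OF fQ] finite_subset by blast
    have "card (T ` S) = card S'" using card_image[OF inj] cardS by simp
    then have "T ` S = S'" using card_subset_eq[OF fS' sub] by simp
    then show ?thesis using inj by (simp add: bij_betw_def)
  qed
  have "F2_linear_iso S S' T" using bij Tadd by (simp add: F2_linear_iso_def)
  moreover have "\<forall>f\<in>S. \<forall>g\<in>S. \<forall>\<alpha>\<in>M. symp (?q \<alpha>) (T f) (T g) = symp (?q \<alpha>) f g"
  proof (intro ballI)
    fix f g \<alpha> assume "f \<in> S" "g \<in> S" and a: "\<alpha> \<in> M"
    have "symp (?q \<alpha>) (T f) (T g) = symp (?q \<alpha>) (proj (?q \<alpha>) (T f)) (proj (?q \<alpha>) (T g))"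
      by (simp add: symp_proj)
    also have "\<dots> = symp (?q \<alpha>) (proj (?q \<alpha>) f) (proj (?q \<alpha>) g)"
      using projT[OF a] usymp[OF a proj_Gset proj_Gset] by simp
    also have "\<dots> = symp (?q \<alpha>) f g" by (simp add: symp_proj)
    finally show "symp (?q \<alpha>) (T f) (T g) = symp (?q \<alpha>) f g" .
  qed
  ultimately show ?thesis by blast
qed


lemma proj_surj:
  assumes st: "stab_state n \<psi> S" and flr: "full_local_ranks n part M S" and a: "\<alpha> \<in> M"
  shows "proj (qubits n part \<alpha>) ` S = Gset (qubits n part \<alpha>)"
proof -
  let ?q = "qubits n part"
  have SG: "S \<subseteq> Gset {..<n}" and cS: "closed_sub S" using stab_facts[OF st] by auto
  have cV: "closed_sub (proj (?q \<alpha>) ` S)"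
    unfolding closed_sub_def
  proof (intro conjI ballI)
    have "gzero \<in> S" using cS by (simp add: closed_sub_def)
    moreover have "proj (?q \<alpha>) gzero = gzero" by (simp add: proj_def gzero_def fun_eq_iff)
    ultimately show "gzero \<in> proj (?q \<alpha>) ` S" by force
  next
    fix v w assume "v \<in> proj (?q \<alpha>) ` S" "w \<in> proj (?q \<alpha>) ` S"
    then obtain f g where "f \<in> S" "g \<in> S" "v = proj (?q \<alpha>) f" "w = proj (?q \<alpha>) g" by blast
    moreover have "gadd f g \<in> S" using cS \<open>f \<in> S\<close> \<open>g \<in> S\<close> by (simp add: closed_sub_def)
    ultimately have "gadd v w = proj (?q \<alpha>) (gadd f g)" "gadd f g \<in> S" by (simp_all add: proj_gadd)
    then show "gadd v w \<in> proj (?q \<alpha>) ` S" by blast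
  qed
  have sub: "proj (?q \<alpha>) ` S \<subseteq> Gset (?q \<alpha>)" by auto
  have "perpQ (?q \<alpha>) (proj (?q \<alpha>) ` S) \<subseteq> {gzero}"
  proof
    fix h assume "h \<in> perpQ (?q \<alpha>) (proj (?q \<alpha>) ` S)"
    then have hG: "h \<in> Gset (?q \<alpha>)" and hp0: "\<forall>v\<in>proj (?q \<alpha>) ` S. \<not> symp (?q \<alpha>) v h"
      unfolding perpQ_def by blast+
    have hp: "\<And>f. f \<in> S \<Longrightarrow> \<not> symp (?q \<alpha>) (proj (?q \<alpha>) f) h" using hp0 by blast
    have hGn: "h \<in> Gset {..<n}" using Gset_mono[OF qubits_sub hG] .
    have "\<forall>s\<in>S. \<not> symp {..<n} h s"
    proof
      fix s assume s: "s \<in> S"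
      have "symp {..<n} h s = symp (?q \<alpha>) h s" by (rule symp_sub[OF qubits_sub hG])
      also have "\<dots> = symp (?q \<alpha>) s h" by (rule symp_comm)
      also have "\<dots> = symp (?q \<alpha>) (proj (?q \<alpha>) s) h" by (rule symp_proj_left[symmetric])
      finally show "\<not> symp {..<n} h s" using hp[OF s] by simp
    qed
    then have hS: "h \<in> S" by (rule stab_facts(5)[OF st hGn])
    have "h \<in> local_sub n part M S \<alpha>"
      unfolding local_sub_def
    proof (intro CollectI conjI ballI impI hS)
      fix \<beta> j assume "\<beta> \<in> M" "\<beta> \<noteq> \<alpha>" "j \<in> ?q \<beta>"
      then have "j \<notin> ?q \<alpha>" using qubits_disj[of \<beta> \<alpha> n part] by blast
      then show "h j = (False, False)" using hG by (simp add: Gset_def)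
    qed
    moreover have "local_sub n part M S \<alpha> = {gzero}" using flr a unfolding full_local_ranks_def by blast
    ultimately show "h \<in> {gzero}" by simp
  qed
  then show ?thesis using full_from_perp[OF qubits_finite cV sub] by simp
qed

lemma gadd_eq_zero: "gadd x y = gzero \<Longrightarrow> x = y"
  by (metis gadd_cancel_right gadd_zero_left)

lemma if_dir:
  assumes M: "finite M" and P: "\<forall>j<n. part j \<in> M"
    and st: "stab_state n \<psi> S" and st': "stab_state n \<psi>' S'"
    and flr: "full_local_ranks n part M S" and flr': "full_local_ranks n part M S'"
    and iso: "F2_linear_iso S S' T"
    and sy: "\<forall>f\<in>S. \<forall>g\<in>S. \<forall>\<alpha>\<in>M. symp (qubits n part \<alpha>) (T f) (T g) = symp (qubits n part \<alpha>) f g"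
  shows "LCU_equiv n part M \<psi> \<psi>'"
proof -
  let ?Q = "{..<n} :: nat set"
  let ?q = "qubits n part"
  have fQ: "finite ?Q" by simp
  have bij: "bij_betw T S S'" and Tadd: "\<And>f g. f \<in> S \<Longrightarrow> g \<in> S \<Longrightarrow> T (gadd f g) = gadd (T f) (T g)"
    using iso by (auto simp: F2_linear_iso_def)
  have TS: "T ` S = S'" using bij by (simp add: bij_betw_def)
  have cS: "\<And>f g. f \<in> S \<Longrightarrow> g \<in> S \<Longrightarrow> gadd f g \<in> S" using stab_facts(2)[OF st] by (simp add: closed_sub_def)
  have SG: "S \<subseteq> Gset ?Q" and S'G: "S' \<subseteq> Gset ?Q" using stab_facts(1) st st' by auto
  have surj: "\<And>\<alpha>. \<alpha> \<in> M \<Longrightarrow> proj (?q \<alpha>) ` S = Gset (?q \<alpha>)" using proj_surj[OF st flr] by blast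
  have surj': "\<And>\<alpha>. \<alpha> \<in> M \<Longrightarrow> proj (?q \<alpha>) ` S' = Gset (?q \<alpha>)" using proj_surj[OF st' flr'] by blast
  have WD: "proj (?q \<alpha>) (T f1) = proj (?q \<alpha>) (T f2)"
    if a: "\<alpha> \<in> M" and f1: "f1 \<in> S" and f2: "f2 \<in> S" and e: "proj (?q \<alpha>) f1 = proj (?q \<alpha>) f2" for \<alpha> f1 f2
  proof -
    define d where "d = gadd f1 f2"
    have dS: "d \<in> S" using cS f1 f2 by (simp add: d_def)
    have dz: "\<forall>j\<in>?q \<alpha>. d j = (False, False)"
    proof
      fix j assume j: "j \<in> ?q \<alpha>"
      have "proj (?q \<alpha>) f1 j = proj (?q \<alpha>) f2 j" using e by simp
      then show "d j = (False, False)" using j by (simp add: proj_def d_def gadd_def)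
    qed
    define h where "h = proj (?q \<alpha>) (T d)"
    have "h = gzero"
    proof (rule nondegenerate[OF qubits_finite proj_Gset[of "?q \<alpha>" "T d", folded h_def]])
      fix g' assume g': "g' \<in> Gset (?q \<alpha>)"
      then obtain f' where f': "f' \<in> S'" "g' = proj (?q \<alpha>) f'" using surj'[OF a] by blast
      then obtain g where g: "g \<in> S" "f' = T g" using TS by blast
      have "symp (?q \<alpha>) h g' = symp (?q \<alpha>) (T d) (T g)" using f' g by (simp add: h_def symp_proj)
      also have "\<dots> = symp (?q \<alpha>) d g" using sy dS g(1) a by blast
      also have "\<dots> = False" using symp_zero_on[OF dz] .
      finally show "\<not> symp (?q \<alpha>) h g'" by simp
    qed
    then have "gadd (proj (?q \<alpha>) (T f1)) (proj (?q \<alpha>) (T f2)) = gzero"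
      using Tadd[OF f1 f2] by (simp add: h_def d_def proj_gadd)
    then show ?thesis by (rule gadd_eq_zero)
  qed
  define u where "u \<alpha> g = proj (?q \<alpha>) (T (SOME f. f \<in> S \<and> proj (?q \<alpha>) f = g))" for \<alpha> g
  have uT: "u \<alpha> (proj (?q \<alpha>) f) = proj (?q \<alpha>) (T f)" if a: "\<alpha> \<in> M" and f: "f \<in> S" for \<alpha> f
  proof -
    have ex: "\<exists>f'. f' \<in> S \<and> proj (?q \<alpha>) f' = proj (?q \<alpha>) f" using f by blast
    define f0 where "f0 = (SOME f'. f' \<in> S \<and> proj (?q \<alpha>) f' = proj (?q \<alpha>) f)"
    have f0: "f0 \<in> S" "proj (?q \<alpha>) f0 = proj (?q \<alpha>) f" using someI_ex[OF ex] by (auto simp: f0_def)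
    show ?thesis unfolding u_def f0_def[symmetric] using WD[OF a f0(1) f f0(2)] by simp
  qed
  have preim: "\<exists>f\<in>S. g = proj (?q \<alpha>) f" if a: "\<alpha> \<in> M" and g: "g \<in> Gset (?q \<alpha>)" for \<alpha> g
    using surj[OF a] g by blast
  have uG: "\<And>\<alpha> g. u \<alpha> g \<in> Gset (?q \<alpha>)" by (simp add: u_def)
  have uadd: "u \<alpha> (gadd g1 g2) = gadd (u \<alpha> g1) (u \<alpha> g2)"
    if a: "\<alpha> \<in> M" and g1: "g1 \<in> Gset (?q \<alpha>)" and g2: "g2 \<in> Gset (?q \<alpha>)" for \<alpha> g1 g2
  proof -
    obtain f1 where f1: "f1 \<in> S" "g1 = proj (?q \<alpha>) f1" using preim[OF a g1] by blast
    obtain f2 where f2: "f2 \<in> S" "g2 = proj (?q \<alpha>) f2" using preim[OF a g2] by blast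
    have "gadd g1 g2 = proj (?q \<alpha>) (gadd f1 f2)" using f1 f2 by (simp add: proj_gadd)
    then have "u \<alpha> (gadd g1 g2) = proj (?q \<alpha>) (T (gadd f1 f2))" using uT[OF a cS[OF f1(1) f2(1)]] by simp
    also have "\<dots> = gadd (u \<alpha> g1) (u \<alpha> g2)" using Tadd[OF f1(1) f2(1)] uT[OF a f1(1)] uT[OF a f2(1)] f1 f2
      by (simp add: proj_gadd)
    finally show ?thesis .
  qed
  have usymp: "symp (?q \<alpha>) (u \<alpha> g1) (u \<alpha> g2) = symp (?q \<alpha>) g1 g2"
    if a: "\<alpha> \<in> M" and g1: "g1 \<in> Gset (?q \<alpha>)" and g2: "g2 \<in> Gset (?q \<alpha>)" for \<alpha> g1 g2
  proof -
    obtain f1 where f1: "f1 \<in> S" "g1 = proj (?q \<alpha>) f1" using preim[OF a g1] by blast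
    obtain f2 where f2: "f2 \<in> S" "g2 = proj (?q \<alpha>) f2" using preim[OF a g2] by blast
    have "symp (?q \<alpha>) (u \<alpha> g1) (u \<alpha> g2) = symp (?q \<alpha>) (T f1) (T f2)"
      using uT[OF a f1(1)] uT[OF a f2(1)] f1 f2 by (simp add: symp_proj)
    also have "\<dots> = symp (?q \<alpha>) f1 f2" using sy f1 f2 a by blast
    also have "\<dots> = symp (?q \<alpha>) g1 g2" using f1 f2 by (simp add: symp_proj)
    finally show ?thesis .
  qed
  have ubij: "bij_betw (u \<alpha>) (Gset (?q \<alpha>)) (Gset (?q \<alpha>))" if a: "\<alpha> \<in> M" for \<alpha>
  proof -
    have sub1: "u \<alpha> ` Gset (?q \<alpha>) \<subseteq> Gset (?q \<alpha>)"
    proof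
      fix y assume "y \<in> u \<alpha> ` Gset (?q \<alpha>)"
      then obtain g where "y = u \<alpha> g" by (rule imageE)
      then show "y \<in> Gset (?q \<alpha>)" by (simp add: uG)
    qed
    have sub2: "Gset (?q \<alpha>) \<subseteq> u \<alpha> ` Gset (?q \<alpha>)"
    proof
      fix g' assume g': "g' \<in> Gset (?q \<alpha>)"
      then have "g' \<in> proj (?q \<alpha>) ` S'" by (simp only: surj'[OF a])
      then obtain f' where f': "f' \<in> S'" "g' = proj (?q \<alpha>) f'" by (rule imageE) simp
      then have "f' \<in> T ` S" by (simp only: TS)
      then obtain f where f: "f \<in> S" "f' = T f" by (rule imageE) simp
      have "g' = u \<alpha> (proj (?q \<alpha>) f)" using uT[OF a f(1)] f f' by simp
      moreover have "proj (?q \<alpha>) f \<in> Gset (?q \<alpha>)" by (rule proj_Gset)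
      ultimately show "g' \<in> u \<alpha> ` Gset (?q \<alpha>)" by (rule image_eqI)
    qed
    have im: "u \<alpha> ` Gset (?q \<alpha>) = Gset (?q \<alpha>)" using sub1 sub2 by (rule equalityI)
    have "inj_on (u \<alpha>) (Gset (?q \<alpha>))"
      by (rule eq_card_imp_inj_on[OF finite_Gset[OF qubits_finite]]) (simp only: im)
    then show ?thesis using im by (simp add: bij_betw_def)
  qed
  have "\<forall>\<alpha>\<in>M. \<exists>p. unitary (?q \<alpha>) (fst p) \<and> (\<forall>g\<in>Gset (?q \<alpha>). (snd p g = 1 \<or> snd p g = -1) \<and>
           op_eq (?q \<alpha>) (conjU (?q \<alpha>) (fst p) (pauli (?q \<alpha>) g)) (smul (snd p g) (pauli (?q \<alpha>) (u \<alpha> g))))"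
  proof
    fix \<alpha> assume a: "\<alpha> \<in> M"
    obtain U where U: "unitary (?q \<alpha>) U" and cU: "\<forall>f\<in>Gset (?q \<alpha>). \<exists>s. (s = 1 \<or> s = -1) \<and>
            op_eq (?q \<alpha>) (mmul (?q \<alpha>) (mmul (?q \<alpha>) U (pauli (?q \<alpha>) f)) (adj U)) (\<lambda>x y. s * pauli (?q \<alpha>) (u \<alpha> f) x y)"
      using clifford_construct[OF qubits_finite uG uadd[OF a] usymp[OF a] ubij[OF a]] by blast
    have "\<forall>f\<in>Gset (?q \<alpha>). \<exists>s. (s = 1 \<or> s = -1) \<and>
            op_eq (?q \<alpha>) (conjU (?q \<alpha>) U (pauli (?q \<alpha>) f)) (smul s (pauli (?q \<alpha>) (u \<alpha> f)))"
      using cU by (simp add: conjU_def smul_eta)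
    then have "\<exists>s. \<forall>f\<in>Gset (?q \<alpha>). (s f = 1 \<or> s f = -1) \<and>
            op_eq (?q \<alpha>) (conjU (?q \<alpha>) U (pauli (?q \<alpha>) f)) (smul (s f) (pauli (?q \<alpha>) (u \<alpha> f)))"
      by (rule bchoice)
    then obtain s where "\<forall>f\<in>Gset (?q \<alpha>). (s f = 1 \<or> s f = -1) \<and>
            op_eq (?q \<alpha>) (conjU (?q \<alpha>) U (pauli (?q \<alpha>) f)) (smul (s f) (pauli (?q \<alpha>) (u \<alpha> f)))"
      by (rule exE)
    then show "\<exists>p. unitary (?q \<alpha>) (fst p) \<and> (\<forall>g\<in>Gset (?q \<alpha>). (snd p g = 1 \<or> snd p g = -1) \<and>
           op_eq (?q \<alpha>) (conjU (?q \<alpha>) (fst p) (pauli (?q \<alpha>) g)) (smul (snd p g) (pauli (?q \<alpha>) (u \<alpha> g))))"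
      using U by (intro exI[of _ "(U, s)"]) simp
  qed
  then have "\<exists>F. \<forall>\<alpha>\<in>M. unitary (?q \<alpha>) (fst (F \<alpha>)) \<and> (\<forall>g\<in>Gset (?q \<alpha>). (snd (F \<alpha>) g = 1 \<or> snd (F \<alpha>) g = -1) \<and>
           op_eq (?q \<alpha>) (conjU (?q \<alpha>) (fst (F \<alpha>)) (pauli (?q \<alpha>) g)) (smul (snd (F \<alpha>) g) (pauli (?q \<alpha>) (u \<alpha> g))))"
    by (rule bchoice)
  then obtain F where F: "\<forall>\<alpha>\<in>M. unitary (?q \<alpha>) (fst (F \<alpha>)) \<and> (\<forall>g\<in>Gset (?q \<alpha>). (snd (F \<alpha>) g = 1 \<or> snd (F \<alpha>) g = -1) \<and>
           op_eq (?q \<alpha>) (conjU (?q \<alpha>) (fst (F \<alpha>)) (pauli (?q \<alpha>) g)) (smul (snd (F \<alpha>) g) (pauli (?q \<alpha>) (u \<alpha> g))))"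
    by (rule exE)
  define Us where "Us \<alpha> = fst (F \<alpha>)" for \<alpha>
  define s where "s \<alpha> = snd (F \<alpha>)" for \<alpha>
  have Uu: "\<And>\<alpha>. \<alpha> \<in> M \<Longrightarrow> unitary (?q \<alpha>) (Us \<alpha>)" using F by (simp add: Us_def)
  have spm: "\<And>\<alpha> g. \<alpha> \<in> M \<Longrightarrow> g \<in> Gset (?q \<alpha>) \<Longrightarrow> s \<alpha> g = 1 \<or> s \<alpha> g = -1" using F by (simp add: s_def)
  have cj: "\<And>\<alpha> g. \<alpha> \<in> M \<Longrightarrow> g \<in> Gset (?q \<alpha>) \<Longrightarrow> op_eq (?q \<alpha>) (conjU (?q \<alpha>) (Us \<alpha>) (pauli (?q \<alpha>) g)) (smul (s \<alpha> g) (pauli (?q \<alpha>) (u \<alpha> g)))"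
    using F by (simp add: s_def Us_def)
  define U where "U = tensor_op n part M Us"
  have UU: "op_eq ?Q (mmul ?Q (adj U) U) idop"
    using tensor_unitary[OF M P Uu] by (simp add: unitary_iff U_def)
  define sig where "sig f = (\<Prod>\<alpha>\<in>M. s \<alpha> (proj (?q \<alpha>) f))" for f
  have sigpm: "sig f = 1 \<or> sig f = -1" for f
    unfolding sig_def by (rule prod_pm1) (rule spm, assumption, rule proj_Gset)
  have sig2: "sig f * sig f = 1" for f using sigpm[of f] by auto
  have conjT: "conjU ?Q U (pauli ?Q f) = smul (sig f) (pauli ?Q (T f))" if f: "f \<in> S" for f
    unfolding sig_def U_def by (rule conj_tensor_pauli[OF M P cj uT[symmetric, OF _ f]]) auto
  obtain eS where eS: "\<forall>f\<in>S. (eS f = 1 \<or> eS f = -1) \<and> eigv ?Q (pauli ?Q f) \<psi> (eS f)"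
    using stab_facts(6)[OF st] by blast
  obtain eS' where eS': "\<forall>f\<in>S'. (eS' f = 1 \<or> eS' f = -1) \<and> eigv ?Q (pauli ?Q f) \<psi>' (eS' f)"
    using stab_facts(6)[OF st'] by blast
  define \<chi> where "\<chi> = apply_op ?Q U \<psi>"
  have u\<chi>: "unit_state ?Q \<chi>"
    using braket_unitary[OF fQ UU, of \<psi> \<psi>] stab_facts(3)[OF st] by (simp add: unit_state_iff \<chi>_def)
  have eigT: "eigv ?Q (pauli ?Q (T f)) \<chi> (sig f * eS f)" if f: "f \<in> S" for f
    unfolding eigv_def
  proof
    fix x assume x: "x \<in> basis ?Q"
    have pT: "pauli ?Q (T f) = smul (sig f) (conjU ?Q U (pauli ?Q f))"
      using conjT[OF f] sig2[of f] by (simp add: smul_smul)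
    have "apply_op ?Q (pauli ?Q (T f)) \<chi> x = sig f * apply_op ?Q (conjU ?Q U (pauli ?Q f)) (apply_op ?Q U \<psi>) x"
      by (simp add: pT apply_op_smul \<chi>_def)
    also have "\<dots> = sig f * (eS f * \<chi> x)"
      using apply_conj_eig[OF fQ UU _ x] eS f by (simp add: \<chi>_def)
    finally show "apply_op ?Q (pauli ?Q (T f)) \<chi> x = sig f * eS f * \<chi> x" by simp
  qed
  define e2 where "e2 s' = sig (inv_into S T s') * eS (inv_into S T s')" for s'
  have inv: "\<And>s'. s' \<in> S' \<Longrightarrow> inv_into S T s' \<in> S \<and> T (inv_into S T s') = s'"
    using bij by (metis bij_betw_def inv_into_into f_inv_into_f)
  have e2pm: "\<And>s'. s' \<in> S' \<Longrightarrow> e2 s' = 1 \<or> e2 s' = -1"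
  proof -
    fix s' assume "s' \<in> S'"
    then have "inv_into S T s' \<in> S" using inv by blast
    then show "e2 s' = 1 \<or> e2 s' = -1"
      using sigpm[of "inv_into S T s'"] eS unfolding e2_def by fastforce
  qed
  have e2eig: "\<And>s'. s' \<in> S' \<Longrightarrow> eigv ?Q (pauli ?Q s') \<chi> (e2 s')"
    using inv eigT unfolding e2_def by metis
  obtain h where h: "h \<in> Gset ?Q" and hev: "\<forall>s'\<in>S'. eigv ?Q (pauli ?Q s') (apply_op ?Q (pauli ?Q h) \<chi>) (eS' s')"
    and hu: "unit_state ?Q (apply_op ?Q (pauli ?Q h) \<chi>)"
    using sign_match[OF fQ S'G, of eS' \<psi>' e2 \<chi>] eS' stab_facts(3)[OF st'] e2pm e2eig u\<chi> by blast
  define \<chi>2 where "\<chi>2 = apply_op ?Q (pauli ?Q h) \<chi>"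
  define c where "c = braket ?Q \<chi>2 \<psi>'"
  have psi_eq: "\<And>x. x \<in> basis ?Q \<Longrightarrow> \<psi>' x = c * \<chi>2 x"
    unfolding c_def
  proof (rule stab_unique[OF fQ S'G stab_facts(4)[OF st'], where e = eS'])
    show "\<And>s. s \<in> S' \<Longrightarrow> eS' s = 1 \<or> eS' s = -1" using eS' by blast
    show "\<And>s. s \<in> S' \<Longrightarrow> eigv ?Q (pauli ?Q s) \<psi>' (eS' s)" using eS' by blast
    show "\<And>s. s \<in> S' \<Longrightarrow> eigv ?Q (pauli ?Q s) \<chi>2 (eS' s)" using hev by (simp add: \<chi>2_def)
    show "unit_state ?Q \<chi>2" using hu by (simp add: \<chi>2_def)
  qed
  have cabs: "cmod c = 1"
  proof -
    have "braket ?Q \<psi>' \<psi>' = braket ?Q (\<lambda>x. c * \<chi>2 x) (\<lambda>x. c * \<chi>2 x)"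
      by (rule braket_cong) (simp_all add: psi_eq)
    also have "\<dots> = cnj c * c * braket ?Q \<chi>2 \<chi>2" by (simp add: braket_scale_left braket_scale_right)
    finally have "cnj c * c = 1"
      using stab_facts(3)[OF st'] hu by (simp add: unit_state_iff \<chi>2_def)
    then have "complex_of_real ((cmod c)\<^sup>2) = 1" by (simp add: cnj_mult_self)
    then have "(cmod c)\<^sup>2 = 1" using of_real_eq_1_iff by blast
    then have "cmod c = 1 \<or> cmod c = -1" by (simp add: power2_eq_1_iff)
    then show ?thesis using norm_ge_zero[of c] by linarith
  qed
  define Vs where "Vs \<alpha> = mmul (?q \<alpha>) (pauli (?q \<alpha>) h) (Us \<alpha>)" for \<alpha>
  have clV: "clifford (?q \<alpha>) (Vs \<alpha>)" if a: "\<alpha> \<in> M" for \<alpha>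
  proof (rule clifford_intro[where u = "u \<alpha>" and s = "\<lambda>g. s \<alpha> g * sg (symp (?q \<alpha>) h (u \<alpha> g))"])
    show "unitary (?q \<alpha>) (Vs \<alpha>)"
      unfolding Vs_def by (rule unitary_mult[OF qubits_finite pauli_unitary2[OF qubits_finite] Uu[OF a]])
  next
    fix g assume g: "g \<in> Gset (?q \<alpha>)"
    show "u \<alpha> g \<in> Gset (?q \<alpha>)" by (rule uG)
    show "s \<alpha> g * sg (symp (?q \<alpha>) h (u \<alpha> g)) = 1 \<or> s \<alpha> g * sg (symp (?q \<alpha>) h (u \<alpha> g)) = -1"
      using spm[OF a g] by (auto simp: sg_def)
    have "op_eq (?q \<alpha>) (conjU (?q \<alpha>) (Vs \<alpha>) (pauli (?q \<alpha>) g)) (conjU (?q \<alpha>) (pauli (?q \<alpha>) h) (conjU (?q \<alpha>) (Us \<alpha>) (pauli (?q \<alpha>) g)))"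
      unfolding Vs_def by (rule conjU_comp[OF qubits_finite])
    also have "op_eq (?q \<alpha>) \<dots> (conjU (?q \<alpha>) (pauli (?q \<alpha>) h) (smul (s \<alpha> g) (pauli (?q \<alpha>) (u \<alpha> g))))"
      by (rule conjU_cong[OF cj[OF a g]])
    also have "op_eq (?q \<alpha>) (conjU (?q \<alpha>) (pauli (?q \<alpha>) h) (smul (s \<alpha> g) (pauli (?q \<alpha>) (u \<alpha> g))))
        (smul (s \<alpha> g) (smul (sg (symp (?q \<alpha>) h (u \<alpha> g))) (pauli (?q \<alpha>) (u \<alpha> g))))"
      unfolding conjU_smul by (rule smul_cong[OF pauli_conj[OF qubits_finite]])
    finally show "op_eq (?q \<alpha>) (conjU (?q \<alpha>) (Vs \<alpha>) (pauli (?q \<alpha>) g))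
        (smul (s \<alpha> g * sg (symp (?q \<alpha>) h (u \<alpha> g))) (pauli (?q \<alpha>) (u \<alpha> g)))"
      by (simp add: smul_smul)
  qed
  have TV: "tensor_op n part M Vs = mmul ?Q (pauli ?Q h) U"
    unfolding U_def Vs_def tensor_pauli[OF M P, of h] tensor_mmul[OF M P] ..
  have "\<forall>x\<in>basis ?Q. \<psi>' x = c * apply_op ?Q (tensor_op n part M Vs) \<psi> x"
  proof
    fix x assume x: "x \<in> basis ?Q"
    have "apply_op ?Q (tensor_op n part M Vs) \<psi> x = \<chi>2 x"
      by (simp add: TV apply_op_mmul[OF fQ] \<chi>2_def \<chi>_def)
    then show "\<psi>' x = c * apply_op ?Q (tensor_op n part M Vs) \<psi> x" using psi_eq[OF x] by simp
  qed
  then show ?thesis unfolding LCU_equiv_def using clV cabs by blast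
qed


theorem theorem1:
  fixes n :: nat and part :: "nat \<Rightarrow> 'p" and M :: "'p set"
    and \<psi> \<psi>' :: state and S S' :: "pauli_vec set"
  assumes "finite M"
    and "\<forall>j<n. part j \<in> M"
    and "stab_state n \<psi> S" and "stab_state n \<psi>' S'"
    and "full_local_ranks n part M S" and "full_local_ranks n part M S'"
  shows "LCU_equiv n part M \<psi> \<psi>' \<longleftrightarrow>
    (\<exists>T. F2_linear_iso S S' T \<and>
       (\<forall>f\<in>S. \<forall>g\<in>S. \<forall>\<alpha>\<in>M.
          symp (qubits n part \<alpha>) (T f) (T g) = symp (qubits n part \<alpha>) f g))"
proof
  assume "LCU_equiv n part M \<psi> \<psi>'"
  then show "\<exists>T. F2_linear_iso S S' T \<and>
       (\<forall>f\<in>S. \<forall>g\<in>S. \<forall>\<alpha>\<in>M. symp (qubits n part \<alpha>) (T f) (T g) = symp (qubits n part \<alpha>) f g)"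
    using only_if_dir[OF assms(1-4)] by blast
next
  assume "\<exists>T. F2_linear_iso S S' T \<and>
       (\<forall>f\<in>S. \<forall>g\<in>S. \<forall>\<alpha>\<in>M. symp (qubits n part \<alpha>) (T f) (T g) = symp (qubits n part \<alpha>) f g)"
  then obtain T where "F2_linear_iso S S' T"
    and "\<forall>f\<in>S. \<forall>g\<in>S. \<forall>\<alpha>\<in>M. symp (qubits n part \<alpha>) (T f) (T g) = symp (qubits n part \<alpha>) f g"
    by blast
  then show "LCU_equiv n part M \<psi> \<psi>'" using if_dir[OF assms] by blast
qed


end
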